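(* Let $R$ be a von Neumann regular semiartinian ring with primitive factors artinian, with socle sequence $(S_\alpha\mid\alpha\le\sigma+1)$ and dimension sequence $\{(\lambda_\alpha,\{(n_{\alpha\beta},K_{\alpha\beta})\mid\beta<\lambda_\alpha\})\mid\alpha\le\sigma\}$. Then for each $\alpha\le\sigma$ the following are equivalent: (i) $R/S_\alpha$ is commutative; (ii) for each $\beta<\lambda_\alpha$, $K_{\alpha\beta}$ is commutative and $n_{\alpha\beta}=1$; (iii) for each $\beta<\lambda_\alpha$, $K_{\alpha\beta}$ is commutative, and $R/S_\alpha$ is isomorphic to a subring $\bar R_\alpha$ of the ring direct product $\prod_{\beta<\lambda_\alpha}K_{\alpha\beta}$ such that $\mathrm{Soc}(\bar R_\alpha)=\bigoplus_{\beta<\lambda_\alpha}K_{\alpha\beta}$.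
   Context: Socle sequence of $R$: $S_0=0$, $S_{\alpha+1}/S_\alpha=\mathrm{Soc}(R/S_\alpha)$, unions at limit ordinals; $R$ semiartinian means $S_{\sigma+1}=R$ for some $\sigma$ (Loewy length $\sigma+1$). $R$ has primitive factors artinian if $R/P$ is artinian for every primitive ideal $P$. For such $R$ (regular, semiartinian, primitive factors artinian) it is known that for each $\alpha\le\sigma$ the layer $L_\alpha=S_{\alpha+1}/S_\alpha$ is isomorphic, as a ring without unit, to $\bigoplus_{\beta<\lambda_\alpha}M_{n_{\alpha\beta}}(K_{\alpha\beta})$, where $\lambda_\alpha>0$ is the number of homogeneous components of $L_\alpha$ (infinite for $\alpha<\sigma$, finite for $\alpha=\sigma$), each $n_{\alpha\beta}$ is a positive integer, and each $K_{\alpha\beta}$ is a skew-field; the summand $M_{n_{\alpha\beta}}(K_{\alpha\beta})$ corresponds to the $\beta$-th homogeneous component $H_{\alpha\beta}\cong P_{\alpha\beta}^{n_{\alpha\beta}}$ of $L_\alpha$ with $P_{\alpha\beta}$ a simple projective $R/S_\alpha$-module and $K_{\alpha\beta}\cong\mathrm{End}(P_{\alpha\beta})$. The family $\{(\lambda_\alpha,\{(n_{\alpha\beta},K_{\alpha\beta})\mid\beta<\lambda_\alpha\})\mid\alpha\le\sigma\}$ is the dimension sequence of $R$. *)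

theory Defs
  imports "HOL-Algebra.Algebra"
begin

definition right_ideal :: "('a, 'b) ring_scheme \<Rightarrow> 'a set \<Rightarrow> bool" where
  "right_ideal R J \<longleftrightarrow> additive_subgroup J R \<and>
     (\<forall>x\<in>J. \<forall>r\<in>carrier R. x \<otimes>\<^bsub>R\<^esub> r \<in> J)"

text \<open>M/I is a simple right R-module (I a right ideal strictly contained in the right
  ideal M, nothing in between).  Simple submodules of (R/I)_R are exactly such M/I.\<close>
definition minimal_over :: "('a, 'b) ring_scheme \<Rightarrow> 'a set \<Rightarrow> 'a set \<Rightarrow> bool" where
  "minimal_over R I M \<longleftrightarrow> right_ideal R I \<and> right_ideal R M \<and> I \<subset> M \<and>
     (\<forall>J. right_ideal R J \<and> I \<subseteq> J \<and> J \<subseteq> M \<longrightarrow> J = I \<or> J = M)"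

definition minimal_right_ideal :: "('a, 'b) ring_scheme \<Rightarrow> 'a set \<Rightarrow> bool" where
  "minimal_right_ideal R M \<longleftrightarrow> minimal_over R {\<zero>\<^bsub>R\<^esub>} M"

definition rsoc :: "('a, 'b) ring_scheme \<Rightarrow> 'a set" where
  "rsoc R = \<Inter>{J. right_ideal R J \<and> (\<forall>M. minimal_right_ideal R M \<longrightarrow> M \<subseteq> J)}"

text \<open>Preimage in R of Soc(R/I), where R/I is regarded as a right R-module
  (its submodules are the right ideals of R containing I).\<close>
definition soc_succ :: "('a, 'b) ring_scheme \<Rightarrow> 'a set \<Rightarrow> 'a set" where
  "soc_succ R I = \<Inter>{J. right_ideal R J \<and> I \<subseteq> J \<and>
       (\<forall>M. minimal_over R I M \<longrightarrow> M \<subseteq> J)}"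

text \<open>The terms S_alpha of the socle sequence: S_0 = 0, S_(alpha+1) = preimage of
  Soc(R/S_alpha), unions at limits.\<close>
inductive socle_term :: "('a, 'b) ring_scheme \<Rightarrow> 'a set \<Rightarrow> bool" for R where
  zero: "socle_term R {\<zero>\<^bsub>R\<^esub>}"
| succ: "socle_term R I \<Longrightarrow> socle_term R (soc_succ R I)"
| union: "C \<noteq> {} \<Longrightarrow> (\<forall>I\<in>C. socle_term R I) \<Longrightarrow> socle_term R (\<Union>C)"

definition semiartinian :: "('a, 'b) ring_scheme \<Rightarrow> bool" where
  "semiartinian R \<longleftrightarrow> socle_term R (carrier R)"

definition von_neumann_regular :: "('a, 'b) ring_scheme \<Rightarrow> bool" where
  "von_neumann_regular R \<longleftrightarrow>
     (\<forall>a\<in>carrier R. \<exists>x\<in>carrier R. a \<otimes>\<^bsub>R\<^esub> x \<otimes>\<^bsub>R\<^esub> a = a)"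

text \<open>Primitive ideal: annihilator of a simple right R-module; every simple right module is
  isomorphic to a simple subquotient M/I of R_R.\<close>
definition primitive_ideal :: "('a, 'b) ring_scheme \<Rightarrow> 'a set \<Rightarrow> bool" where
  "primitive_ideal R P \<longleftrightarrow> (\<exists>I M. minimal_over R I M \<and>
      P = {r\<in>carrier R. \<forall>x\<in>M. x \<otimes>\<^bsub>R\<^esub> r \<in> I})"

text \<open>R/P is (right) artinian: DCC on right ideals of R/P, i.e. on right ideals of R
  containing P.\<close>
definition artinian_factor :: "('a, 'b) ring_scheme \<Rightarrow> 'a set \<Rightarrow> bool" where
  "artinian_factor R P \<longleftrightarrow> \<not> (\<exists>f :: nat \<Rightarrow> 'a set.
      \<forall>n. right_ideal R (f n) \<and> P \<subseteq> f n \<and> f (Suc n) \<subset> f n)"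

definition primitive_factors_artinian :: "('a, 'b) ring_scheme \<Rightarrow> bool" where
  "primitive_factors_artinian R \<longleftrightarrow>
     (\<forall>P. primitive_ideal R P \<longrightarrow> artinian_factor R P)"

text \<open>An R-linear map J/I \<rightarrow> J'/I' is represented by an (arbitrary) lift f : J \<rightarrow> J'.\<close>
definition mod_hom :: "('a, 'b) ring_scheme \<Rightarrow> 'a set \<Rightarrow> 'a set \<Rightarrow> 'a set \<Rightarrow> 'a set
    \<Rightarrow> ('a \<Rightarrow> 'a) \<Rightarrow> bool" where
  "mod_hom R I J I' J' f \<longleftrightarrow> (\<forall>x\<in>J. f x \<in> J') \<and> (\<forall>x\<in>I. f x \<in> I') \<and>
     (\<forall>x\<in>J. \<forall>y\<in>J. f (x \<oplus>\<^bsub>R\<^esub> y) \<ominus>\<^bsub>R\<^esub> (f x \<oplus>\<^bsub>R\<^esub> f y) \<in> I') \<and>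
     (\<forall>x\<in>J. \<forall>r\<in>carrier R. f (x \<otimes>\<^bsub>R\<^esub> r) \<ominus>\<^bsub>R\<^esub> (f x \<otimes>\<^bsub>R\<^esub> r) \<in> I')"

definition mod_iso :: "('a, 'b) ring_scheme \<Rightarrow> 'a set \<Rightarrow> 'a set \<Rightarrow> 'a set \<Rightarrow> 'a set \<Rightarrow> bool" where
  "mod_iso R I J I' J' \<longleftrightarrow> (\<exists>f g. mod_hom R I J I' J' f \<and> mod_hom R I' J' I J g \<and>
     (\<forall>x\<in>J. g (f x) \<ominus>\<^bsub>R\<^esub> x \<in> I) \<and> (\<forall>y\<in>J'. f (g y) \<ominus>\<^bsub>R\<^esub> y \<in> I'))"

text \<open>Homogeneous component of Soc(R/I) determined by the simple module M/I
  (given by its preimage in R).\<close>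
definition hom_comp :: "('a, 'b) ring_scheme \<Rightarrow> 'a set \<Rightarrow> 'a set \<Rightarrow> 'a set" where
  "hom_comp R I M = \<Inter>{J. right_ideal R J \<and> I \<subseteq> J \<and>
       (\<forall>M'. minimal_over R I M' \<and> mod_iso R I M I M' \<longrightarrow> M' \<subseteq> J)}"

text \<open>The set of homogeneous components of Soc(R/I); it indexes beta < lambda_alpha.\<close>
definition hom_comps :: "('a, 'b) ring_scheme \<Rightarrow> 'a set \<Rightarrow> 'a set set" where
  "hom_comps R I = {hom_comp R I M | M. minimal_over R I M}"

definition comp_simple :: "('a, 'b) ring_scheme \<Rightarrow> 'a set \<Rightarrow> 'a set \<Rightarrow> 'a set" where
  "comp_simple R I H = (SOME M. minimal_over R I M \<and> M \<subseteq> H)"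

text \<open>Endomorphism ring of the module M/I; elements are the induced maps on cosets.\<close>
definition qcarrier :: "('a, 'b) ring_scheme \<Rightarrow> 'a set \<Rightarrow> 'a set \<Rightarrow> 'a set set" where
  "qcarrier R I M = {I +>\<^bsub>R\<^esub> x | x. x \<in> M}"

definition End_ring :: "('a, 'b) ring_scheme \<Rightarrow> 'a set \<Rightarrow> 'a set \<Rightarrow> ('a set \<Rightarrow> 'a set) ring" where
  "End_ring R I M =
    \<lparr> carrier = {\<phi>. \<phi> \<in> extensional (qcarrier R I M) \<and>
                  (\<exists>f. mod_hom R I M I M f \<and> (\<forall>x\<in>M. \<phi> (I +>\<^bsub>R\<^esub> x) = I +>\<^bsub>R\<^esub> f x))},
      monoid.mult = (\<lambda>\<phi> \<psi>. (\<lambda>c\<in>qcarrier R I M. \<phi> (\<psi> c))),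
      one = (\<lambda>c\<in>qcarrier R I M. c),
      ring.zero = (\<lambda>c\<in>qcarrier R I M. I),
      ring.add = (\<lambda>\<phi> \<psi>. (\<lambda>c\<in>qcarrier R I M. \<phi> c <+>\<^bsub>R\<^esub> \<psi> c)) \<rparr>"

definition comp_field :: "('a, 'b) ring_scheme \<Rightarrow> 'a set \<Rightarrow> 'a set \<Rightarrow> ('a set \<Rightarrow> 'a set) ring" where
  "comp_field R I H = End_ring R I (comp_simple R I H)"

text \<open>n_(alpha beta): the length of H/I, i.e. the least number of simple submodules of
  R/I whose sum is H/I (H/I \<cong> P^n).\<close>
definition comp_mult :: "('a, 'b) ring_scheme \<Rightarrow> 'a set \<Rightarrow> 'a set \<Rightarrow> nat" where
  "comp_mult R I H = (LEAST n. \<exists>Ms. length Ms = n \<and> (\<forall>M\<in>set Ms. minimal_over R I M) \<and>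
      H = foldr (\<lambda>M A. M <+>\<^bsub>R\<^esub> A) Ms I)"

definition commutative_ring :: "('c, 'd) ring_scheme \<Rightarrow> bool" where
  "commutative_ring S \<longleftrightarrow>
     (\<forall>x\<in>carrier S. \<forall>y\<in>carrier S. x \<otimes>\<^bsub>S\<^esub> y = y \<otimes>\<^bsub>S\<^esub> x)"

definition prod_ring :: "'i set \<Rightarrow> ('i \<Rightarrow> ('c, 'd) ring_scheme) \<Rightarrow> ('i \<Rightarrow> 'c) ring" where
  "prod_ring B K =
    \<lparr> carrier = (\<Pi>\<^sub>E b\<in>B. carrier (K b)),
      monoid.mult = (\<lambda>f g. (\<lambda>b\<in>B. f b \<otimes>\<^bsub>K b\<^esub> g b)),
      one = (\<lambda>b\<in>B. \<one>\<^bsub>K b\<^esub>),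
      ring.zero = (\<lambda>b\<in>B. \<zero>\<^bsub>K b\<^esub>),
      ring.add = (\<lambda>f g. (\<lambda>b\<in>B. f b \<oplus>\<^bsub>K b\<^esub> g b)) \<rparr>"

definition dsum_carrier :: "'i set \<Rightarrow> ('i \<Rightarrow> ('c, 'd) ring_scheme) \<Rightarrow> ('i \<Rightarrow> 'c) set" where
  "dsum_carrier B K = {f \<in> carrier (prod_ring B K). finite {b\<in>B. f b \<noteq> \<zero>\<^bsub>K b\<^esub>}}"

end

theory Submission
  imports Defs
begin

no_notation Sum_Type.Plus (infixr \<open><+>\<close> 65)

context ring
begin

lemma ri_iff:
  "right_ideal R J \<longleftrightarrow> J \<subseteq> carrier R \<and> \<zero> \<in> J \<and> (\<forall>x\<in>J. \<forall>y\<in>J. x \<oplus> y \<in> J)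
     \<and> (\<forall>x\<in>J. \<ominus> x \<in> J) \<and> (\<forall>x\<in>J. \<forall>r\<in>carrier R. x \<otimes> r \<in> J)"
proof
  assume "right_ideal R J"
  then interpret additive_subgroup J R by (simp add: right_ideal_def)
  show "J \<subseteq> carrier R \<and> \<zero> \<in> J \<and> (\<forall>x\<in>J. \<forall>y\<in>J. x \<oplus> y \<in> J)
     \<and> (\<forall>x\<in>J. \<ominus> x \<in> J) \<and> (\<forall>x\<in>J. \<forall>r\<in>carrier R. x \<otimes> r \<in> J)"
    using \<open>right_ideal R J\<close> a_subset by (auto simp: right_ideal_def)
next
  assume A: "J \<subseteq> carrier R \<and> \<zero> \<in> J \<and> (\<forall>x\<in>J. \<forall>y\<in>J. x \<oplus> y \<in> J)
     \<and> (\<forall>x\<in>J. \<ominus> x \<in> J) \<and> (\<forall>x\<in>J. \<forall>r\<in>carrier R. x \<otimes> r \<in> J)"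
  have "subgroup J (add_monoid R)"
    using A by (auto intro!: subgroup.intro simp: a_inv_def[symmetric])
  then show "right_ideal R J" using A
    by (auto simp: right_ideal_def additive_subgroup_def)
qed

lemma riD:
  assumes "right_ideal R J"
  shows "J \<subseteq> carrier R" "\<zero> \<in> J" "\<And>x y. x \<in> J \<Longrightarrow> y \<in> J \<Longrightarrow> x \<oplus> y \<in> J"
    "\<And>x. x \<in> J \<Longrightarrow> \<ominus> x \<in> J" "\<And>x r. x \<in> J \<Longrightarrow> r \<in> carrier R \<Longrightarrow> x \<otimes> r \<in> J"
  using assms unfolding ri_iff by auto

lemma ri_carr: "right_ideal R J \<Longrightarrow> x \<in> J \<Longrightarrow> x \<in> carrier R"
  using riD(1) by blast

lemma ri_minus: "right_ideal R J \<Longrightarrow> x \<in> J \<Longrightarrow> y \<in> J \<Longrightarrow> x \<ominus> y \<in> J"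
  by (simp add: minus_eq riD(3,4))

lemma ri_minus_cancel: "right_ideal R J \<Longrightarrow> x \<in> carrier R \<Longrightarrow> y \<in> J \<Longrightarrow> x \<ominus> y \<in> J \<Longrightarrow> x \<in> J"
proof -
  assume a: "right_ideal R J" "x \<in> carrier R" "y \<in> J" "x \<ominus> y \<in> J"
  then have "(x \<ominus> y) \<oplus> y \<in> J" by (simp add: riD(3))
  moreover have "(x \<ominus> y) \<oplus> y = x" using a ri_carr[OF a(1) a(3)]
    by (simp add: minus_eq a_assoc l_neg r_neg)
  ultimately show ?thesis by simp
qed

lemma ri_add_cancel: "right_ideal R J \<Longrightarrow> x \<in> carrier R \<Longrightarrow> y \<in> J \<Longrightarrow> x \<oplus> y \<in> J \<Longrightarrow> x \<in> J"
proof -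
  assume a: "right_ideal R J" "x \<in> carrier R" "y \<in> J" "x \<oplus> y \<in> J"
  then have "(x \<oplus> y) \<ominus> y \<in> J" by (simp add: ri_minus)
  moreover have "(x \<oplus> y) \<ominus> y = x" using a ri_carr[OF a(1) a(3)]
    by (simp add: minus_eq a_assoc l_neg r_neg)
  ultimately show ?thesis by simp
qed

lemma set_add_iff: "x \<in> A <+> B \<longleftrightarrow> (\<exists>a\<in>A. \<exists>b\<in>B. x = a \<oplus> b)"
  by (auto simp: set_add_def' )

lemma ri_sum: "right_ideal R A \<Longrightarrow> right_ideal R B \<Longrightarrow> right_ideal R (A <+> B)"
proof -
  assume a: "right_ideal R A" "right_ideal R B"
  have "additive_subgroup (A <+> B) R"
    using a add_additive_subgroups by (simp add: right_ideal_def)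
  moreover have "\<forall>x\<in>A <+> B. \<forall>r\<in>carrier R. x \<otimes> r \<in> A <+> B"
  proof (intro ballI)
    fix x r assume x: "x \<in> A <+> B" and r: "r \<in> carrier R"
    then obtain p q where pq: "p \<in> A" "q \<in> B" "x = p \<oplus> q" by (auto simp: set_add_iff)
    have "x \<otimes> r = p \<otimes> r \<oplus> q \<otimes> r" using pq r a by (simp add: l_distr ri_carr)
    moreover have "p \<otimes> r \<in> A" "q \<otimes> r \<in> B" using pq r a riD(5) by blast+
    ultimately show "x \<otimes> r \<in> A <+> B" by (auto simp: set_add_iff)
  qed
  ultimately show ?thesis by (simp add: right_ideal_def)
qed

lemma sum_sub1: "right_ideal R A \<Longrightarrow> right_ideal R B \<Longrightarrow> A \<subseteq> A <+> B"
proof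
  fix x assume a: "right_ideal R A" "right_ideal R B" "x \<in> A"
  then have "x = x \<oplus> \<zero>" "\<zero> \<in> B" using ri_carr riD(2) by auto
  then show "x \<in> A <+> B" using a(3) by (auto simp: set_add_iff)
qed

lemma sum_sub2: "right_ideal R A \<Longrightarrow> right_ideal R B \<Longrightarrow> B \<subseteq> A <+> B"
proof
  fix x assume a: "right_ideal R A" "right_ideal R B" "x \<in> B"
  then have "x = \<zero> \<oplus> x" "\<zero> \<in> A" using ri_carr riD(2) by auto
  then show "x \<in> A <+> B" using a(3) by (auto simp: set_add_iff)
qed

lemma sum_le: "right_ideal R C \<Longrightarrow> A \<subseteq> C \<Longrightarrow> B \<subseteq> C \<Longrightarrow> A <+> B \<subseteq> C"
  using riD(3)[of C] by (force simp: set_add_iff)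

lemma sum_absorb: "right_ideal R A \<Longrightarrow> right_ideal R B \<Longrightarrow> B \<subseteq> A \<Longrightarrow> A <+> B = A"
  by (meson sum_le sum_sub1 order_refl subset_antisym)

lemma sum_absorb2: "right_ideal R A \<Longrightarrow> right_ideal R B \<Longrightarrow> A \<subseteq> B \<Longrightarrow> A <+> B = B"
  by (meson sum_le sum_sub2 order_refl subset_antisym)

lemma sum_comm: assumes "A \<subseteq> carrier R" "B \<subseteq> carrier R" shows "A <+> B = B <+> A"
proof (rule Set.set_eqI)
  fix x
  from assms show "x \<in> A <+> B \<longleftrightarrow> x \<in> B <+> A"
    unfolding set_add_iff by (metis a_comm subsetD)
qed

lemma sum_assoc: assumes c: "A \<subseteq> carrier R" "B \<subseteq> carrier R" "C \<subseteq> carrier R" shows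
   "(A <+> B) <+> C = A <+> (B <+> C)"
proof (rule Set.set_eqI)
  fix x
  show "x \<in> (A <+> B) <+> C \<longleftrightarrow> x \<in> A <+> (B <+> C)"
  proof
    assume "x \<in> (A <+> B) <+> C"
    then obtain a b d where "a \<in> A" "b \<in> B" "d \<in> C" "x = (a \<oplus> b) \<oplus> d"
      by (auto simp: set_add_iff)
    moreover have "b \<oplus> d \<in> B <+> C" using \<open>b \<in> B\<close> \<open>d \<in> C\<close> by (auto simp: set_add_iff)
    moreover have "x = a \<oplus> (b \<oplus> d)" using c \<open>x = (a \<oplus> b) \<oplus> d\<close> \<open>a \<in> A\<close> \<open>b \<in> B\<close> \<open>d \<in> C\<close>
      by (simp add: a_assoc subsetD)
    ultimately show "x \<in> A <+> (B <+> C)" using \<open>a \<in> A\<close> set_add_iff[of x A "B <+> C"] by blast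
  next
    assume "x \<in> A <+> (B <+> C)"
    then obtain a b d where "a \<in> A" "b \<in> B" "d \<in> C" "x = a \<oplus> (b \<oplus> d)"
      by (auto simp: set_add_iff)
    moreover have "a \<oplus> b \<in> A <+> B" using \<open>a \<in> A\<close> \<open>b \<in> B\<close> by (auto simp: set_add_iff)
    moreover have "x = (a \<oplus> b) \<oplus> d" using c \<open>x = a \<oplus> (b \<oplus> d)\<close> \<open>a \<in> A\<close> \<open>b \<in> B\<close> \<open>d \<in> C\<close>
      by (simp add: a_assoc subsetD)
    ultimately show "x \<in> (A <+> B) <+> C" using \<open>d \<in> C\<close> set_add_iff[of x "A <+> B" C] by blast
  qed
qed

lemma sum_mono: "A \<subseteq> A' \<Longrightarrow> B \<subseteq> B' \<Longrightarrow> A <+> B \<subseteq> A' <+> B'"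
  by (force simp: set_add_iff)

lemma ri_Int: "right_ideal R A \<Longrightarrow> right_ideal R B \<Longrightarrow> right_ideal R (A \<inter> B)"
  unfolding ri_iff by auto

lemma ri_Inter: "F \<noteq> {} \<Longrightarrow> (\<And>J. J \<in> F \<Longrightarrow> right_ideal R J) \<Longrightarrow> right_ideal R (\<Inter>F)"
  unfolding ri_iff by blast

lemma ri_carrier: "right_ideal R (carrier R)"
  unfolding ri_iff by auto

lemma modular:
  assumes "right_ideal R A" "right_ideal R B" "right_ideal R C" "A \<subseteq> C"
  shows "C \<inter> (A <+> B) = A <+> (C \<inter> B)"
proof
  show "C \<inter> (A <+> B) \<subseteq> A <+> (C \<inter> B)"
  proof
    fix x assume "x \<in> C \<inter> (A <+> B)"
    then obtain a b where ab: "x \<in> C" "a \<in> A" "b \<in> B" "x = a \<oplus> b" by (auto simp: set_add_iff)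
    have ca: "a \<in> carrier R" "b \<in> carrier R" using ab assms ri_carr by blast+
    have "x \<ominus> a = (b \<oplus> a) \<ominus> a" using ab ca by (simp add: a_comm)
    also have "\<dots> = b" using ca by (simp add: minus_eq a_assoc l_neg r_neg)
    finally have "b = x \<ominus> a" by simp
    then have "b \<in> C" using ab assms by (metis ri_minus subsetD)
    then show "x \<in> A <+> (C \<inter> B)" using ab by (auto simp: set_add_iff)
  qed
next
  show "A <+> (C \<inter> B) \<subseteq> C \<inter> (A <+> B)"
  proof
    fix x assume "x \<in> A <+> (C \<inter> B)"
    then obtain a b where ab: "a \<in> A" "b \<in> C" "b \<in> B" "x = a \<oplus> b" by (auto simp: set_add_iff)
    have "x \<in> C" using ab assms riD(3)[OF assms(3)] by blast
    moreover have "x \<in> A <+> B" using ab by (auto simp: set_add_iff)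
    ultimately show "x \<in> C \<inter> (A <+> B)" by blast
  qed
qed

lemma two_elem:
  assumes M: "minimal_over R T M" and S: "right_ideal R S" "T \<subseteq> S"
    and J: "right_ideal R J" "S \<subseteq> J" "J \<subseteq> M <+> S"
  shows "J = S \<or> J = M <+> S"
proof -
  have rT: "right_ideal R T" and rM: "right_ideal R M" and TM: "T \<subseteq> M"
    using M by (auto simp: minimal_over_def)
  have "J \<inter> M = T \<or> J \<inter> M = M"
    using M ri_Int[OF J(1) rM] J S TM unfolding minimal_over_def by blast
  then show ?thesis
  proof
    assume h: "J \<inter> M = T"
    have "J = J \<inter> (S <+> M)" using J sum_comm[of M S] riD(1)[OF S(1)] riD(1)[OF rM] by auto
    also have "\<dots> = S <+> (J \<inter> M)" using modular[OF S(1) rM J(1) J(2)] .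
    also have "\<dots> = S" using h sum_absorb[OF S(1) rT S(2)] by simp
    finally show ?thesis ..
  next
    assume h: "J \<inter> M = M"
    then have "M <+> S \<subseteq> J" using J sum_le by blast
    then show ?thesis using J by blast
  qed
qed

lemma sum_min_cases:
  assumes M: "minimal_over R T M" and S: "right_ideal R S" "T \<subseteq> S"
  shows "M \<subseteq> S \<or> minimal_over R S (M <+> S)"
proof (cases "M \<subseteq> S")
  case False
  have rM: "right_ideal R M" using M by (auto simp: minimal_over_def)
  have "S \<subseteq> M <+> S" by (rule sum_sub2[OF rM S(1)])
  moreover have "S \<noteq> M <+> S" using False sum_sub1[OF rM S(1)] by blast
  ultimately have "minimal_over R S (M <+> S)"
    unfolding minimal_over_def using S ri_sum[OF rM S(1)] two_elem[OF M S] by blast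
  then show ?thesis by simp
qed simp

lemma ss_ge: "I \<subseteq> soc_succ R I"
  unfolding soc_succ_def by blast

lemma ss_min: "minimal_over R I M \<Longrightarrow> M \<subseteq> soc_succ R I"
  unfolding soc_succ_def by blast

lemma ss_least: "right_ideal R J \<Longrightarrow> I \<subseteq> J \<Longrightarrow> (\<And>M. minimal_over R I M \<Longrightarrow> M \<subseteq> J)
   \<Longrightarrow> soc_succ R I \<subseteq> J"
  unfolding soc_succ_def by blast

lemma min_ri: "minimal_over R I M \<Longrightarrow> right_ideal R M"
  by (simp add: minimal_over_def)
lemma min_riI: "minimal_over R I M \<Longrightarrow> right_ideal R I"
  by (simp add: minimal_over_def)
lemma min_sub: "minimal_over R I M \<Longrightarrow> I \<subseteq> M"
  by (auto simp: minimal_over_def)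
lemma min_ne: "minimal_over R I M \<Longrightarrow> I \<noteq> M"
  by (auto simp: minimal_over_def)
lemma min_between: "minimal_over R I M \<Longrightarrow> right_ideal R J \<Longrightarrow> I \<subseteq> J \<Longrightarrow> J \<subseteq> M \<Longrightarrow> J = I \<or> J = M"
  by (auto simp: minimal_over_def)

lemma ss_ri: "right_ideal R I \<Longrightarrow> right_ideal R (soc_succ R I)"
  unfolding soc_succ_def
  apply (rule ri_Inter)
  using ri_carrier riD(1) min_ri apply blast
  by blast

end

lemma ss_ge': "I \<subseteq> soc_succ R I"
  unfolding soc_succ_def by blast

lemma st_zero_sub: "socle_term R T \<Longrightarrow> {\<zero>\<^bsub>R\<^esub>} \<subseteq> T"
proof (induction rule: socle_term.induct)
  case (succ I)
  then show ?case using ss_ge'[of I R] by blast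
next
  case (union C)
  then show ?case by blast
qed simp

lemma st_lemA:
  assumes m: "socle_term R m" and norm: "\<forall>n. socle_term R n \<longrightarrow> n \<subset> m \<longrightarrow> soc_succ R n \<subseteq> m"
  shows "socle_term R n \<Longrightarrow> n \<subseteq> m \<or> soc_succ R m \<subseteq> n"
proof (induction rule: socle_term.induct)
  case zero
  then show ?case using st_zero_sub[OF m] by blast
next
  case (succ n')
  have g: "n' \<subseteq> soc_succ R n'" by (rule ss_ge')
  from succ.IH show ?case
  proof
    assume "n' \<subseteq> m"
    then have "n' \<subset> m \<or> n' = m" by blast
    then show ?thesis
    proof
      assume "n' \<subset> m"
      then have "soc_succ R n' \<subseteq> m" using norm succ.hyps by blast
      then show ?thesis ..
    qed simp
  next
    assume "soc_succ R m \<subseteq> n'"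
    then show ?thesis using g by blast
  qed
next
  case (union C)
  show ?case
  proof (cases "\<forall>c\<in>C. c \<subseteq> m")
    case True
    then show ?thesis by blast
  next
    case False
    then obtain c where "c \<in> C" "\<not> c \<subseteq> m" by blast
    then have "soc_succ R m \<subseteq> c" using union.IH by blast
    then show ?thesis using \<open>c \<in> C\<close> by blast
  qed
qed

lemma st_lemB:
  "socle_term R m \<Longrightarrow> \<forall>n. socle_term R n \<longrightarrow> n \<subset> m \<longrightarrow> soc_succ R n \<subseteq> m"
proof (induction rule: socle_term.induct)
  case zero
  then show ?case using st_zero_sub by blast
next
  case (succ m')
  show ?case
  proof (intro allI impI)
    fix n assume n: "socle_term R n" "n \<subset> soc_succ R m'"
    have "n \<subseteq> m' \<or> soc_succ R m' \<subseteq> n" using st_lemA[OF succ.hyps succ.IH n(1)] .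
    then have "n \<subseteq> m'" using n(2) by blast
    then show "soc_succ R n \<subseteq> soc_succ R m'"
      using succ.IH n(1) ss_ge'[of m' R] by blast
  qed
next
  case (union C)
  show ?case
  proof (intro allI impI)
    fix n assume n: "socle_term R n" "n \<subset> \<Union>C"
    have A: "\<forall>c\<in>C. n \<subseteq> c \<or> soc_succ R c \<subseteq> n"
    proof
      fix c assume "c \<in> C"
      then have "socle_term R c" "\<forall>n. socle_term R n \<longrightarrow> n \<subset> c \<longrightarrow> soc_succ R n \<subseteq> c"
        using union.IH by auto
      then show "n \<subseteq> c \<or> soc_succ R c \<subseteq> n" using st_lemA[OF _ _ n(1)] by blast
    qed
    obtain c where c: "c \<in> C" "n \<subseteq> c"
    proof -
      have "\<not> (\<forall>c\<in>C. soc_succ R c \<subseteq> n)"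
      proof
        assume "\<forall>c\<in>C. soc_succ R c \<subseteq> n"
        then have "\<forall>c\<in>C. c \<subseteq> n" using ss_ge'[of _ R] by (meson subset_trans)
        then show False using n(2) by blast
      qed
      then show ?thesis using A that by blast
    qed
    show "soc_succ R n \<subseteq> \<Union>C"
    proof (cases "n = c")
      case True
      obtain d where d: "d \<in> C" "\<not> d \<subseteq> c" using n(2) True by blast
      have "socle_term R c" "\<forall>n. socle_term R n \<longrightarrow> n \<subset> c \<longrightarrow> soc_succ R n \<subseteq> c"
        "socle_term R d" using union.IH c(1) d(1) by auto
      then have "d \<subseteq> c \<or> soc_succ R c \<subseteq> d" by (rule st_lemA)
      then have "soc_succ R c \<subseteq> d" using d(2) by blast
      then have "soc_succ R n \<subseteq> d" using True by simp
      then show ?thesis using d(1) by blast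
    next
      case False
      then have "n \<subset> c" using c by blast
      moreover have "\<forall>n. socle_term R n \<longrightarrow> n \<subset> c \<longrightarrow> soc_succ R n \<subseteq> c"
        using union.IH c(1) by blast
      ultimately have "soc_succ R n \<subseteq> c" using n(1) by blast
      then show ?thesis using c(1) by blast
    qed
  qed
qed

lemma st_chain: "socle_term R m \<Longrightarrow> socle_term R n \<Longrightarrow> n \<subseteq> m \<or> m \<subseteq> n"
proof -
  assume m: "socle_term R m" and n: "socle_term R n"
  have "n \<subseteq> m \<or> soc_succ R m \<subseteq> n" using st_lemA[OF m st_lemB[OF m] n] .
  then show ?thesis using ss_ge'[of m R] by blast
qed

no_notation Sum_Type.Plus (infixr \<open><+>\<close> 65)

context ring
begin

definition cg :: "'a set \<Rightarrow> 'a \<Rightarrow> 'a \<Rightarrow> bool" where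
  "cg I x y \<longleftrightarrow> x \<in> carrier R \<and> y \<in> carrier R \<and> x \<ominus> y \<in> I"

lemma ideal_ri: "ideal I R \<Longrightarrow> right_ideal R I"
  unfolding right_ideal_def by (auto simp: ideal_def ideal_axioms_def)

lemma idl_l: "ideal I R \<Longrightarrow> x \<in> I \<Longrightarrow> a \<in> carrier R \<Longrightarrow> a \<otimes> x \<in> I"
  by (simp add: ideal.I_l_closed)
lemma idl_r: "ideal I R \<Longrightarrow> x \<in> I \<Longrightarrow> a \<in> carrier R \<Longrightarrow> x \<otimes> a \<in> I"
  by (simp add: ideal.I_r_closed)

lemma cg_carr: "cg I x y \<Longrightarrow> x \<in> carrier R" "cg I x y \<Longrightarrow> y \<in> carrier R"
  by (auto simp: cg_def)

lemma cg_refl: "ideal I R \<Longrightarrow> x \<in> carrier R \<Longrightarrow> cg I x x"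
  unfolding cg_def using riD(2)[OF ideal_ri] by (simp add: minus_eq r_neg)

lemma cg_sym: "ideal I R \<Longrightarrow> cg I x y \<Longrightarrow> cg I y x"
proof -
  assume i: "ideal I R" and c: "cg I x y"
  then have "\<ominus> (x \<ominus> y) \<in> I" using riD(4)[OF ideal_ri[OF i]] by (simp add: cg_def)
  moreover have "\<ominus> (x \<ominus> y) = y \<ominus> x" using c unfolding cg_def
    by (simp add: minus_eq minus_add minus_minus a_comm)
  ultimately show ?thesis using c by (simp add: cg_def)
qed

lemma cg_trans: "ideal I R \<Longrightarrow> cg I x y \<Longrightarrow> cg I y z \<Longrightarrow> cg I x z"
proof -
  assume i: "ideal I R" and c: "cg I x y" "cg I y z"
  then have "(x \<ominus> y) \<oplus> (y \<ominus> z) \<in> I" using riD(3)[OF ideal_ri[OF i]] by (simp add: cg_def)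
  moreover have "(x \<ominus> y) \<oplus> (y \<ominus> z) = x \<ominus> z" using c unfolding cg_def
    by (simp add: minus_eq a_assoc l_neg r_neg1)
  ultimately show ?thesis using c by (simp add: cg_def)
qed

lemma cg_add: "ideal I R \<Longrightarrow> cg I x y \<Longrightarrow> cg I x' y' \<Longrightarrow> cg I (x \<oplus> x') (y \<oplus> y')"
proof -
  assume i: "ideal I R" and c: "cg I x y" "cg I x' y'"
  then have "(x \<ominus> y) \<oplus> (x' \<ominus> y') \<in> I" using riD(3)[OF ideal_ri[OF i]] by (simp add: cg_def)
  moreover have "(x \<ominus> y) \<oplus> (x' \<ominus> y') = (x \<oplus> x') \<ominus> (y \<oplus> y')" using c unfolding cg_def
    by (simp add: minus_eq minus_add a_ac)
  ultimately show ?thesis using c by (simp add: cg_def)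
qed

lemma cg_neg: "ideal I R \<Longrightarrow> cg I x y \<Longrightarrow> cg I (\<ominus> x) (\<ominus> y)"
proof -
  assume i: "ideal I R" and c: "cg I x y"
  then have "\<ominus> (x \<ominus> y) \<in> I" using riD(4)[OF ideal_ri[OF i]] by (simp add: cg_def)
  moreover have "\<ominus> (x \<ominus> y) = (\<ominus> x) \<ominus> (\<ominus> y)" using c unfolding cg_def
    by (simp add: minus_eq minus_add)
  ultimately show ?thesis using c by (simp add: cg_def)
qed

lemma cg_minus: "ideal I R \<Longrightarrow> cg I x y \<Longrightarrow> cg I x' y' \<Longrightarrow> cg I (x \<ominus> x') (y \<ominus> y')"
  by (simp add: minus_eq cg_add cg_neg)

lemma cg_lm: "ideal I R \<Longrightarrow> a \<in> carrier R \<Longrightarrow> cg I x y \<Longrightarrow> cg I (a \<otimes> x) (a \<otimes> y)"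
proof -
  assume i: "ideal I R" and a: "a \<in> carrier R" and c: "cg I x y"
  then have "a \<otimes> (x \<ominus> y) \<in> I" using idl_l[OF i] by (simp add: cg_def)
  moreover have "a \<otimes> (x \<ominus> y) = a \<otimes> x \<ominus> a \<otimes> y" using c a unfolding cg_def
    by (simp add: minus_eq r_distr r_minus)
  ultimately show ?thesis using c a by (simp add: cg_def)
qed

lemma cg_rm: "ideal I R \<Longrightarrow> a \<in> carrier R \<Longrightarrow> cg I x y \<Longrightarrow> cg I (x \<otimes> a) (y \<otimes> a)"
proof -
  assume i: "ideal I R" and a: "a \<in> carrier R" and c: "cg I x y"
  then have "(x \<ominus> y) \<otimes> a \<in> I" using idl_r[OF i] by (simp add: cg_def)
  moreover have "(x \<ominus> y) \<otimes> a = x \<otimes> a \<ominus> y \<otimes> a" using c a unfolding cg_def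
    by (simp add: minus_eq l_distr l_minus)
  ultimately show ?thesis using c a by (simp add: cg_def)
qed

lemma cg_zero: "x \<in> carrier R \<Longrightarrow> cg I x \<zero> \<longleftrightarrow> x \<in> I"
  by (simp add: cg_def minus_eq)

lemma cg_I: "ideal I R \<Longrightarrow> x \<in> I \<Longrightarrow> y \<in> I \<Longrightarrow> cg I x y"
  using ri_minus[OF ideal_ri] ri_carr[OF ideal_ri] by (simp add: cg_def)

lemma cg_memI: "ideal I R \<Longrightarrow> cg I x y \<Longrightarrow> y \<in> I \<Longrightarrow> x \<in> I"
  by (meson cg_I cg_carr(1) cg_trans cg_zero)

lemma cg_eq: "ideal I R \<Longrightarrow> x = y \<Longrightarrow> x \<in> carrier R \<Longrightarrow> cg I x y"
  by (simp add: cg_refl)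

lemma cg_addI: "ideal I R \<Longrightarrow> x \<in> carrier R \<Longrightarrow> i \<in> I \<Longrightarrow> cg I (x \<oplus> i) x"
proof -
  assume i: "ideal I R" "x \<in> carrier R" "i \<in> I"
  then have "cg I (x \<oplus> i) (x \<oplus> \<zero>)" using cg_add cg_refl cg_I riD(2)[OF ideal_ri] by blast
  then show ?thesis using i by simp
qed

lemma cg_memD: "ideal I R \<Longrightarrow> x \<in> I \<Longrightarrow> cg I x \<zero>"
  using cg_zero ri_carr[OF ideal_ri] by blast

lemma pre_ri:
  assumes M: "right_ideal R M" and J: "right_ideal R J" and a: "a \<in> carrier R"
  shows "right_ideal R {m \<in> M. a \<otimes> m \<in> J}"
  unfolding ri_iff
proof (intro conjI ballI)
  show "{m \<in> M. a \<otimes> m \<in> J} \<subseteq> carrier R" using riD(1)[OF M] by blast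
  show "\<zero> \<in> {m \<in> M. a \<otimes> m \<in> J}" using riD(2)[OF M] riD(2)[OF J] a by simp
  fix x assume x: "x \<in> {m \<in> M. a \<otimes> m \<in> J}"
  then have xc: "x \<in> carrier R" using ri_carr[OF M] by blast
  {
    fix y assume y: "y \<in> {m \<in> M. a \<otimes> m \<in> J}"
    then have yc: "y \<in> carrier R" using ri_carr[OF M] by blast
    have "a \<otimes> (x \<oplus> y) = a \<otimes> x \<oplus> a \<otimes> y" using a xc yc by (simp add: r_distr)
    then show "x \<oplus> y \<in> {m \<in> M. a \<otimes> m \<in> J}" using x y riD(3)[OF M] riD(3)[OF J] by auto
  }
  have "a \<otimes> (\<ominus> x) = \<ominus> (a \<otimes> x)" using a xc by (simp add: r_minus)
  then show "\<ominus> x \<in> {m \<in> M. a \<otimes> m \<in> J}" using x riD(4)[OF M] riD(4)[OF J] by auto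
  fix r assume r: "r \<in> carrier R"
  have "a \<otimes> (x \<otimes> r) = (a \<otimes> x) \<otimes> r" using a xc r by (simp add: m_assoc)
  then show "x \<otimes> r \<in> {m \<in> M. a \<otimes> m \<in> J}" using x r riD(5)[OF M] riD(5)[OF J] by auto
qed

lemma img_ri:
  assumes M: "right_ideal R M" and a: "a \<in> carrier R"
  shows "right_ideal R ((\<otimes>) a ` M)"
  unfolding ri_iff
proof (intro conjI ballI)
  show "(\<otimes>) a ` M \<subseteq> carrier R" using riD(1)[OF M] a by auto
  have "\<zero> = a \<otimes> \<zero>" using a by simp
  then show "\<zero> \<in> (\<otimes>) a ` M" using riD(2)[OF M] by blast
  fix x assume "x \<in> (\<otimes>) a ` M"
  then obtain m where m: "m \<in> M" "x = a \<otimes> m" by blast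
  then have mc: "m \<in> carrier R" using ri_carr[OF M] by blast
  {
    fix y assume "y \<in> (\<otimes>) a ` M"
    then obtain n where n: "n \<in> M" "y = a \<otimes> n" by blast
    then have nc: "n \<in> carrier R" using ri_carr[OF M] by blast
    have "x \<oplus> y = a \<otimes> (m \<oplus> n)" using m n mc nc a by (simp add: r_distr)
    then show "x \<oplus> y \<in> (\<otimes>) a ` M" using riD(3)[OF M m(1) n(1)] by blast
  }
  have "\<ominus> x = a \<otimes> (\<ominus> m)" using m mc a by (simp add: r_minus)
  then show "\<ominus> x \<in> (\<otimes>) a ` M" using riD(4)[OF M m(1)] by blast
  fix r assume r: "r \<in> carrier R"
  have "x \<otimes> r = a \<otimes> (m \<otimes> r)" using m mc a r by (simp add: m_assoc)
  then show "x \<otimes> r \<in> (\<otimes>) a ` M" using riD(5)[OF M m(1) r] by blast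
qed

lemma left_img:
  assumes i: "ideal I R" and M: "minimal_over R I M" and a: "a \<in> carrier R"
  shows "(\<forall>m\<in>M. a \<otimes> m \<in> I) \<or>
         (minimal_over R I (I <+> (\<otimes>) a ` M) \<and> mod_iso R I M I (I <+> (\<otimes>) a ` M))"
proof -
  have rI: "right_ideal R I" using i by (rule ideal_ri)
  have rM: "right_ideal R M" and IM: "I \<subseteq> M" using M min_ri min_sub by blast+
  define K where "K = {m \<in> M. a \<otimes> m \<in> I}"
  have rK: "right_ideal R K" unfolding K_def by (rule pre_ri[OF rM rI a])
  have IK: "I \<subseteq> K" unfolding K_def using IM idl_l[OF i _ a] by blast
  have "K = I \<or> K = M" using min_between[OF M rK IK] unfolding K_def by blast
  then show ?thesis
  proof
    assume "K = M"
    then show ?thesis unfolding K_def by blast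
  next
    assume KI: "K = I"
    have ker: "\<And>m. m \<in> M \<Longrightarrow> a \<otimes> m \<in> I \<Longrightarrow> m \<in> I" using KI unfolding K_def by blast
    define A where "A = I <+> (\<otimes>) a ` M"
    have raM: "right_ideal R ((\<otimes>) a ` M)" by (rule img_ri[OF rM a])
    have rA: "right_ideal R A" unfolding A_def by (rule ri_sum[OF rI raM])
    have IA: "I \<subseteq> A" unfolding A_def by (rule sum_sub1[OF rI raM])
    have aMA: "(\<otimes>) a ` M \<subseteq> A" unfolding A_def by (rule sum_sub2[OF rI raM])
    obtain m0 where m0: "m0 \<in> M" "m0 \<notin> I" using IM min_ne[OF M] by blast
    have "a \<otimes> m0 \<notin> I" using ker m0 by blast
    moreover have "a \<otimes> m0 \<in> A" using aMA m0 by blast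
    ultimately have AI: "A \<noteq> I" by blast
    have minA: "minimal_over R I A"
      unfolding minimal_over_def
    proof (intro conjI allI impI)
      show "right_ideal R I" "right_ideal R A" by (fact rI, fact rA)
      show "I \<subset> A" using IA AI by blast
      fix J assume J: "right_ideal R J \<and> I \<subseteq> J \<and> J \<subseteq> A"
      define P where "P = {m \<in> M. a \<otimes> m \<in> J}"
      have rP: "right_ideal R P" unfolding P_def using pre_ri[OF rM _ a] J by blast
      have IP: "I \<subseteq> P" unfolding P_def using IM idl_l[OF i _ a] J by blast
      have "P = I \<or> P = M" using min_between[OF M rP IP] unfolding P_def by blast
      then show "J = I \<or> J = A"
      proof
        assume PI: "P = I"
        have "J \<subseteq> I"
        proof
          fix y assume y: "y \<in> J"
          then have "y \<in> A" using J by blast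
          then obtain p q where pq: "p \<in> I" "q \<in> (\<otimes>) a ` M" "y = p \<oplus> q"
            unfolding A_def by (auto simp: set_add_iff)
          then obtain m where m: "m \<in> M" "q = a \<otimes> m" by blast
          have pc: "p \<in> carrier R" "q \<in> carrier R" using pq ri_carr[OF rI] ri_carr[OF raM] by auto
          have "q = y \<ominus> p" using pq pc by (simp add: minus_eq a_comm a_assoc r_neg r_neg1)
          moreover have "p \<in> J" using pq J by blast
          ultimately have "q \<in> J" using y ri_minus J by auto
          then have "m \<in> P" unfolding P_def using m by simp
          then have "a \<otimes> m \<in> I" using PI m idl_l[OF i _ a] by blast
          then show "y \<in> I" using pq m riD(3)[OF rI] by simp
        qed
        then show ?thesis using J by blast
      next
        assume "P = M"
        then have "(\<otimes>) a ` M \<subseteq> J" unfolding P_def by blast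
        then have "A \<subseteq> J" unfolding A_def using sum_le J by blast
        then show ?thesis using J by blast
      qed
    qed
    define g where "g = (\<lambda>y. SOME m. m \<in> M \<and> cg I y (a \<otimes> m))"
    have gp: "g y \<in> M \<and> cg I y (a \<otimes> g y)" if y: "y \<in> A" for y
    proof -
      obtain p q where pq: "p \<in> I" "q \<in> (\<otimes>) a ` M" "y = p \<oplus> q"
        using y unfolding A_def by (auto simp: set_add_iff)
      then obtain m where m: "m \<in> M" "q = a \<otimes> m" by blast
      have pc: "p \<in> carrier R" "q \<in> carrier R" using pq ri_carr[OF rI] ri_carr[OF raM] by auto
      have "cg I (q \<oplus> p) q" using cg_addI[OF i pc(2) pq(1)] .
      then have "cg I y (a \<otimes> m)" using pq m pc by (simp add: a_comm)
      then have "\<exists>m. m \<in> M \<and> cg I y (a \<otimes> m)" using m by blast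
      then show ?thesis unfolding g_def by (rule someI_ex)
    qed
    have mc: "\<And>x. x \<in> M \<Longrightarrow> x \<in> carrier R" using ri_carr[OF rM] by blast
    have Ac: "\<And>x. x \<in> A \<Longrightarrow> x \<in> carrier R" using ri_carr[OF rA] by blast
    have zI: "\<And>x. x \<in> M \<Longrightarrow> cg I (a \<otimes> x) \<zero> \<Longrightarrow> x \<in> I"
      using ker mc a cg_zero by (meson m_closed)
    have hf: "mod_hom R I M I A ((\<otimes>) a)"
      unfolding mod_hom_def
    proof (intro conjI ballI)
      fix x assume x: "x \<in> M"
      then show "a \<otimes> x \<in> A" using aMA by blast
      {
        fix y assume y: "y \<in> M"
        have "cg I (a \<otimes> (x \<oplus> y)) (a \<otimes> x \<oplus> a \<otimes> y)"
          using x y mc a by (simp add: cg_eq[OF i] r_distr)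
        then show "a \<otimes> (x \<oplus> y) \<ominus> (a \<otimes> x \<oplus> a \<otimes> y) \<in> I" by (simp add: cg_def)
      }
      fix r assume r: "r \<in> carrier R"
      have "cg I (a \<otimes> (x \<otimes> r)) (a \<otimes> x \<otimes> r)"
        using x r mc a by (simp add: cg_eq[OF i] m_assoc)
      then show "a \<otimes> (x \<otimes> r) \<ominus> a \<otimes> x \<otimes> r \<in> I" by (simp add: cg_def)
    next
      fix x assume "x \<in> I" then show "a \<otimes> x \<in> I" using idl_l[OF i _ a] by blast
    qed
    have hg: "mod_hom R I A I M g"
      unfolding mod_hom_def
    proof (intro conjI ballI)
      fix x assume x: "x \<in> A"
      then show "g x \<in> M" using gp by blast
      {
        fix y assume y: "y \<in> A"
        define d where "d = g (x \<oplus> y) \<ominus> (g x \<oplus> g y)"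
        have xy: "x \<oplus> y \<in> A" using x y riD(3)[OF rA] by blast
        have dM: "d \<in> M" unfolding d_def using gp x y xy riD(3)[OF rM] ri_minus[OF rM] by blast
        have gc: "g x \<in> carrier R" "g y \<in> carrier R" "g (x \<oplus> y) \<in> carrier R"
          using gp x y xy mc by blast+
        have "a \<otimes> d = a \<otimes> g (x \<oplus> y) \<ominus> (a \<otimes> g x \<oplus> a \<otimes> g y)"
          unfolding d_def using gc a by (simp add: minus_eq r_distr r_minus)
        moreover have "cg I (a \<otimes> g (x \<oplus> y) \<ominus> (a \<otimes> g x \<oplus> a \<otimes> g y)) ((x \<oplus> y) \<ominus> (x \<oplus> y))"
        proof -
          have c1: "cg I (a \<otimes> g (x \<oplus> y)) (x \<oplus> y)" using gp[OF xy] cg_sym[OF i] by blast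
          have c2: "cg I (a \<otimes> g x) x" using gp[OF x] cg_sym[OF i] by blast
          have c3: "cg I (a \<otimes> g y) y" using gp[OF y] cg_sym[OF i] by blast
          show ?thesis by (rule cg_minus[OF i c1 cg_add[OF i c2 c3]])
        qed
        moreover have "(x \<oplus> y) \<ominus> (x \<oplus> y) = \<zero>" using x y Ac by (simp add: minus_eq r_neg)
        ultimately have "cg I (a \<otimes> d) \<zero>" by simp
        then show "g (x \<oplus> y) \<ominus> (g x \<oplus> g y) \<in> I" using zI dM unfolding d_def by blast
      }
      fix r assume r: "r \<in> carrier R"
      define d where "d = g (x \<otimes> r) \<ominus> g x \<otimes> r"
      have xr: "x \<otimes> r \<in> A" using x r riD(5)[OF rA] by blast
      have dM: "d \<in> M" unfolding d_def using gp x xr r riD(5)[OF rM] ri_minus[OF rM] by blast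
      have gc: "g x \<in> carrier R" "g (x \<otimes> r) \<in> carrier R" using gp x xr mc by blast+
      have "a \<otimes> d = a \<otimes> g (x \<otimes> r) \<ominus> (a \<otimes> g x) \<otimes> r"
        unfolding d_def using gc a r by (simp add: minus_eq r_distr r_minus m_assoc)
      moreover have "cg I (a \<otimes> g (x \<otimes> r) \<ominus> (a \<otimes> g x) \<otimes> r) ((x \<otimes> r) \<ominus> (x \<otimes> r))"
      proof -
        have c1: "cg I (a \<otimes> g (x \<otimes> r)) (x \<otimes> r)" using gp[OF xr] cg_sym[OF i] by blast
        have c2: "cg I (a \<otimes> g x) x" using gp[OF x] cg_sym[OF i] by blast
        show ?thesis by (rule cg_minus[OF i c1 cg_rm[OF i r c2]])
      qed
      moreover have "(x \<otimes> r) \<ominus> (x \<otimes> r) = \<zero>" using x r Ac by (simp add: minus_eq r_neg)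
      ultimately have "cg I (a \<otimes> d) \<zero>" by simp
      then show "g (x \<otimes> r) \<ominus> g x \<otimes> r \<in> I" using zI dM unfolding d_def by blast
    next
      fix x assume x: "x \<in> I"
      then have xA: "x \<in> A" using IA by blast
      then have "cg I (a \<otimes> g x) x" using gp cg_sym[OF i] by blast
      then have "a \<otimes> g x \<in> I" using cg_memI[OF i] x by blast
      then show "g x \<in> I" using ker gp xA by blast
    qed
    have e1: "\<forall>x\<in>M. g (a \<otimes> x) \<ominus> x \<in> I"
    proof
      fix x assume x: "x \<in> M"
      have ax: "a \<otimes> x \<in> A" using x aMA by blast
      define d where "d = g (a \<otimes> x) \<ominus> x"
      have dM: "d \<in> M" unfolding d_def using gp ax x ri_minus[OF rM] by blast
      have gc: "g (a \<otimes> x) \<in> carrier R" using gp ax mc by blast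
      have "a \<otimes> d = a \<otimes> g (a \<otimes> x) \<ominus> a \<otimes> x"
        unfolding d_def using gc a x mc by (simp add: minus_eq r_distr r_minus)
      moreover have "cg I (a \<otimes> g (a \<otimes> x) \<ominus> a \<otimes> x) ((a \<otimes> x) \<ominus> (a \<otimes> x))"
      proof -
        have c1: "cg I (a \<otimes> g (a \<otimes> x)) (a \<otimes> x)" using gp[OF ax] cg_sym[OF i] by blast
        show ?thesis by (rule cg_minus[OF i c1 cg_refl[OF i Ac[OF ax]]])
      qed
      moreover have "(a \<otimes> x) \<ominus> (a \<otimes> x) = \<zero>" using ax Ac by (simp add: minus_eq r_neg)
      ultimately have "cg I (a \<otimes> d) \<zero>" by simp
      then show "g (a \<otimes> x) \<ominus> x \<in> I" using zI dM unfolding d_def by blast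
    qed
    have e2: "\<forall>y\<in>A. a \<otimes> g y \<ominus> y \<in> I"
      using gp cg_sym[OF i] unfolding cg_def by blast
    have "mod_iso R I M I A"
      unfolding mod_iso_def using hf hg e1 e2 by blast
    then show ?thesis using minA unfolding A_def by blast
  qed
qed

end

no_notation Sum_Type.Plus (infixr \<open><+>\<close> 65)

context ring
begin

lemma ideal_from_ri:
  assumes "right_ideal R J" "\<And>x a. x \<in> J \<Longrightarrow> a \<in> carrier R \<Longrightarrow> a \<otimes> x \<in> J"
  shows "ideal J R"
  apply (rule idealI)
     apply (rule ring_axioms)
  using assms(1) apply (simp add: right_ideal_def additive_subgroup_def)
  using assms(2) apply blast
  using riD(5)[OF assms(1)] by blast

lemma ss_ideal:
  assumes i: "ideal I R"
  shows "ideal (soc_succ R I) R"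
proof -
  have rI: "right_ideal R I" using i by (rule ideal_ri)
  define S where "S = soc_succ R I"
  have rS: "right_ideal R S" unfolding S_def by (rule ss_ri[OF rI])
  have IS: "I \<subseteq> S" unfolding S_def by (rule ss_ge)
  define W where "W = {x \<in> S. \<forall>a\<in>carrier R. a \<otimes> x \<in> S}"
  have rW: "right_ideal R W"
    unfolding ri_iff W_def
  proof (intro conjI ballI)
    show "{x \<in> S. \<forall>a\<in>carrier R. a \<otimes> x \<in> S} \<subseteq> carrier R" using riD(1)[OF rS] by blast
    show "\<zero> \<in> {x \<in> S. \<forall>a\<in>carrier R. a \<otimes> x \<in> S}" using riD(2)[OF rS] by simp
    fix x assume x: "x \<in> {x \<in> S. \<forall>a\<in>carrier R. a \<otimes> x \<in> S}"
    then have xc: "x \<in> carrier R" using ri_carr[OF rS] by blast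
    {
      fix y assume y: "y \<in> {x \<in> S. \<forall>a\<in>carrier R. a \<otimes> x \<in> S}"
      then have yc: "y \<in> carrier R" using ri_carr[OF rS] by blast
      have "\<forall>a\<in>carrier R. a \<otimes> (x \<oplus> y) = a \<otimes> x \<oplus> a \<otimes> y" using xc yc by (simp add: r_distr)
      then show "x \<oplus> y \<in> {x \<in> S. \<forall>a\<in>carrier R. a \<otimes> x \<in> S}"
        using x y riD(3)[OF rS] by auto
    }
    have "\<forall>a\<in>carrier R. a \<otimes> (\<ominus> x) = \<ominus> (a \<otimes> x)" using xc by (simp add: r_minus)
    then show "\<ominus> x \<in> {x \<in> S. \<forall>a\<in>carrier R. a \<otimes> x \<in> S}" using x riD(4)[OF rS] by auto
    fix r assume r: "r \<in> carrier R"
    have "\<forall>a\<in>carrier R. a \<otimes> (x \<otimes> r) = (a \<otimes> x) \<otimes> r" using xc r by (simp add: m_assoc)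
    then show "x \<otimes> r \<in> {x \<in> S. \<forall>a\<in>carrier R. a \<otimes> x \<in> S}" using x r riD(5)[OF rS] by auto
  qed
  have IW: "I \<subseteq> W" unfolding W_def using IS idl_l[OF i] by blast
  have MW: "M \<subseteq> W" if M: "minimal_over R I M" for M
  proof
    fix m assume m: "m \<in> M"
    have MS: "M \<subseteq> S" unfolding S_def by (rule ss_min[OF M])
    have "a \<otimes> m \<in> S" if a: "a \<in> carrier R" for a
    proof -
      from left_img[OF i M a] show ?thesis
      proof
        assume "\<forall>m\<in>M. a \<otimes> m \<in> I" then show ?thesis using m IS by blast
      next
        assume h: "minimal_over R I (I <+> (\<otimes>) a ` M) \<and> mod_iso R I M I (I <+> (\<otimes>) a ` M)"
        have "I <+> (\<otimes>) a ` M \<subseteq> S" unfolding S_def using h ss_min by blast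
        moreover have "a \<otimes> m \<in> I <+> (\<otimes>) a ` M"
          using sum_sub2[OF rI img_ri[OF min_ri[OF M] a]] m by blast
        ultimately show ?thesis by blast
      qed
    qed
    then show "m \<in> W" unfolding W_def using m MS by blast
  qed
  have "S \<subseteq> W" unfolding S_def using ss_least[OF rW IW MW] by blast
  then have "\<And>x a. x \<in> S \<Longrightarrow> a \<in> carrier R \<Longrightarrow> a \<otimes> x \<in> S" unfolding W_def by blast
  then show ?thesis using ideal_from_ri[OF rS] unfolding S_def by blast
qed

end

lemma st_ideal:
  assumes R: "ring R"
  shows "socle_term R T \<Longrightarrow> ideal T R"
proof (induction rule: socle_term.induct)
  case zero
  then show ?case using ring.zeroideal[OF R] by simp
next
  case (succ I)
  then show ?case using ring.ss_ideal[OF R] by blast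
next
  case (union C)
  have ch: "\<And>a b. a \<in> C \<Longrightarrow> b \<in> C \<Longrightarrow> a \<subseteq> b \<or> b \<subseteq> a"
    using union.IH st_chain by blast
  have id: "\<And>a. a \<in> C \<Longrightarrow> ideal a R" using union.IH by blast
  obtain c0 where c0: "c0 \<in> C" using union.hyps by blast
  have ri: "right_ideal R (\<Union>C)"
    unfolding ring.ri_iff[OF R]
  proof (intro conjI ballI)
    show "\<Union>C \<subseteq> carrier R" using id ring.ri_carr[OF R ring.ideal_ri[OF R]] by blast
    show "\<zero>\<^bsub>R\<^esub> \<in> \<Union>C" using c0 id ring.riD(2)[OF R ring.ideal_ri[OF R]] by blast
    fix x assume "x \<in> \<Union>C"
    then obtain a where a: "a \<in> C" "x \<in> a" by blast
    {
      fix y assume "y \<in> \<Union>C"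
      then obtain b where b: "b \<in> C" "y \<in> b" by blast
      have "a \<subseteq> b \<or> b \<subseteq> a" using ch a b by blast
      then show "x \<oplus>\<^bsub>R\<^esub> y \<in> \<Union>C"
        using a b id ring.riD(3)[OF R ring.ideal_ri[OF R]] by blast
    }
    show "\<ominus>\<^bsub>R\<^esub> x \<in> \<Union>C" using a id ring.riD(4)[OF R ring.ideal_ri[OF R]] by blast
    fix r assume "r \<in> carrier R"
    then show "x \<otimes>\<^bsub>R\<^esub> r \<in> \<Union>C" using a id ring.riD(5)[OF R ring.ideal_ri[OF R]] by blast
  qed
  have "\<And>x a. x \<in> \<Union>C \<Longrightarrow> a \<in> carrier R \<Longrightarrow> a \<otimes>\<^bsub>R\<^esub> x \<in> \<Union>C"
    using id ring.idl_l[OF R] by blast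
  then show ?case using ring.ideal_from_ri[OF R ri] by blast
qed

context ring
begin

abbreviation fsum :: "'a set list \<Rightarrow> 'a set \<Rightarrow> 'a set" where
  "fsum Ms B \<equiv> foldr (\<lambda>M A. M <+> A) Ms B"

lemma fs_ri: "right_ideal R B \<Longrightarrow> (\<forall>M\<in>set Ms. right_ideal R M) \<Longrightarrow> right_ideal R (fsum Ms B) \<and> B \<subseteq> fsum Ms B"
proof (induction Ms)
  case Nil
  then show ?case by simp
next
  case (Cons M Ms)
  then have "right_ideal R (fsum Ms B)" "B \<subseteq> fsum Ms B" "right_ideal R M" by auto
  then show ?case using ri_sum sum_sub2 by fastforce
qed

lemma fs_add:
  assumes B: "right_ideal R B" and IB: "I \<subseteq> B" and rI: "right_ideal R I"
  shows "(\<forall>M\<in>set Ms. right_ideal R M) \<Longrightarrow> x \<in> fsum Ms I \<Longrightarrow> y \<in> B \<Longrightarrow> x \<oplus> y \<in> fsum Ms B"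
proof (induction Ms arbitrary: x)
  case Nil
  then show ?case using IB riD(3)[OF B] by auto
next
  case (Cons M Ms)
  from Cons.prems obtain m x' where mx: "m \<in> M" "x' \<in> fsum Ms I" "x = m \<oplus> x'"
    by (auto simp: set_add_iff)
  have rM: "right_ideal R M" using Cons.prems by simp
  have r1: "right_ideal R (fsum Ms I)" using fs_ri[OF rI] Cons.prems by simp
  have "x' \<oplus> y \<in> fsum Ms B" using Cons mx by simp
  moreover have "x \<oplus> y = m \<oplus> (x' \<oplus> y)" using mx ri_carr[OF rM] ri_carr[OF r1] ri_carr[OF B] Cons.prems
    by (simp add: a_assoc)
  ultimately show ?case using mx(1) by (auto simp: set_add_iff)
qed

definition Sig :: "'a set \<Rightarrow> 'a set" where
  "Sig I = {x. \<exists>Ms. (\<forall>M\<in>set Ms. minimal_over R I M) \<and> x \<in> fsum Ms I}"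

lemma ss_Sig:
  assumes rI: "right_ideal R I"
  shows "soc_succ R I \<subseteq> Sig I"
proof (rule ss_least)
  show "right_ideal R (Sig I)"
    unfolding ri_iff
  proof (intro conjI ballI)
    show "Sig I \<subseteq> carrier R"
    proof
      fix x assume "x \<in> Sig I"
      then obtain Ms where "\<forall>M\<in>set Ms. minimal_over R I M" "x \<in> fsum Ms I" unfolding Sig_def by blast
      then show "x \<in> carrier R" using fs_ri[OF rI, of Ms] min_ri ri_carr by blast
    qed
    show "\<zero> \<in> Sig I" unfolding Sig_def using riD(2)[OF rI] by (auto intro: exI[of _ "[]"])
    fix x assume "x \<in> Sig I"
    then obtain Ms where Ms: "\<forall>M\<in>set Ms. minimal_over R I M" "x \<in> fsum Ms I" unfolding Sig_def by blast
    have rMs: "\<forall>M\<in>set Ms. right_ideal R M" using Ms min_ri by blast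
    have rF: "right_ideal R (fsum Ms I)" using fs_ri[OF rI rMs] by blast
    {
      fix y assume "y \<in> Sig I"
      then obtain Ns where Ns: "\<forall>M\<in>set Ns. minimal_over R I M" "y \<in> fsum Ns I" unfolding Sig_def by blast
      have rNs: "\<forall>M\<in>set Ns. right_ideal R M" using Ns min_ri by blast
      have "right_ideal R (fsum Ns I)" "I \<subseteq> fsum Ns I" using fs_ri[OF rI rNs] by auto
      then have "x \<oplus> y \<in> fsum Ms (fsum Ns I)" using fs_add[OF _ _ rI rMs Ms(2) Ns(2)] by blast
      then have "x \<oplus> y \<in> fsum (Ms @ Ns) I" by simp
      moreover have "\<forall>M\<in>set (Ms @ Ns). minimal_over R I M" using Ms Ns by auto
      ultimately show "x \<oplus> y \<in> Sig I" unfolding Sig_def by blast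
    }
    show "\<ominus> x \<in> Sig I" using riD(4)[OF rF Ms(2)] Ms(1) unfolding Sig_def by blast
    fix r assume "r \<in> carrier R"
    then show "x \<otimes> r \<in> Sig I" using riD(5)[OF rF Ms(2)] Ms(1) unfolding Sig_def by blast
  qed
  show "I \<subseteq> Sig I" unfolding Sig_def by (auto intro: exI[of _ "[]"])
  fix M assume M: "minimal_over R I M"
  have "M \<subseteq> fsum [M] I" using sum_sub1[OF min_ri[OF M] rI] by simp
  moreover have "\<forall>N\<in>set [M]. minimal_over R I N" using M by simp
  ultimately show "M \<subseteq> Sig I" unfolding Sig_def by blast
qed

lemma SS_list:
  assumes rI: "right_ideal R I"
  shows "(\<forall>M\<in>set Ms. minimal_over R I M) \<Longrightarrow> right_ideal R N \<Longrightarrow> I \<subseteq> N \<Longrightarrow> N \<subseteq> fsum Ms I \<Longrightarrow> N \<noteq> I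
     \<Longrightarrow> \<exists>M. minimal_over R I M \<and> M \<subseteq> N"
proof (induction Ms arbitrary: N)
  case Nil
  then show ?case by auto
next
  case (Cons M Ms)
  define S where "S = fsum Ms I"
  have rMs: "\<forall>M\<in>set Ms. right_ideal R M" using Cons.prems min_ri by auto
  have rS: "right_ideal R S" and IS: "I \<subseteq> S" unfolding S_def using fs_ri[OF rI rMs] by auto
  have Mm: "minimal_over R I M" using Cons.prems by simp
  have rM: "right_ideal R M" using min_ri[OF Mm] .
  have rN: "right_ideal R N" and IN: "I \<subseteq> N" and NMS: "N \<subseteq> M <+> S" and NI: "N \<noteq> I"
    using Cons.prems unfolding S_def by auto
  show ?case
  proof (cases "N \<inter> S = I")
    case False
    have "\<exists>M. minimal_over R I M \<and> M \<subseteq> N \<inter> S"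
      using Cons.IH[of "N \<inter> S"] Cons.prems ri_Int[OF rN rS] IN IS False unfolding S_def by auto
    then show ?thesis by blast
  next
    case True
    have "minimal_over R I N"
      unfolding minimal_over_def
    proof (intro conjI allI impI)
      show "right_ideal R I" "right_ideal R N" by (fact rI, fact rN)
      show "I \<subset> N" using IN NI by blast
      fix K assume K: "right_ideal R K \<and> I \<subseteq> K \<and> K \<subseteq> N"
      have rK: "right_ideal R K" using K by blast
      have rKS: "right_ideal R (K <+> S)" using ri_sum[OF rK rS] .
      have "S \<subseteq> K <+> S" using sum_sub2[OF rK rS] .
      moreover have "K <+> S \<subseteq> M <+> S"
        using sum_le[OF ri_sum[OF rM rS]] K NMS sum_sub2[OF rM rS] by blast
      ultimately have c1: "K <+> S = S \<or> K <+> S = M <+> S"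
        using two_elem[OF Mm rS IS rKS] by blast
      have "S \<subseteq> N <+> S" using sum_sub2[OF rN rS] .
      moreover have "N <+> S \<subseteq> M <+> S"
        using sum_le[OF ri_sum[OF rM rS]] NMS sum_sub2[OF rM rS] by blast
      ultimately have c2: "N <+> S = S \<or> N <+> S = M <+> S"
        using two_elem[OF Mm rS IS ri_sum[OF rN rS]] by blast
      have "\<not> N \<subseteq> S" using True NI by blast
      then have "N <+> S \<noteq> S" using sum_sub1[OF rN rS] by blast
      then have NS: "N <+> S = M <+> S" using c2 by blast
      from c1 show "K = I \<or> K = N"
      proof
        assume "K <+> S = S"
        then have "K \<subseteq> S" using sum_sub1[OF rK rS] by blast
        then have "K \<subseteq> I" using K True by blast
        then show ?thesis using K by blast
      next
        assume "K <+> S = M <+> S"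
        then have "N \<subseteq> K <+> S" using NS sum_sub1[OF rN rS] by blast
        then have "N = N \<inter> (K <+> S)" by blast
        also have "\<dots> = K <+> (N \<inter> S)" using modular[OF rK rS rN] K by blast
        also have "\<dots> = K" using True sum_absorb[OF rK rI] K by simp
        finally show ?thesis by blast
      qed
    qed
    then show ?thesis by blast
  qed
qed

lemma SS:
  assumes rI: "right_ideal R I" and rN: "right_ideal R N" and IN: "I \<subseteq> N"
    and NS: "N \<subseteq> soc_succ R I" and NI: "N \<noteq> I"
  shows "\<exists>M. minimal_over R I M \<and> M \<subseteq> N"
proof -
  obtain x where x: "x \<in> N" "x \<notin> I" using IN NI by blast
  then have "x \<in> Sig I" using NS ss_Sig[OF rI] by blast
  then obtain Ms where Ms: "\<forall>M\<in>set Ms. minimal_over R I M" "x \<in> fsum Ms I" unfolding Sig_def by blast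
  have rMs: "\<forall>M\<in>set Ms. right_ideal R M" using Ms min_ri by blast
  have rF: "right_ideal R (fsum Ms I)" and IF: "I \<subseteq> fsum Ms I" using fs_ri[OF rI rMs] by auto
  have "\<exists>M. minimal_over R I M \<and> M \<subseteq> N \<inter> fsum Ms I"
    apply (rule SS_list[OF rI Ms(1) ri_Int[OF rN rF]])
    using IN IF x Ms by auto
  then show ?thesis by blast
qed

lemma ss_mono:
  assumes rT: "right_ideal R T" and rI: "right_ideal R I" and TI: "T \<subseteq> I"
  shows "soc_succ R T \<subseteq> soc_succ R I"
proof (rule ss_least)
  show "right_ideal R (soc_succ R I)" by (rule ss_ri[OF rI])
  show "T \<subseteq> soc_succ R I" using TI ss_ge by blast
  fix M assume M: "minimal_over R T M"
  from sum_min_cases[OF M rI TI] show "M \<subseteq> soc_succ R I"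
  proof
    assume "M \<subseteq> I" then show ?thesis using ss_ge by blast
  next
    assume "minimal_over R I (M <+> I)"
    then have "M <+> I \<subseteq> soc_succ R I" by (rule ss_min)
    then show ?thesis using sum_sub1[OF min_ri[OF M] rI] by blast
  qed
qed

end

context ring
begin

lemma ess_gen:
  assumes sI: "socle_term R I"
  shows "socle_term R T \<Longrightarrow> \<forall>J. right_ideal R J \<and> I \<subseteq> J \<and> \<not> (J \<inter> T \<subseteq> I) \<longrightarrow>
           (\<exists>M. minimal_over R I M \<and> M \<subseteq> J)"
proof (induction rule: socle_term.induct)
  case zero
  have "\<zero> \<in> I" using st_zero_sub[OF sI] by blast
  then show ?case by blast
next
  case (union C)
  show ?case
  proof (intro allI impI)
    fix J assume J: "right_ideal R J \<and> I \<subseteq> J \<and> \<not> J \<inter> \<Union>C \<subseteq> I"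
    then obtain c where c: "c \<in> C" "\<not> J \<inter> c \<subseteq> I" by blast
    then show "\<exists>M. minimal_over R I M \<and> M \<subseteq> J" using union.IH J by blast
  qed
next
  case (succ T')
  have iI: "ideal I R" using st_ideal[OF ring_axioms sI] .
  have rI: "right_ideal R I" using ideal_ri[OF iI] .
  have rT: "right_ideal R T'" using ideal_ri[OF st_ideal[OF ring_axioms succ.hyps]] .
  have rST: "right_ideal R (soc_succ R T')" using ss_ri[OF rT] .
  show ?case
  proof (intro allI impI)
    fix J assume J: "right_ideal R J \<and> I \<subseteq> J \<and> \<not> J \<inter> soc_succ R T' \<subseteq> I"
    have rJ: "right_ideal R J" and IJ: "I \<subseteq> J" and nJ: "\<not> J \<inter> soc_succ R T' \<subseteq> I" using J by auto
    show "\<exists>M. minimal_over R I M \<and> M \<subseteq> J"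
    proof (cases "J \<inter> T' \<subseteq> I")
      case False
      then show ?thesis using succ.IH J by blast
    next
      case True
      have "T' \<subseteq> I \<or> I \<subseteq> T'" using st_chain[OF sI succ.hyps] .
      then show ?thesis
      proof
        assume TI: "T' \<subseteq> I"
        have sub: "soc_succ R T' \<subseteq> soc_succ R I" by (rule ss_mono[OF rT rI TI])
        define N where "N = J \<inter> soc_succ R I"
        have rN: "right_ideal R N" unfolding N_def using ri_Int[OF rJ ss_ri[OF rI]] .
        have IN: "I \<subseteq> N" unfolding N_def using IJ ss_ge by blast
        have NI: "N \<noteq> I" unfolding N_def using nJ sub by blast
        obtain M where "minimal_over R I M" "M \<subseteq> N"
          using SS[OF rI rN IN _ NI] unfolding N_def by blast
        then show ?thesis unfolding N_def by blast
      next
        assume IT: "I \<subseteq> T'"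
        have JT: "J \<inter> T' = I" using True IT IJ by blast
        define J' where "J' = J \<inter> soc_succ R T'"
        have rJ': "right_ideal R J'" unfolding J'_def by (rule ri_Int[OF rJ rST])
        define N where "N = T' <+> J'"
        have rN: "right_ideal R N" unfolding N_def by (rule ri_sum[OF rT rJ'])
        have TN: "T' \<subseteq> N" unfolding N_def by (rule sum_sub1[OF rT rJ'])
        have NS: "N \<subseteq> soc_succ R T'" unfolding N_def
          using sum_le[OF rST] ss_ge J'_def by blast
        obtain x where x: "x \<in> J'" "x \<notin> I" using nJ unfolding J'_def by blast
        have "x \<notin> T'" using x JT unfolding J'_def by blast
        moreover have "x \<in> N" unfolding N_def using sum_sub2[OF rT rJ'] x by blast
        ultimately have NT: "N \<noteq> T'" by blast
        obtain M where M: "minimal_over R T' M" "M \<subseteq> N" using SS[OF rT rN TN NS NT] by blast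
        have rM: "right_ideal R M" and TM: "T' \<subseteq> M" and MT: "M \<noteq> T'"
          using M min_ri min_sub min_ne by blast+
        define L where "L = M \<inter> J"
        have rL: "right_ideal R L" unfolding L_def by (rule ri_Int[OF rM rJ])
        have IL: "I \<subseteq> L" unfolding L_def using IT TM IJ by blast
        have LT: "L \<inter> T' = I" unfolding L_def using JT IT TM by blast
        have "M = M \<inter> (T' <+> J')" using M(2) unfolding N_def by blast
        also have "\<dots> = T' <+> (M \<inter> J')" by (rule modular[OF rT rJ' rM TM])
        finally have "M \<subseteq> T' <+> L" unfolding L_def J'_def
          using sum_mono[of T' T' "M \<inter> (J \<inter> soc_succ R T')" "M \<inter> J"] by blast
        moreover have "T' <+> L \<subseteq> M" using sum_le[OF rM TM] L_def by blast
        ultimately have TL: "T' <+> L = M" by blast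
        have "minimal_over R I L"
          unfolding minimal_over_def
        proof (intro conjI allI impI)
          show "right_ideal R I" "right_ideal R L" by (fact rI, fact rL)
          have "L \<noteq> I"
          proof
            assume "L = I"
            then have "T' <+> L = T'" using sum_absorb[OF rT rI IT] by simp
            then show False using TL MT by simp
          qed
          then show "I \<subset> L" using IL by blast
          fix K assume K: "right_ideal R K \<and> I \<subseteq> K \<and> K \<subseteq> L"
          have rK: "right_ideal R K" using K by blast
          have "T' \<subseteq> T' <+> K" by (rule sum_sub1[OF rT rK])
          moreover have "T' <+> K \<subseteq> M" using sum_le[OF rM TM] K L_def by blast
          ultimately have "T' <+> K = T' \<or> T' <+> K = M"
            using min_between[OF M(1) ri_sum[OF rT rK]] by blast
          then show "K = I \<or> K = L"
          proof
            assume "T' <+> K = T'"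
            then have "K \<subseteq> T'" using sum_sub2[OF rT rK] by blast
            then show ?thesis using K LT by blast
          next
            assume h: "T' <+> K = M"
            have cK: "K \<subseteq> carrier R" "T' \<subseteq> carrier R" using riD(1) rK rT by blast+
            have "L \<subseteq> K <+> T'" using h sum_comm[OF cK] L_def by blast
            then have "L = L \<inter> (K <+> T')" by blast
            also have "\<dots> = K <+> (L \<inter> T')" using modular[OF rK rT rL] K by blast
            also have "\<dots> = K" using LT sum_absorb[OF rK rI] K by simp
            finally show ?thesis by blast
          qed
        qed
        then show ?thesis unfolding L_def by blast
      qed
    qed
  qed
qed

lemma essential:
  assumes sa: "semiartinian R" and sI: "socle_term R I"
    and rJ: "right_ideal R J" and IJ: "I \<subseteq> J" and nJ: "\<not> J \<subseteq> I"
  shows "\<exists>M. minimal_over R I M \<and> M \<subseteq> J"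
proof -
  have "socle_term R (carrier R)" using sa by (simp add: semiartinian_def)
  moreover have "J \<inter> carrier R = J" using riD(1)[OF rJ] by blast
  ultimately show ?thesis using ess_gen[OF sI] rJ IJ nJ by metis
qed

end

no_notation Sum_Type.Plus (infixr \<open><+>\<close> 65)

context ring
begin

lemma coset_eq:
  assumes i: "ideal I R" and a: "a \<in> carrier R" and b: "b \<in> carrier R"
  shows "I +> a = I +> b \<longleftrightarrow> cg I a b"
proof -
  interpret I: ideal I R by (rule i)
  show ?thesis
  proof
    assume h: "I +> a = I +> b"
    have "a \<in> I +> b" using I.a_rcos_self[OF a] h by simp
    then have "a \<ominus> b \<in> I" using I.a_rcos_module_minus[OF ring_axioms b a] by simp
    then show "cg I a b" using a b by (simp add: cg_def)
  next
    assume "cg I a b"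
    then have "a \<ominus> b \<in> I" by (simp add: cg_def)
    then have "a \<in> I +> b" using I.a_rcos_module_minus[OF ring_axioms b a] by simp
    then show "I +> a = I +> b" using I.a_repr_independence' b by simp
  qed
qed

lemma quot_comm_iff:
  assumes i: "ideal I R"
  shows "commutative_ring (R Quot I) \<longleftrightarrow> (\<forall>a\<in>carrier R. \<forall>b\<in>carrier R. cg I (a \<otimes> b) (b \<otimes> a))"
proof -
  interpret I: ideal I R by (rule i)
  have "commutative_ring (R Quot I) \<longleftrightarrow> (\<forall>a\<in>carrier R. \<forall>b\<in>carrier R. I +> (a \<otimes> b) = I +> (b \<otimes> a))"
    unfolding commutative_ring_def
    by (simp add: FactRing_def A_RCOSETS_def' I.rcoset_mult_add)
  then show ?thesis using coset_eq[OF i] by simp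
qed

lemma regular_idem:
  assumes vn: "von_neumann_regular R" and i: "ideal I R" and M: "minimal_over R I M"
  shows "\<exists>e\<in>M. e \<notin> I \<and> e \<otimes> e = e \<and> (\<forall>m\<in>M. cg I (e \<otimes> m) m)"
proof -
  have rI: "right_ideal R I" using i by (rule ideal_ri)
  have rM: "right_ideal R M" and IM: "I \<subseteq> M" using M min_ri min_sub by blast+
  obtain x where x: "x \<in> M" "x \<notin> I" using IM min_ne[OF M] by blast
  have xc: "x \<in> carrier R" using ri_carr[OF rM x(1)] .
  obtain z where z: "z \<in> carrier R" "x \<otimes> z \<otimes> x = x" using vn xc unfolding von_neumann_regular_def by blast
  define e where "e = x \<otimes> z"
  have ec: "e \<in> carrier R" unfolding e_def using xc z by simp
  have eM: "e \<in> M" unfolding e_def using riD(5)[OF rM x(1) z(1)] .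
  have ex: "e \<otimes> x = x" unfolding e_def using z by simp
  have eI: "e \<notin> I"
  proof
    assume "e \<in> I" then have "e \<otimes> x \<in> I" using idl_r[OF i _ xc] by blast
    then show False using ex x by simp
  qed
  have ee: "e \<otimes> e = e" unfolding e_def using z xc
    by (metis m_assoc m_closed)
  define XX where "XX = I <+> (\<otimes>) x ` carrier R"
  have rX: "right_ideal R XX" unfolding XX_def by (rule ri_sum[OF rI img_ri[OF ri_carrier xc]])
  have IX: "I \<subseteq> XX" unfolding XX_def by (rule sum_sub1[OF rI img_ri[OF ri_carrier xc]])
  have XM: "XX \<subseteq> M" unfolding XX_def using sum_le[OF rM IM] riD(5)[OF rM x(1)] by blast
  have "x \<in> XX" unfolding XX_def using sum_sub2[OF rI img_ri[OF ri_carrier xc]] xc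
    by (metis image_eqI r_one one_closed subsetD)
  then have "XX = M" using min_between[OF M rX IX XM] x by blast
  have "cg I (e \<otimes> m) m" if m: "m \<in> M" for m
  proof -
    have "m \<in> XX" using m \<open>XX = M\<close> by simp
    then obtain p r where pr: "p \<in> I" "r \<in> carrier R" "m = p \<oplus> x \<otimes> r"
      unfolding XX_def by (auto simp: set_add_iff)
    have pc: "p \<in> carrier R" using ri_carr[OF rI pr(1)] .
    have "e \<otimes> m = e \<otimes> p \<oplus> x \<otimes> r" using pr pc ec xc ex
      by (simp add: r_distr m_assoc[symmetric])
    moreover have "cg I (e \<otimes> p \<oplus> x \<otimes> r) (\<zero> \<oplus> x \<otimes> r)"
      using cg_add[OF i cg_memD[OF i idl_l[OF i pr(1) ec]] cg_refl[OF i]] xc pr by simp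
    moreover have "cg I (\<zero> \<oplus> x \<otimes> r) (p \<oplus> x \<otimes> r)"
      using cg_add[OF i cg_sym[OF i cg_memD[OF i pr(1)]] cg_refl[OF i]] xc pr by simp
    ultimately show ?thesis using pr cg_trans[OF i] by metis
  qed
  then show ?thesis using eM eI ee by blast
qed

lemma injectivity:
  assumes vn: "von_neumann_regular R" and sa: "semiartinian R" and sI: "socle_term R I"
    and d: "d \<in> carrier R" and h: "\<And>M m. minimal_over R I M \<Longrightarrow> m \<in> M \<Longrightarrow> d \<otimes> m \<in> I"
  shows "d \<in> I"
proof -
  have i: "ideal I R" using st_ideal[OF ring_axioms sI] .
  have rI: "right_ideal R I" using i by (rule ideal_ri)
  obtain z where z: "z \<in> carrier R" "d \<otimes> z \<otimes> d = d" using vn d unfolding von_neumann_regular_def by blast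
  define f where "f = z \<otimes> d"
  have fc: "f \<in> carrier R" unfolding f_def using z d by simp
  have ff: "f \<otimes> f = f" unfolding f_def using z d by (metis m_assoc m_closed)
  have fM: "f \<otimes> m \<in> I" if "minimal_over R I M" "m \<in> M" for M m
  proof -
    have "d \<otimes> m \<in> I" using h that by blast
    moreover have "m \<in> carrier R" using ri_carr[OF min_ri] that by blast
    ultimately show ?thesis unfolding f_def using idl_l[OF i _ z(1)] z d by (simp add: m_assoc)
  qed
  have "f \<in> I"
  proof (rule ccontr)
    assume nf: "f \<notin> I"
    define J where "J = I <+> (\<otimes>) f ` carrier R"
    have rfR: "right_ideal R ((\<otimes>) f ` carrier R)" by (rule img_ri[OF ri_carrier fc])
    have rJ: "right_ideal R J" unfolding J_def by (rule ri_sum[OF rI rfR])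
    have IJ: "I \<subseteq> J" unfolding J_def by (rule sum_sub1[OF rI rfR])
    have "f \<in> J" unfolding J_def using sum_sub2[OF rI rfR] fc
      by (metis image_eqI r_one one_closed subsetD)
    then obtain M where M: "minimal_over R I M" "M \<subseteq> J" using essential[OF sa sI rJ IJ] nf by blast
    have "M \<subseteq> I"
    proof
      fix m assume m: "m \<in> M"
      then have "m \<in> J" using M by blast
      then obtain p r where pr: "p \<in> I" "r \<in> carrier R" "m = p \<oplus> f \<otimes> r"
        unfolding J_def by (auto simp: set_add_iff)
      have pc: "p \<in> carrier R" using ri_carr[OF rI pr(1)] .
      have "f \<otimes> m = f \<otimes> p \<oplus> f \<otimes> r" using pr pc fc ff
        by (simp add: r_distr m_assoc[symmetric])
      moreover have "f \<otimes> m \<in> I" using fM M m by blast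
      moreover have "f \<otimes> p \<in> I" using idl_l[OF i pr(1) fc] .
      ultimately have "f \<otimes> r \<in> I"
        using ri_add_cancel[OF rI _ _] fc pr by (metis a_comm m_closed ri_carr rI)
      then show "m \<in> I" using pr riD(3)[OF rI] by simp
    qed
    then show False using M min_sub min_ne by blast
  qed
  then have "d \<otimes> f \<in> I" using idl_l[OF i _ d] by blast
  moreover have "d \<otimes> f = d" unfolding f_def using z d by (simp add: m_assoc[symmetric])
  ultimately show ?thesis by simp
qed

end

no_notation Sum_Type.Plus (infixr \<open><+>\<close> 65)

context ring
begin

lemma cg_in: "right_ideal R M \<Longrightarrow> I \<subseteq> M \<Longrightarrow> cg I y w \<Longrightarrow> w \<in> M \<Longrightarrow> y \<in> M"
  using ri_minus_cancel by (auto simp: cg_def)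

lemma two_sided:
  assumes comm: "\<forall>a\<in>carrier R. \<forall>b\<in>carrier R. cg I (a \<otimes> b) (b \<otimes> a)"
    and rM: "right_ideal R M" and IM: "I \<subseteq> M" and a: "a \<in> carrier R" and m: "m \<in> M"
  shows "a \<otimes> m \<in> M"
  using cg_in[OF rM IM _ riD(5)[OF rM m a]] comm a ri_carr[OF rM m] by blast

lemma mod_iso_refl:
  assumes i: "ideal I R" and rM: "right_ideal R M" and IM: "I \<subseteq> M"
  shows "mod_iso R I M I M"
proof -
  have c: "\<And>x. x \<in> M \<Longrightarrow> x \<in> carrier R" using ri_carr[OF rM] by blast
  have z: "\<zero> \<in> I" using riD(2)[OF ideal_ri[OF i]] .
  have h: "mod_hom R I M I M id"
    unfolding mod_hom_def using IM z c riD(3,5)[OF rM] by (auto simp: r_neg minus_eq)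
  show ?thesis unfolding mod_iso_def
    apply (rule exI[of _ id], rule exI[of _ id])
    using h z c by (auto simp: r_neg minus_eq)
qed

lemma mh_resp:
  assumes i: "ideal I R" and rM: "right_ideal R M" and IM: "I \<subseteq> M" and rM': "right_ideal R M'"
    and f: "mod_hom R I M I M' f" and a: "a \<in> M" and b: "b \<in> M" and ab: "cg I a b"
  shows "cg I (f a) (f b)"
proof -
  have ac: "a \<in> carrier R" "b \<in> carrier R" using a b ri_carr[OF rM] by auto
  have dI: "a \<ominus> b \<in> I" using ab by (simp add: cg_def)
  have dM: "a \<ominus> b \<in> M" using dI IM by blast
  have fM: "\<And>x. x \<in> M \<Longrightarrow> f x \<in> M'" "\<And>x. x \<in> I \<Longrightarrow> f x \<in> I"
    "\<And>x y. x \<in> M \<Longrightarrow> y \<in> M \<Longrightarrow> f (x \<oplus> y) \<ominus> (f x \<oplus> f y) \<in> I"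
    using f unfolding mod_hom_def by auto
  have fc: "\<And>x. x \<in> M \<Longrightarrow> f x \<in> carrier R" using fM(1) ri_carr[OF rM'] by blast
  have eq: "b \<oplus> (a \<ominus> b) = a" using ac by (simp add: minus_eq a_comm a_assoc r_neg r_neg1 a_lcomm)
  have "cg I (f (b \<oplus> (a \<ominus> b))) (f b \<oplus> f (a \<ominus> b))"
    using fM(3)[OF b dM] fc b dM riD(3)[OF rM b dM] by (simp add: cg_def)
  moreover have "cg I (f b \<oplus> f (a \<ominus> b)) (f b \<oplus> \<zero>)"
    using cg_add[OF i cg_refl[OF i fc[OF b]] cg_memD[OF i fM(2)[OF dI]]] .
  ultimately have "cg I (f a) (f b \<oplus> \<zero>)" using eq cg_trans[OF i] by metis
  then show ?thesis using fc[OF b] by simp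
qed

lemma lift_lin:
  assumes i: "ideal I R" and M: "minimal_over R I M" and f: "mod_hom R I M I M f"
    and e: "e \<in> M" "\<forall>m\<in>M. cg I (e \<otimes> m) m" and x: "x \<in> M"
  shows "cg I (f x) (f e \<otimes> x)"
proof -
  have rM: "right_ideal R M" and IM: "I \<subseteq> M" using M min_ri min_sub by blast+
  have xc: "x \<in> carrier R" using ri_carr[OF rM x] .
  have ex: "e \<otimes> x \<in> M" using riD(5)[OF rM e(1) xc] .
  have fc: "\<And>x. x \<in> M \<Longrightarrow> f x \<in> carrier R" using f ri_carr[OF rM] unfolding mod_hom_def by blast
  have "cg I (f x) (f (e \<otimes> x))"
    using mh_resp[OF i rM IM rM f x ex] e(2) x cg_sym[OF i] by blast
  moreover have "cg I (f (e \<otimes> x)) (f e \<otimes> x)"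
    using f e(1) xc fc[OF e(1)] fc[OF ex] unfolding mod_hom_def cg_def by blast
  ultimately show ?thesis using cg_trans[OF i] by blast
qed

lemma iso_eq:
  assumes vn: "von_neumann_regular R" and i: "ideal I R"
    and comm: "\<forall>a\<in>carrier R. \<forall>b\<in>carrier R. cg I (a \<otimes> b) (b \<otimes> a)"
    and M: "minimal_over R I M" and M': "minimal_over R I M'" and iso: "mod_iso R I M I M'"
  shows "M' = M"
proof -
  have rM: "right_ideal R M" and IM: "I \<subseteq> M" using M min_ri min_sub by blast+
  have rM': "right_ideal R M'" and IM': "I \<subseteq> M'" using M' min_ri min_sub by blast+
  obtain e where e: "e \<in> M" "e \<notin> I" "\<forall>m\<in>M. cg I (e \<otimes> m) m"
    using regular_idem[OF vn i M] by blast
  have ec: "e \<in> carrier R" using ri_carr[OF rM e(1)] .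
  obtain f g where fg: "mod_hom R I M I M' f" "mod_hom R I M' I M g"
    "\<forall>y\<in>M'. f (g y) \<ominus> y \<in> I"
    using iso unfolding mod_iso_def by blast
  define u where "u = \<one> \<ominus> e"
  have uc: "u \<in> carrier R" unfolding u_def using ec by simp
  have xu: "x \<otimes> u \<in> I" if x: "x \<in> M" for x
  proof -
    have xc: "x \<in> carrier R" using ri_carr[OF rM x] .
    have "x \<otimes> u = x \<ominus> x \<otimes> e" unfolding u_def using xc ec by (simp add: minus_eq r_distr r_minus)
    moreover have "cg I (x \<ominus> x \<otimes> e) (x \<ominus> x)"
    proof -
      have "cg I (x \<otimes> e) (e \<otimes> x)" using comm xc ec by blast
      moreover have "cg I (e \<otimes> x) x" using e(3) x by blast
      ultimately have "cg I (x \<otimes> e) x" using cg_trans[OF i] by blast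
      then show ?thesis using cg_minus[OF i cg_refl[OF i xc]] by blast
    qed
    moreover have "x \<ominus> x = \<zero>" using xc by (simp add: minus_eq r_neg)
    ultimately have "cg I (x \<otimes> u) \<zero>" by simp
    then show ?thesis using cg_zero xc uc by (meson m_closed)
  qed
  have "M' \<subseteq> M"
  proof
    fix y assume y: "y \<in> M'"
    have yc: "y \<in> carrier R" using ri_carr[OF rM' y] .
    have gy: "g y \<in> M" using fg(2) y unfolding mod_hom_def by blast
    have fgy: "f (g y) \<in> M'" using fg(1) gy unfolding mod_hom_def by blast
    have fgc: "f (g y) \<in> carrier R" using ri_carr[OF rM' fgy] .
    have "f (g y \<otimes> u) \<in> I" using fg(1) xu[OF gy] unfolding mod_hom_def by blast
    moreover have "cg I (f (g y \<otimes> u)) (f (g y) \<otimes> u)"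
      using fg(1) gy uc unfolding mod_hom_def cg_def
      using fgc riD(5)[OF rM gy uc] ri_carr[OF rM'] by blast
    ultimately have "f (g y) \<otimes> u \<in> I" using cg_memI[OF i cg_sym[OF i]] by blast
    moreover have "cg I (y \<otimes> u) (f (g y) \<otimes> u)"
      using cg_rm[OF i uc] fg(3) y yc fgc cg_sym[OF i] unfolding cg_def by blast
    ultimately have yu: "y \<otimes> u \<in> I" using cg_memI[OF i] by blast
    have "y \<otimes> u = y \<ominus> y \<otimes> e" unfolding u_def using yc ec by (simp add: minus_eq r_distr r_minus)
    then have "cg I y (y \<otimes> e)" using yu yc ec by (simp add: cg_def)
    moreover have "cg I (y \<otimes> e) (e \<otimes> y)" using comm yc ec by blast
    ultimately have "cg I y (e \<otimes> y)" using cg_trans[OF i] by blast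
    then show "y \<in> M" using cg_in[OF rM IM] riD(5)[OF rM e(1) yc] by blast
  qed
  then show ?thesis using min_between[OF M rM' IM'] min_ne[OF M'] by blast
qed

lemma hom_comp_self: "minimal_over R I M \<Longrightarrow> ideal I R \<Longrightarrow> M \<subseteq> hom_comp R I M"
  unfolding hom_comp_def using mod_iso_refl min_ri min_sub by blast

lemma hom_comp_ri: "minimal_over R I M \<Longrightarrow> right_ideal R (hom_comp R I M)"
  unfolding hom_comp_def
  apply (rule ri_Inter)
  using ri_carrier riD(1) min_ri min_riI apply blast
  by blast

lemma hom_comp_ge: "I \<subseteq> hom_comp R I M"
  unfolding hom_comp_def by blast

lemma hom_comp_ss: "minimal_over R I M \<Longrightarrow> hom_comp R I M \<subseteq> soc_succ R I"
  unfolding hom_comp_def using ss_ri[OF min_riI] ss_ge ss_min by blast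

lemma hom_comp_comm:
  assumes vn: "von_neumann_regular R" and i: "ideal I R"
    and comm: "\<forall>a\<in>carrier R. \<forall>b\<in>carrier R. cg I (a \<otimes> b) (b \<otimes> a)"
    and M: "minimal_over R I M"
  shows "hom_comp R I M = M"
proof
  show "M \<subseteq> hom_comp R I M" by (rule hom_comp_self[OF M i])
  show "hom_comp R I M \<subseteq> M"
    unfolding hom_comp_def using iso_eq[OF vn i comm M] min_ri[OF M] min_sub[OF M] by blast
qed

lemma hom_comps_comm:
  assumes vn: "von_neumann_regular R" and i: "ideal I R"
    and comm: "\<forall>a\<in>carrier R. \<forall>b\<in>carrier R. cg I (a \<otimes> b) (b \<otimes> a)"
  shows "hom_comps R I = {M. minimal_over R I M}"
  unfolding hom_comps_def using hom_comp_comm[OF vn i comm] by auto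

lemma comp_simple_self: "minimal_over R I M \<Longrightarrow> comp_simple R I M = M"
proof -
  assume M: "minimal_over R I M"
  have "minimal_over R I M \<and> M \<subseteq> M" using M by simp
  then have "minimal_over R I (comp_simple R I M) \<and> comp_simple R I M \<subseteq> M"
    unfolding comp_simple_def by (rule someI)
  then show ?thesis using min_between[OF M min_ri min_sub] min_ne by metis
qed

lemma comp_mult_self: "minimal_over R I M \<Longrightarrow> comp_mult R I M = 1"
proof -
  assume M: "minimal_over R I M"
  have P1: "\<exists>Ms. length Ms = 1 \<and> (\<forall>M\<in>set Ms. minimal_over R I M) \<and> M = fsum Ms I"
    using M sum_absorb[OF min_ri min_riI min_sub] by (intro exI[of _ "[M]"]) auto
  show ?thesis unfolding comp_mult_def
  proof (rule Least_equality)
    show "\<exists>Ms. length Ms = 1 \<and> (\<forall>M\<in>set Ms. minimal_over R I M) \<and> M = fsum Ms I" by (rule P1)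
    fix n assume "\<exists>Ms. length Ms = n \<and> (\<forall>M\<in>set Ms. minimal_over R I M) \<and> M = fsum Ms I"
    then show "1 \<le> n" using min_ne[OF M] by (cases n) auto
  qed
qed

lemma End_comm:
  assumes vn: "von_neumann_regular R" and i: "ideal I R"
    and comm: "\<forall>a\<in>carrier R. \<forall>b\<in>carrier R. cg I (a \<otimes> b) (b \<otimes> a)"
    and M: "minimal_over R I M"
  shows "commutative_ring (End_ring R I M)"
proof -
  have rM: "right_ideal R M" and IM: "I \<subseteq> M" using M min_ri min_sub by blast+
  obtain e where e: "e \<in> M" "e \<notin> I" "\<forall>m\<in>M. cg I (e \<otimes> m) m"
    using regular_idem[OF vn i M] by blast
  have ec: "e \<in> carrier R" using ri_carr[OF rM e(1)] .
  show ?thesis unfolding commutative_ring_def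
  proof (intro ballI)
    fix \<phi> \<psi> assume p: "\<phi> \<in> carrier (End_ring R I M)" and q: "\<psi> \<in> carrier (End_ring R I M)"
    obtain f where f: "mod_hom R I M I M f" "\<forall>x\<in>M. \<phi> (I +> x) = I +> f x"
      using p unfolding End_ring_def by auto
    obtain g where g: "mod_hom R I M I M g" "\<forall>x\<in>M. \<psi> (I +> x) = I +> g x"
      using q unfolding End_ring_def by auto
    have fM: "\<And>x. x \<in> M \<Longrightarrow> f x \<in> M" and gM: "\<And>x. x \<in> M \<Longrightarrow> g x \<in> M"
      using f g unfolding mod_hom_def by auto
    have mc: "\<And>x. x \<in> M \<Longrightarrow> x \<in> carrier R" using ri_carr[OF rM] by blast
    have key: "cg I (f (g x)) (g (f x))" if x: "x \<in> M" for x
    proof -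
      have xc: "x \<in> carrier R" using mc x by blast
      have fe: "f e \<in> carrier R" and ge: "g e \<in> carrier R" using fM gM e(1) mc by blast+
      have "cg I (f (g x)) (f e \<otimes> g x)" using lift_lin[OF i M f(1) e(1) e(3) gM[OF x]] .
      moreover have "cg I (f e \<otimes> g x) (f e \<otimes> (g e \<otimes> x))"
        using cg_lm[OF i fe lift_lin[OF i M g(1) e(1) e(3) x]] .
      moreover have "f e \<otimes> (g e \<otimes> x) = (f e \<otimes> g e) \<otimes> x" using fe ge xc by (simp add: m_assoc)
      moreover have "cg I ((f e \<otimes> g e) \<otimes> x) ((g e \<otimes> f e) \<otimes> x)"
        using cg_rm[OF i xc] comm fe ge by blast
      moreover have "(g e \<otimes> f e) \<otimes> x = g e \<otimes> (f e \<otimes> x)" using fe ge xc by (simp add: m_assoc)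
      moreover have "cg I (g e \<otimes> (f e \<otimes> x)) (g e \<otimes> f x)"
        using cg_lm[OF i ge cg_sym[OF i lift_lin[OF i M f(1) e(1) e(3) x]]] .
      moreover have "cg I (g e \<otimes> f x) (g (f x))"
        using cg_sym[OF i lift_lin[OF i M g(1) e(1) e(3) fM[OF x]]] .
      ultimately show ?thesis using cg_trans[OF i] by metis
    qed
    have "(\<lambda>c\<in>qcarrier R I M. \<phi> (\<psi> c)) = (\<lambda>c\<in>qcarrier R I M. \<psi> (\<phi> c))"
    proof (rule restrict_ext)
      fix c assume "c \<in> qcarrier R I M"
      then obtain x where x: "x \<in> M" "c = I +> x" unfolding qcarrier_def by blast
      have "\<phi> (\<psi> c) = I +> f (g x)" using x f g gM by simp
      moreover have "\<psi> (\<phi> c) = I +> g (f x)" using x f g fM by simp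
      moreover have "I +> f (g x) = I +> g (f x)"
        using coset_eq[OF i] key[OF x(1)] mc fM gM x(1) by blast
      ultimately show "\<phi> (\<psi> c) = \<psi> (\<phi> c)" by simp
    qed
    then show "\<phi> \<otimes>\<^bsub>End_ring R I M\<^esub> \<psi> = \<psi> \<otimes>\<^bsub>End_ring R I M\<^esub> \<phi>"
      unfolding End_ring_def by simp
  qed
qed

end

no_notation Sum_Type.Plus (infixr \<open><+>\<close> 65)

locale csetup = ring R for R (structure) +
  fixes I
  assumes vn: "von_neumann_regular R" and sa: "semiartinian R" and sI: "socle_term R I"
    and comm: "\<forall>a\<in>carrier R. \<forall>b\<in>carrier R. cg I (a \<otimes> b) (b \<otimes> a)"
begin

lemma i: "ideal I R" using st_ideal[OF ring_axioms sI] .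
lemma rI: "right_ideal R I" using ideal_ri[OF i] .

abbreviation "BB \<equiv> {M. minimal_over R I M}"

definition lm :: "'a \<Rightarrow> 'a set \<Rightarrow> 'a set \<Rightarrow> 'a set" where
  "lm a M = (\<lambda>c\<in>qcarrier R I M. I +> (a \<otimes> (SOME x. x \<in> c)))"

definition Phi :: "'a \<Rightarrow> 'a set \<Rightarrow> 'a set \<Rightarrow> 'a set" where
  "Phi a = (\<lambda>M\<in>BB. lm a M)"

lemma qc_mem: "x \<in> M \<Longrightarrow> I +> x \<in> qcarrier R I M"
  unfolding qcarrier_def by blast

lemma qc_cases: "c \<in> qcarrier R I M \<Longrightarrow> \<exists>x\<in>M. c = I +> x"
  unfolding qcarrier_def by blast

lemma mc: "minimal_over R I M \<Longrightarrow> x \<in> M \<Longrightarrow> x \<in> carrier R"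
  using ri_carr[OF min_ri] by blast

lemma coset_rep: "x \<in> carrier R \<Longrightarrow> y \<in> I +> x \<Longrightarrow> cg I y x"
proof -
  assume x: "x \<in> carrier R" and y: "y \<in> I +> x"
  interpret I: ideal I R by (rule i)
  have "y \<in> carrier R" using I.a_elemrcos_carrier[OF x y] .
  then show ?thesis using I.a_rcos_module_minus[OF ring_axioms x] y by (simp add: cg_def x)
qed

lemma lm_app:
  assumes M: "minimal_over R I M" and a: "a \<in> carrier R" and x: "x \<in> M"
  shows "lm a M (I +> x) = I +> (a \<otimes> x)"
proof -
  interpret I: ideal I R by (rule i)
  have xc: "x \<in> carrier R" using mc[OF M x] .
  have "x \<in> I +> x" using I.a_rcos_self[OF xc] .
  then have "(SOME y. y \<in> I +> x) \<in> I +> x" by (rule someI)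
  then have "cg I (SOME y. y \<in> I +> x) x" using coset_rep[OF xc] by blast
  then have "cg I (a \<otimes> (SOME y. y \<in> I +> x)) (a \<otimes> x)" using cg_lm[OF i a] by blast
  then have "I +> (a \<otimes> (SOME y. y \<in> I +> x)) = I +> (a \<otimes> x)"
    using coset_eq[OF i] cg_carr by blast
  then show ?thesis unfolding lm_def using qc_mem[OF x] by simp
qed

lemma lm_ext:
  assumes M: "minimal_over R I M" and h: "\<And>x. x \<in> M \<Longrightarrow> f (I +> x) = g (I +> x)"
    and f: "f \<in> extensional (qcarrier R I M)" and g: "g \<in> extensional (qcarrier R I M)"
  shows "f = g"
proof (rule extensionalityI[OF f g])
  fix c assume "c \<in> qcarrier R I M"
  then obtain x where "x \<in> M" "c = I +> x" using qc_cases by blast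
  then show "f c = g c" using h by simp
qed

lemma lm_ext': "lm a M \<in> extensional (qcarrier R I M)"
  unfolding lm_def by simp

lemma lm_eq:
  assumes M: "minimal_over R I M" and a: "a \<in> carrier R" and b: "b \<in> carrier R"
  shows "lm a M = lm b M \<longleftrightarrow> (\<forall>x\<in>M. cg I (a \<otimes> x) (b \<otimes> x))"
proof
  assume h: "lm a M = lm b M"
  show "\<forall>x\<in>M. cg I (a \<otimes> x) (b \<otimes> x)"
  proof
    fix x assume x: "x \<in> M"
    have "I +> (a \<otimes> x) = I +> (b \<otimes> x)" using h lm_app[OF M a x] lm_app[OF M b x] by simp
    then show "cg I (a \<otimes> x) (b \<otimes> x)" using coset_eq[OF i] a b mc[OF M x] by simp
  qed
next
  assume h: "\<forall>x\<in>M. cg I (a \<otimes> x) (b \<otimes> x)"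
  show "lm a M = lm b M"
  proof (rule lm_ext[OF M _ lm_ext' lm_ext'])
    fix x assume x: "x \<in> M"
    show "lm a M (I +> x) = lm b M (I +> x)"
      using lm_app[OF M a x] lm_app[OF M b x] h x coset_eq[OF i] a b mc[OF M x] by simp
  qed
qed

lemma ts: "a \<in> carrier R \<Longrightarrow> minimal_over R I M \<Longrightarrow> x \<in> M \<Longrightarrow> a \<otimes> x \<in> M"
  using two_sided[OF comm min_ri min_sub] by blast

lemma lm_carrier:
  assumes M: "minimal_over R I M" and a: "a \<in> carrier R"
  shows "lm a M \<in> carrier (End_ring R I M)"
proof -
  have "mod_hom R I M I M ((\<otimes>) a)"
    unfolding mod_hom_def
  proof (intro conjI ballI)
    fix x assume x: "x \<in> M"
    show "a \<otimes> x \<in> M" using ts[OF a M x] .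
    {
      fix y assume y: "y \<in> M"
      show "a \<otimes> (x \<oplus> y) \<ominus> (a \<otimes> x \<oplus> a \<otimes> y) \<in> I"
        using a mc[OF M x] mc[OF M y] riD(2)[OF rI] by (simp add: r_distr minus_eq r_neg)
    }
    fix r assume r: "r \<in> carrier R"
    show "a \<otimes> (x \<otimes> r) \<ominus> a \<otimes> x \<otimes> r \<in> I"
      using a mc[OF M x] r riD(2)[OF rI] by (simp add: m_assoc minus_eq r_neg)
  next
    fix x assume "x \<in> I" then show "a \<otimes> x \<in> I" using idl_l[OF i _ a] by blast
  qed
  then show ?thesis unfolding End_ring_def using lm_app[OF M a] lm_ext' by auto
qed

lemma End_carrierD:
  assumes M: "minimal_over R I M" and p: "\<phi> \<in> carrier (End_ring R I M)"
  obtains f where "mod_hom R I M I M f" "\<forall>x\<in>M. \<phi> (I +> x) = I +> f x"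
    "\<phi> \<in> extensional (qcarrier R I M)"
  using p unfolding End_ring_def by auto

lemma End_maps:
  assumes M: "minimal_over R I M" and p: "\<phi> \<in> carrier (End_ring R I M)" and c: "c \<in> qcarrier R I M"
  shows "\<phi> c \<in> qcarrier R I M"
proof -
  obtain f where f: "mod_hom R I M I M f" "\<forall>x\<in>M. \<phi> (I +> x) = I +> f x"
    using End_carrierD[OF M p] by blast
  obtain x where x: "x \<in> M" "c = I +> x" using qc_cases[OF c] by blast
  have "f x \<in> M" using f(1) x(1) unfolding mod_hom_def by blast
  then show ?thesis using f(2) x qc_mem by simp
qed

lemma End_zero: "\<zero>\<^bsub>End_ring R I M\<^esub> = (\<lambda>c\<in>qcarrier R I M. I)"
  unfolding End_ring_def by simp
lemma End_one: "\<one>\<^bsub>End_ring R I M\<^esub> = (\<lambda>c\<in>qcarrier R I M. c)"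
  unfolding End_ring_def by simp
lemma End_mult: "\<phi> \<otimes>\<^bsub>End_ring R I M\<^esub> \<psi> = (\<lambda>c\<in>qcarrier R I M. \<phi> (\<psi> c))"
  unfolding End_ring_def by simp
lemma End_add: "\<phi> \<oplus>\<^bsub>End_ring R I M\<^esub> \<psi> = (\<lambda>c\<in>qcarrier R I M. \<phi> c <+> \<psi> c)"
  unfolding End_ring_def by simp

lemma coset_zero: "x \<in> carrier R \<Longrightarrow> I +> x = I \<longleftrightarrow> x \<in> I"
proof -
  assume x: "x \<in> carrier R"
  interpret I: ideal I R by (rule i)
  have "I +> \<zero> = I" using I.a_rcos_const[OF riD(2)[OF rI]] .
  then show ?thesis using coset_eq[OF i x zero_closed] cg_zero[OF x] by metis
qed

lemma lm_zero_iff: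
  assumes M: "minimal_over R I M" and a: "a \<in> carrier R"
  shows "lm a M = \<zero>\<^bsub>End_ring R I M\<^esub> \<longleftrightarrow> (\<forall>x\<in>M. a \<otimes> x \<in> I)"
proof -
  have "lm a M = \<zero>\<^bsub>End_ring R I M\<^esub> \<longleftrightarrow> lm a M = lm \<zero> M"
  proof -
    have "lm \<zero> M = \<zero>\<^bsub>End_ring R I M\<^esub>"
      unfolding End_zero
      apply (rule lm_ext[OF M])
      using lm_app[OF M zero_closed] mc[OF M] coset_zero riD(2)[OF rI] qc_mem lm_ext'
      by auto
    then show ?thesis by simp
  qed
  also have "\<dots> \<longleftrightarrow> (\<forall>x\<in>M. cg I (a \<otimes> x) (\<zero> \<otimes> x))" by (rule lm_eq[OF M a zero_closed])
  also have "\<dots> \<longleftrightarrow> (\<forall>x\<in>M. a \<otimes> x \<in> I)" using mc[OF M] a cg_zero by simp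
  finally show ?thesis .
qed

lemma lm_mult:
  assumes M: "minimal_over R I M" and a: "a \<in> carrier R" and b: "b \<in> carrier R"
  shows "lm (a \<otimes> b) M = lm a M \<otimes>\<^bsub>End_ring R I M\<^esub> lm b M"
  unfolding End_mult
proof (rule lm_ext[OF M _ lm_ext'])
  fix x assume x: "x \<in> M"
  show "lm (a \<otimes> b) M (I +> x) = (\<lambda>c\<in>qcarrier R I M. lm a M (lm b M c)) (I +> x)"
    using lm_app[OF M _ x] lm_app[OF M a ts[OF b M x]] qc_mem[OF x] a b mc[OF M x]
    by (simp add: m_assoc)
qed simp

lemma lm_add:
  assumes M: "minimal_over R I M" and a: "a \<in> carrier R" and b: "b \<in> carrier R"
  shows "lm (a \<oplus> b) M = lm a M \<oplus>\<^bsub>End_ring R I M\<^esub> lm b M"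
  unfolding End_add
proof (rule lm_ext[OF M _ lm_ext'])
  fix x assume x: "x \<in> M"
  interpret I: ideal I R by (rule i)
  have xc: "x \<in> carrier R" using mc[OF M x] .
  show "lm (a \<oplus> b) M (I +> x) = (\<lambda>c\<in>qcarrier R I M. lm a M c <+> lm b M c) (I +> x)"
    using lm_app[OF M _ x] qc_mem[OF x] a b xc I.a_rcos_sum[of "a \<otimes> x" "b \<otimes> x"]
    by (simp add: l_distr)
qed simp

lemma lm_one:
  assumes M: "minimal_over R I M"
  shows "lm \<one> M = \<one>\<^bsub>End_ring R I M\<^esub>"
  unfolding End_one
  apply (rule lm_ext[OF M _ lm_ext'])
  using lm_app[OF M one_closed] qc_mem mc[OF M] by auto

lemma lm_zero:
  assumes M: "minimal_over R I M"
  shows "lm \<zero> M = \<zero>\<^bsub>End_ring R I M\<^esub>"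
  using lm_zero_iff[OF M zero_closed] riD(2)[OF rI] mc[OF M] by simp

end

no_notation Sum_Type.Plus (infixr \<open><+>\<close> 65)

context csetup
begin

lemma hc: "hom_comps R I = BB"
  using hom_comps_comm[OF vn i comm] .

lemma cf: "M \<in> BB \<Longrightarrow> comp_field R I M = End_ring R I M"
  unfolding comp_field_def using comp_simple_self by simp

abbreviation "PP \<equiv> prod_ring BB (comp_field R I)"

lemma PP_carrier: "carrier PP = (\<Pi>\<^sub>E M\<in>BB. carrier (comp_field R I M))"
  unfolding prod_ring_def by simp
lemma PP_add: "f \<oplus>\<^bsub>PP\<^esub> g = (\<lambda>M\<in>BB. f M \<oplus>\<^bsub>comp_field R I M\<^esub> g M)"
  unfolding prod_ring_def by simp
lemma PP_mult: "f \<otimes>\<^bsub>PP\<^esub> g = (\<lambda>M\<in>BB. f M \<otimes>\<^bsub>comp_field R I M\<^esub> g M)"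
  unfolding prod_ring_def by simp
lemma PP_zero: "\<zero>\<^bsub>PP\<^esub> = (\<lambda>M\<in>BB. \<zero>\<^bsub>comp_field R I M\<^esub>)"
  unfolding prod_ring_def by simp
lemma PP_one: "\<one>\<^bsub>PP\<^esub> = (\<lambda>M\<in>BB. \<one>\<^bsub>comp_field R I M\<^esub>)"
  unfolding prod_ring_def by simp

lemma Phi_carr: "a \<in> carrier R \<Longrightarrow> Phi a \<in> carrier PP"
  unfolding PP_carrier Phi_def using lm_carrier cf by auto

lemma Phi_mult: "a \<in> carrier R \<Longrightarrow> b \<in> carrier R \<Longrightarrow> Phi (a \<otimes> b) = Phi a \<otimes>\<^bsub>PP\<^esub> Phi b"
  unfolding PP_mult Phi_def using lm_mult cf by (intro restrict_ext) auto

lemma Phi_add: "a \<in> carrier R \<Longrightarrow> b \<in> carrier R \<Longrightarrow> Phi (a \<oplus> b) = Phi a \<oplus>\<^bsub>PP\<^esub> Phi b"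
  unfolding PP_add Phi_def using lm_add cf by (intro restrict_ext) auto

lemma Phi_one: "Phi \<one> = \<one>\<^bsub>PP\<^esub>"
  unfolding PP_one Phi_def using lm_one cf by (intro restrict_ext) auto

lemma Phi_zero: "Phi \<zero> = \<zero>\<^bsub>PP\<^esub>"
  unfolding PP_zero Phi_def using lm_zero cf by (intro restrict_ext) auto

lemma Phi_eq_iff:
  assumes a: "a \<in> carrier R" and b: "b \<in> carrier R"
  shows "Phi a = Phi b \<longleftrightarrow> cg I a b"
proof
  assume h: "Phi a = Phi b"
  have "\<forall>M\<in>BB. lm a M = lm b M" using h unfolding Phi_def by (metis restrict_apply')
  then have h2: "\<And>M x. minimal_over R I M \<Longrightarrow> x \<in> M \<Longrightarrow> cg I (a \<otimes> x) (b \<otimes> x)"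
    using lm_eq a b by blast
  have "a \<ominus> b \<in> I"
  proof (rule injectivity[OF vn sa sI])
    show "a \<ominus> b \<in> carrier R" using a b by simp
    fix M m assume M: "minimal_over R I M" and m: "m \<in> M"
    have mc': "m \<in> carrier R" using mc[OF M m] .
    have "(a \<ominus> b) \<otimes> m = a \<otimes> m \<ominus> b \<otimes> m" using a b mc' by (simp add: minus_eq l_distr l_minus)
    then show "(a \<ominus> b) \<otimes> m \<in> I" using h2[OF M m] by (simp add: cg_def)
  qed
  then show "cg I a b" using a b by (simp add: cg_def)
next
  assume h: "cg I a b"
  have "\<forall>M\<in>BB. lm a M = lm b M" using lm_eq a b cg_rm[OF i _ h] mc by blast
  then show "Phi a = Phi b" unfolding Phi_def by (intro restrict_ext) auto
qed

lemma Phi_zero_at: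
  assumes a: "a \<in> carrier R" and M: "M \<in> BB"
  shows "Phi a M = \<zero>\<^bsub>comp_field R I M\<^esub> \<longleftrightarrow> (\<forall>x\<in>M. a \<otimes> x \<in> I)"
  using lm_zero_iff[OF _ a] M cf[OF M] unfolding Phi_def by simp

lemma coset_cases: "c \<in> qcarrier R I M \<Longrightarrow> minimal_over R I M \<Longrightarrow> \<exists>x\<in>carrier R. c = I +> x"
  using qc_cases mc by blast

lemma cos_zero_r: "x \<in> carrier R \<Longrightarrow> (I +> x) <+> I = I +> x"
proof -
  assume x: "x \<in> carrier R"
  interpret I: ideal I R by (rule i)
  have "I +> \<zero> = I" using I.a_rcos_const[OF riD(2)[OF rI]] .
  then show ?thesis using I.a_rcos_sum[OF x zero_closed] x by simp
qed

lemma cos_zero_l: "x \<in> carrier R \<Longrightarrow> I <+> (I +> x) = I +> x"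
proof -
  assume x: "x \<in> carrier R"
  interpret I: ideal I R by (rule i)
  have "I +> \<zero> = I" using I.a_rcos_const[OF riD(2)[OF rI]] .
  then show ?thesis using I.a_rcos_sum[OF zero_closed x] x by simp
qed

lemma cos_carr: "x \<in> carrier R \<Longrightarrow> I +> x \<subseteq> carrier R"
proof -
  assume x: "x \<in> carrier R"
  interpret I: ideal I R by (rule i)
  show ?thesis using I.a_elemrcos_carrier[OF x] by blast
qed

lemma PP_elem:
  assumes y: "y \<in> carrier PP" and M: "M \<in> BB" and c: "c \<in> qcarrier R I M"
  shows "\<exists>x\<in>carrier R. y M c = I +> x"
proof -
  have "y M \<in> carrier (End_ring R I M)" using PiE_mem[OF y[unfolded PP_carrier] M] cf[OF M] by simp
  then have "y M c \<in> qcarrier R I M" using End_maps M c by blast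
  then show ?thesis using coset_cases M by blast
qed

lemma PP_ext_elem:
  assumes y: "y \<in> carrier PP" and M: "M \<in> BB"
  shows "y M \<in> extensional (qcarrier R I M)"
proof -
  have "y M \<in> carrier (End_ring R I M)" using PiE_mem[OF y[unfolded PP_carrier] M] cf[OF M] by simp
  then show ?thesis using End_carrierD M by blast
qed

lemma PP_ext:
  assumes y: "y \<in> carrier PP" and z: "z \<in> carrier PP"
    and h: "\<And>M c. M \<in> BB \<Longrightarrow> c \<in> qcarrier R I M \<Longrightarrow> y M c = z M c"
  shows "y = z"
proof (rule extensionalityI)
  show "y \<in> extensional BB" "z \<in> extensional BB" using y z unfolding PP_carrier by (auto simp: PiE_def)
  fix M assume M: "M \<in> BB"
  show "y M = z M"
    by (rule extensionalityI[OF PP_ext_elem[OF y M] PP_ext_elem[OF z M]]) (rule h[OF M])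
qed

lemma PP_add_app: "M \<in> BB \<Longrightarrow> c \<in> qcarrier R I M \<Longrightarrow> (y \<oplus>\<^bsub>PP\<^esub> z) M c = y M c <+> z M c"
  unfolding PP_add using cf End_add by simp

lemma PP_zero_app: "M \<in> BB \<Longrightarrow> c \<in> qcarrier R I M \<Longrightarrow> \<zero>\<^bsub>PP\<^esub> M c = I"
  unfolding PP_zero using cf End_zero by simp

lemma PP_add_carr:
  assumes y: "y \<in> carrier PP" and z: "z \<in> carrier PP"
  shows "y \<oplus>\<^bsub>PP\<^esub> z \<in> extensional BB"
  unfolding PP_add by simp

lemma padd_zero_r:
  assumes y: "y \<in> carrier PP"
  shows "y \<oplus>\<^bsub>PP\<^esub> \<zero>\<^bsub>PP\<^esub> = y"
proof (rule extensionalityI)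
  show "y \<oplus>\<^bsub>PP\<^esub> \<zero>\<^bsub>PP\<^esub> \<in> extensional BB" unfolding PP_add by simp
  show "y \<in> extensional BB" using y unfolding PP_carrier by (auto simp: PiE_def)
  fix M assume M: "M \<in> BB"
  show "(y \<oplus>\<^bsub>PP\<^esub> \<zero>\<^bsub>PP\<^esub>) M = y M"
  proof (rule extensionalityI[OF _ PP_ext_elem[OF y M]])
    show "(y \<oplus>\<^bsub>PP\<^esub> \<zero>\<^bsub>PP\<^esub>) M \<in> extensional (qcarrier R I M)"
      unfolding PP_add using M cf End_add by simp
    fix c assume c: "c \<in> qcarrier R I M"
    obtain x where "x \<in> carrier R" "y M c = I +> x" using PP_elem[OF y M c] by blast
    then show "(y \<oplus>\<^bsub>PP\<^esub> \<zero>\<^bsub>PP\<^esub>) M c = y M c"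
      using PP_add_app[OF M c] PP_zero_app[OF M c] cos_zero_r by simp
  qed
qed

lemma padd_zero_l:
  assumes y: "y \<in> carrier PP"
  shows "\<zero>\<^bsub>PP\<^esub> \<oplus>\<^bsub>PP\<^esub> y = y"
proof (rule extensionalityI)
  show "\<zero>\<^bsub>PP\<^esub> \<oplus>\<^bsub>PP\<^esub> y \<in> extensional BB" unfolding PP_add by simp
  show "y \<in> extensional BB" using y unfolding PP_carrier by (auto simp: PiE_def)
  fix M assume M: "M \<in> BB"
  show "(\<zero>\<^bsub>PP\<^esub> \<oplus>\<^bsub>PP\<^esub> y) M = y M"
  proof (rule extensionalityI[OF _ PP_ext_elem[OF y M]])
    show "(\<zero>\<^bsub>PP\<^esub> \<oplus>\<^bsub>PP\<^esub> y) M \<in> extensional (qcarrier R I M)"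
      unfolding PP_add using M cf End_add by simp
    fix c assume c: "c \<in> qcarrier R I M"
    obtain x where "x \<in> carrier R" "y M c = I +> x" using PP_elem[OF y M c] by blast
    then show "(\<zero>\<^bsub>PP\<^esub> \<oplus>\<^bsub>PP\<^esub> y) M c = y M c"
      using PP_add_app[OF M c] PP_zero_app[OF M c] cos_zero_l by simp
  qed
qed

lemma padd_assoc:
  assumes y: "y \<in> carrier PP" and z: "z \<in> carrier PP" and w: "w \<in> carrier PP"
  shows "(y \<oplus>\<^bsub>PP\<^esub> z) \<oplus>\<^bsub>PP\<^esub> w = y \<oplus>\<^bsub>PP\<^esub> (z \<oplus>\<^bsub>PP\<^esub> w)"
proof (rule extensionalityI)
  show "(y \<oplus>\<^bsub>PP\<^esub> z) \<oplus>\<^bsub>PP\<^esub> w \<in> extensional BB" "y \<oplus>\<^bsub>PP\<^esub> (z \<oplus>\<^bsub>PP\<^esub> w) \<in> extensional BB"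
    unfolding PP_add by simp_all
  fix M assume M: "M \<in> BB"
  show "((y \<oplus>\<^bsub>PP\<^esub> z) \<oplus>\<^bsub>PP\<^esub> w) M = (y \<oplus>\<^bsub>PP\<^esub> (z \<oplus>\<^bsub>PP\<^esub> w)) M"
  proof (rule extensionalityI)
    show "((y \<oplus>\<^bsub>PP\<^esub> z) \<oplus>\<^bsub>PP\<^esub> w) M \<in> extensional (qcarrier R I M)"
      "(y \<oplus>\<^bsub>PP\<^esub> (z \<oplus>\<^bsub>PP\<^esub> w)) M \<in> extensional (qcarrier R I M)"
      unfolding PP_add using M cf End_add by simp_all
    fix c assume c: "c \<in> qcarrier R I M"
    obtain p where p: "p \<in> carrier R" "y M c = I +> p" using PP_elem[OF y M c] by blast
    obtain q where q: "q \<in> carrier R" "z M c = I +> q" using PP_elem[OF z M c] by blast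
    obtain r where r: "r \<in> carrier R" "w M c = I +> r" using PP_elem[OF w M c] by blast
    show "((y \<oplus>\<^bsub>PP\<^esub> z) \<oplus>\<^bsub>PP\<^esub> w) M c = (y \<oplus>\<^bsub>PP\<^esub> (z \<oplus>\<^bsub>PP\<^esub> w)) M c"
      using PP_add_app[OF M c] p q r sum_assoc[OF cos_carr cos_carr cos_carr] by simp
  qed
qed

lemma Phi_neg: "a \<in> carrier R \<Longrightarrow> Phi a \<oplus>\<^bsub>PP\<^esub> Phi (\<ominus> a) = \<zero>\<^bsub>PP\<^esub> \<and> Phi (\<ominus> a) \<oplus>\<^bsub>PP\<^esub> Phi a = \<zero>\<^bsub>PP\<^esub>"
  using Phi_add[symmetric] Phi_zero by (simp add: r_neg l_neg)

lemma inv_the: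
  assumes a: "a \<in> carrier R" and C1: "Phi ` carrier R \<subseteq> C" and C2: "C \<subseteq> carrier PP"
  shows "(THE y. y \<in> C \<and> Phi a \<oplus>\<^bsub>PP\<^esub> y = \<zero>\<^bsub>PP\<^esub> \<and> y \<oplus>\<^bsub>PP\<^esub> Phi a = \<zero>\<^bsub>PP\<^esub>) = Phi (\<ominus> a)"
proof (rule the_equality)
  show "Phi (\<ominus> a) \<in> C \<and> Phi a \<oplus>\<^bsub>PP\<^esub> Phi (\<ominus> a) = \<zero>\<^bsub>PP\<^esub> \<and> Phi (\<ominus> a) \<oplus>\<^bsub>PP\<^esub> Phi a = \<zero>\<^bsub>PP\<^esub>"
    using C1 a Phi_neg by auto
  fix y assume y: "y \<in> C \<and> Phi a \<oplus>\<^bsub>PP\<^esub> y = \<zero>\<^bsub>PP\<^esub> \<and> y \<oplus>\<^bsub>PP\<^esub> Phi a = \<zero>\<^bsub>PP\<^esub>"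
  have yc: "y \<in> carrier PP" using y C2 by blast
  have "y = y \<oplus>\<^bsub>PP\<^esub> \<zero>\<^bsub>PP\<^esub>" using padd_zero_r[OF yc] by simp
  also have "\<dots> = y \<oplus>\<^bsub>PP\<^esub> (Phi a \<oplus>\<^bsub>PP\<^esub> Phi (\<ominus> a))" using Phi_neg[OF a] by simp
  also have "\<dots> = (y \<oplus>\<^bsub>PP\<^esub> Phi a) \<oplus>\<^bsub>PP\<^esub> Phi (\<ominus> a)"
    using padd_assoc[OF yc Phi_carr[OF a] Phi_carr] a by simp
  also have "\<dots> = Phi (\<ominus> a)" using y padd_zero_l Phi_carr a by simp
  finally show "y = Phi (\<ominus> a)" .
qed

end

no_notation Sum_Type.Plus (infixr \<open><+>\<close> 65)

context csetup
begin

abbreviation "SS \<equiv> Phi ` carrier R"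
abbreviation "TT \<equiv> PP\<lparr>carrier := SS\<rparr>"

lemma SS_sub: "SS \<subseteq> carrier PP" using Phi_carr by blast

lemma carrier_TT: "carrier TT = SS" by simp

lemma Phi_TT: "a \<in> carrier R \<Longrightarrow> Phi a \<in> carrier TT"
  unfolding carrier_TT by (rule imageI)

lemma inv_PP: "a \<in> carrier R \<Longrightarrow> m_inv (add_monoid PP) (Phi a) = Phi (\<ominus> a)"
  unfolding m_inv_def using inv_the[OF _ _ order_refl] SS_sub by simp

lemma inv_TT: "a \<in> carrier R \<Longrightarrow> m_inv (add_monoid TT) (Phi a) = Phi (\<ominus> a)"
  unfolding m_inv_def using inv_the[OF _ order_refl SS_sub] by simp

lemma subring_SS: "subring SS PP"
proof (intro subring.intro subgroup.intro submonoid.intro)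
  show "SS \<subseteq> carrier (add_monoid PP)" "SS \<subseteq> carrier PP" using SS_sub by simp_all
  show "\<one>\<^bsub>add_monoid PP\<^esub> \<in> SS" using Phi_zero by force
  show "\<one>\<^bsub>PP\<^esub> \<in> SS" using Phi_one by force
  fix x assume "x \<in> SS"
  then obtain a where a: "a \<in> carrier R" "x = Phi a" by blast
  show "inv\<^bsub>add_monoid PP\<^esub> x \<in> SS" using inv_PP a by simp
  fix y assume "y \<in> SS"
  then obtain b where b: "b \<in> carrier R" "y = Phi b" by blast
  have "x \<otimes>\<^bsub>add_monoid PP\<^esub> y = Phi (a \<oplus> b)" using Phi_add a b by simp
  then show "x \<otimes>\<^bsub>add_monoid PP\<^esub> y \<in> SS" using a b by simp
  have "x \<otimes>\<^bsub>PP\<^esub> y = Phi (a \<otimes> b)" using Phi_mult a b by simp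
  then show "x \<otimes>\<^bsub>PP\<^esub> y \<in> SS" using a b by simp
qed

definition hh :: "'a set \<Rightarrow> 'a set \<Rightarrow> 'a set \<Rightarrow> 'a set" where
  "hh C = Phi (SOME a. a \<in> C)"

lemma hh_app: "a \<in> carrier R \<Longrightarrow> hh (I +> a) = Phi a"
proof -
  assume a: "a \<in> carrier R"
  interpret I: ideal I R by (rule i)
  have "a \<in> I +> a" using I.a_rcos_self[OF a] .
  then have s: "(SOME x. x \<in> I +> a) \<in> I +> a" by (rule someI)
  then have "cg I (SOME x. x \<in> I +> a) a" using coset_rep[OF a] by blast
  then show ?thesis unfolding hh_def using Phi_eq_iff cg_carr a by blast
qed

lemma cQ_cases: "x \<in> carrier (R Quot I) \<Longrightarrow> \<exists>a\<in>carrier R. x = I +> a"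
  unfolding FactRing_def A_RCOSETS_def' by auto

lemma cQ_mem: "a \<in> carrier R \<Longrightarrow> I +> a \<in> carrier (R Quot I)"
  unfolding FactRing_def A_RCOSETS_def' by auto

lemma iso: "R Quot I \<simeq> TT"
proof -
  interpret I: ideal I R by (rule i)
  have h1: "hh x \<in> carrier TT" if x: "x \<in> carrier (R Quot I)" for x
  proof -
    obtain a where a: "a \<in> carrier R" "x = I +> a" using cQ_cases[OF x] by blast
    then have e: "hh x = Phi a" using hh_app by blast
    show ?thesis unfolding e by (rule Phi_TT[OF a(1)])
  qed
  have h2: "hh (x \<otimes>\<^bsub>R Quot I\<^esub> y) = hh x \<otimes>\<^bsub>TT\<^esub> hh y \<and> hh (x \<oplus>\<^bsub>R Quot I\<^esub> y) = hh x \<oplus>\<^bsub>TT\<^esub> hh y"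
    if xy: "x \<in> carrier (R Quot I)" "y \<in> carrier (R Quot I)" for x y
  proof -
    obtain a b where ab: "a \<in> carrier R" "x = I +> a" "b \<in> carrier R" "y = I +> b" using cQ_cases[OF xy(1)] cQ_cases[OF xy(2)] by blast
    have m: "x \<otimes>\<^bsub>R Quot I\<^esub> y = I +> (a \<otimes> b)"
      using ab I.rcoset_mult_add by (simp add: FactRing_def)
    have p: "x \<oplus>\<^bsub>R Quot I\<^esub> y = I +> (a \<oplus> b)"
      using ab I.a_rcos_sum by (simp add: FactRing_def)
    have hx: "hh x = Phi a" "hh y = Phi b" using ab hh_app by blast+
    have "hh (x \<otimes>\<^bsub>R Quot I\<^esub> y) = Phi (a \<otimes> b)" unfolding m using hh_app[of "a \<otimes> b"] ab by simp
    also have "\<dots> = hh x \<otimes>\<^bsub>TT\<^esub> hh y" unfolding hx using Phi_mult ab by simp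
    finally have 1: "hh (x \<otimes>\<^bsub>R Quot I\<^esub> y) = hh x \<otimes>\<^bsub>TT\<^esub> hh y" .
    have "hh (x \<oplus>\<^bsub>R Quot I\<^esub> y) = Phi (a \<oplus> b)" unfolding p using hh_app[of "a \<oplus> b"] ab by simp
    also have "\<dots> = hh x \<oplus>\<^bsub>TT\<^esub> hh y" unfolding hx using Phi_add ab by simp
    finally show ?thesis using 1 by blast
  qed
  have h3: "hh \<one>\<^bsub>R Quot I\<^esub> = \<one>\<^bsub>TT\<^esub>"
  proof -
    have "\<one>\<^bsub>R Quot I\<^esub> = I +> \<one>" by (simp add: FactRing_def)
    then show ?thesis using hh_app[of \<one>] Phi_one by simp
  qed
  have hom: "hh \<in> ring_hom (R Quot I) TT"
    unfolding ring_hom_def using h1 h2 h3 by blast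
  have inj: "inj_on hh (carrier (R Quot I))"
  proof (rule inj_onI)
    fix x y assume xy: "x \<in> carrier (R Quot I)" "y \<in> carrier (R Quot I)" "hh x = hh y"
    then obtain a b where ab: "a \<in> carrier R" "x = I +> a" "b \<in> carrier R" "y = I +> b"
      using cQ_cases[OF xy(1)] cQ_cases[OF xy(2)] by blast
    then have "Phi a = Phi b" using hh_app xy(3) by metis
    then have "cg I a b" using Phi_eq_iff ab by blast
    then show "x = y" using coset_eq[OF i] ab by blast
  qed
  have img: "hh ` carrier (R Quot I) = carrier TT"
  proof
    show "hh ` carrier (R Quot I) \<subseteq> carrier TT" using h1 by blast
    show "carrier TT \<subseteq> hh ` carrier (R Quot I)"
    proof
      fix z assume "z \<in> carrier TT"
      then obtain a where a: "a \<in> carrier R" "z = Phi a" unfolding carrier_TT by blast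
      then have "z = hh (I +> a)" using hh_app by simp
      moreover have "I +> a \<in> carrier (R Quot I)" using cQ_mem a by blast
      ultimately show "z \<in> hh ` carrier (R Quot I)" by blast
    qed
  qed
  have "hh \<in> ring_iso (R Quot I) TT"
    unfolding ring_iso_def bij_betw_def using hom inj img by blast
  then show ?thesis unfolding is_ring_iso_def by blast
qed

lemma ri_TT_iff:
  "right_ideal TT J \<longleftrightarrow> J \<subseteq> SS \<and> \<zero>\<^bsub>PP\<^esub> \<in> J \<and> (\<forall>x\<in>J. \<forall>y\<in>J. x \<oplus>\<^bsub>PP\<^esub> y \<in> J)
     \<and> (\<forall>a\<in>carrier R. Phi a \<in> J \<longrightarrow> Phi (\<ominus> a) \<in> J) \<and> (\<forall>x\<in>J. \<forall>r\<in>SS. x \<otimes>\<^bsub>PP\<^esub> r \<in> J)"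
proof -
  have "subgroup J (add_monoid TT) \<longleftrightarrow> J \<subseteq> SS \<and> \<zero>\<^bsub>PP\<^esub> \<in> J \<and> (\<forall>x\<in>J. \<forall>y\<in>J. x \<oplus>\<^bsub>PP\<^esub> y \<in> J)
     \<and> (\<forall>a\<in>carrier R. Phi a \<in> J \<longrightarrow> Phi (\<ominus> a) \<in> J)"
  proof
    assume s: "subgroup J (add_monoid TT)"
    then have "J \<subseteq> SS" using subgroup.subset by force
    moreover have "\<zero>\<^bsub>PP\<^esub> \<in> J" using subgroup.one_closed[OF s] by simp
    moreover have "\<forall>x\<in>J. \<forall>y\<in>J. x \<oplus>\<^bsub>PP\<^esub> y \<in> J" using subgroup.m_closed[OF s] by simp
    moreover have "\<forall>a\<in>carrier R. Phi a \<in> J \<longrightarrow> Phi (\<ominus> a) \<in> J"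
      using subgroup.m_inv_closed[OF s] inv_TT by metis
    ultimately show "J \<subseteq> SS \<and> \<zero>\<^bsub>PP\<^esub> \<in> J \<and> (\<forall>x\<in>J. \<forall>y\<in>J. x \<oplus>\<^bsub>PP\<^esub> y \<in> J)
     \<and> (\<forall>a\<in>carrier R. Phi a \<in> J \<longrightarrow> Phi (\<ominus> a) \<in> J)" by blast
  next
    assume h: "J \<subseteq> SS \<and> \<zero>\<^bsub>PP\<^esub> \<in> J \<and> (\<forall>x\<in>J. \<forall>y\<in>J. x \<oplus>\<^bsub>PP\<^esub> y \<in> J)
     \<and> (\<forall>a\<in>carrier R. Phi a \<in> J \<longrightarrow> Phi (\<ominus> a) \<in> J)"
    show "subgroup J (add_monoid TT)"
    proof (rule subgroup.intro)
      show "J \<subseteq> carrier (add_monoid TT)" using h by simp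
      show "\<one>\<^bsub>add_monoid TT\<^esub> \<in> J" using h by simp
      fix x assume x: "x \<in> J"
      then obtain a where a: "a \<in> carrier R" "x = Phi a" using h by blast
      show "inv\<^bsub>add_monoid TT\<^esub> x \<in> J" using inv_TT[OF a(1)] h x a by simp
      fix y assume "y \<in> J"
      then show "x \<otimes>\<^bsub>add_monoid TT\<^esub> y \<in> J" using h x by simp
    qed
  qed
  then show ?thesis unfolding right_ideal_def additive_subgroup_def by simp
qed

definition supp :: "('a set \<Rightarrow> 'a set \<Rightarrow> 'a set) \<Rightarrow> 'a set set" where
  "supp f = {M \<in> BB. f M \<noteq> \<zero>\<^bsub>comp_field R I M\<^esub>}"

lemma dsum_eq: "dsum_carrier BB (comp_field R I) = {f \<in> carrier PP. finite (supp f)}"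
  unfolding dsum_carrier_def supp_def by simp

lemma Phi_at: "M \<in> BB \<Longrightarrow> Phi a M = lm a M"
  unfolding Phi_def by simp

lemma supp_Phi: "a \<in> carrier R \<Longrightarrow> M \<in> supp (Phi a) \<longleftrightarrow> M \<in> BB \<and> \<not> (\<forall>x\<in>M. a \<otimes> x \<in> I)"
  unfolding supp_def using Phi_zero_at by auto

lemma distinct_kill:
  assumes M: "minimal_over R I M" and M0: "minimal_over R I M0" and ne: "M \<noteq> M0"
    and e0: "e0 \<in> M0" and x: "x \<in> M"
  shows "e0 \<otimes> x \<in> I"
proof -
  have e0c: "e0 \<in> carrier R" using mc[OF M0 e0] .
  have "e0 \<otimes> x \<in> M0" using riD(5)[OF min_ri[OF M0] e0 mc[OF M x]] .
  moreover have "e0 \<otimes> x \<in> M" using ts[OF e0c M x] .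
  moreover have "M \<inter> M0 = I"
  proof -
    have "M \<inter> M0 = I \<or> M \<inter> M0 = M"
      using min_between[OF M ri_Int[OF min_ri[OF M] min_ri[OF M0]]] min_sub[OF M] min_sub[OF M0] by blast
    moreover have "M \<inter> M0 \<noteq> M"
    proof
      assume "M \<inter> M0 = M"
      then have "M \<subseteq> M0" by blast
      then have "M = I \<or> M = M0" using min_between[OF M0 min_ri[OF M] min_sub[OF M]] by blast
      then show False using ne min_ne[OF M] by blast
    qed
    ultimately show ?thesis by blast
  qed
  ultimately show ?thesis by blast
qed

lemma End_is_lm:
  assumes M: "minimal_over R I M" and p: "\<phi> \<in> carrier (End_ring R I M)"
  shows "\<exists>c\<in>carrier R. \<phi> = lm c M"
proof -
  obtain f where f: "mod_hom R I M I M f" "\<forall>x\<in>M. \<phi> (I +> x) = I +> f x"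
    "\<phi> \<in> extensional (qcarrier R I M)" using End_carrierD[OF M p] by blast
  obtain e where e: "e \<in> M" "e \<notin> I" "\<forall>m\<in>M. cg I (e \<otimes> m) m"
    using regular_idem[OF vn i M] by blast
  have fe: "f e \<in> carrier R" using f(1) e(1) mc[OF M] unfolding mod_hom_def by blast
  have "lm (f e) M = \<phi>"
  proof (rule lm_ext[OF M _ lm_ext' f(3)])
    fix x assume x: "x \<in> M"
    have fx: "f x \<in> carrier R" using f(1) x mc[OF M] unfolding mod_hom_def by blast
    have "cg I (f e \<otimes> x) (f x)" using cg_sym[OF i lift_lin[OF i M f(1) e(1) e(3) x]] .
    then have "I +> (f e \<otimes> x) = I +> f x" using coset_eq[OF i] fe fx mc[OF M x] by simp
    then show "lm (f e) M (I +> x) = \<phi> (I +> x)" using lm_app[OF M fe x] f(2) x by simp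
  qed
  then show ?thesis using fe by blast
qed

lemma approx:
  assumes f: "f \<in> carrier PP"
  shows "finite F \<Longrightarrow> F \<subseteq> BB \<Longrightarrow>
    \<exists>a\<in>carrier R. \<forall>M\<in>BB. (M \<in> F \<longrightarrow> lm a M = f M) \<and> (M \<notin> F \<longrightarrow> (\<forall>x\<in>M. a \<otimes> x \<in> I))"
proof (induction F rule: finite_induct)
  case empty
  have "\<forall>M\<in>BB. \<forall>x\<in>M. \<zero> \<otimes> x \<in> I" using mc riD(2)[OF rI] by simp
  then show ?case by blast
next
  case (insert M0 F)
  have M0: "minimal_over R I M0" using insert by blast
  obtain a where a: "a \<in> carrier R"
    "\<forall>M\<in>BB. (M \<in> F \<longrightarrow> lm a M = f M) \<and> (M \<notin> F \<longrightarrow> (\<forall>x\<in>M. a \<otimes> x \<in> I))"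
    using insert by blast
  have "f M0 \<in> carrier (comp_field R I M0)"
    using PiE_mem[OF f[unfolded PP_carrier]] M0 by simp
  then have "f M0 \<in> carrier (End_ring R I M0)" using cf[of M0] M0 by simp
  then obtain c where c: "c \<in> carrier R" "f M0 = lm c M0" using End_is_lm[OF M0] by blast
  obtain e0 where e0: "e0 \<in> M0" "e0 \<notin> I" "\<forall>m\<in>M0. cg I (e0 \<otimes> m) m"
    using regular_idem[OF vn i M0] by blast
  have e0c: "e0 \<in> carrier R" using mc[OF M0 e0(1)] .
  define a' where "a' = a \<oplus> c \<otimes> e0"
  have a'c: "a' \<in> carrier R" unfolding a'_def using a c e0c by simp
  have a'x: "a' \<otimes> x = a \<otimes> x \<oplus> c \<otimes> (e0 \<otimes> x)" if "x \<in> carrier R" for x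
    unfolding a'_def using a c e0c that by (simp add: l_distr m_assoc)
  have "\<forall>M\<in>BB. (M \<in> insert M0 F \<longrightarrow> lm a' M = f M) \<and> (M \<notin> insert M0 F \<longrightarrow> (\<forall>x\<in>M. a' \<otimes> x \<in> I))"
  proof
    fix M assume MB: "M \<in> BB"
    then have M: "minimal_over R I M" by simp
    show "(M \<in> insert M0 F \<longrightarrow> lm a' M = f M) \<and> (M \<notin> insert M0 F \<longrightarrow> (\<forall>x\<in>M. a' \<otimes> x \<in> I))"
    proof (cases "M = M0")
      case True
      have "lm a' M0 = lm c M0"
      proof (subst lm_eq[OF M0 a'c c(1)], intro ballI)
        fix x assume x: "x \<in> M0"
        have xc: "x \<in> carrier R" using mc[OF M0 x] .
        have "a \<otimes> x \<in> I" using a(2) M0 x insert.hyps(2) by blast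
        then have "cg I (a \<otimes> x \<oplus> c \<otimes> (e0 \<otimes> x)) (\<zero> \<oplus> c \<otimes> x)"
          using cg_add[OF i cg_memD[OF i] cg_lm[OF i c(1) e0(3)[rule_format, OF x]]] by blast
        then show "cg I (a' \<otimes> x) (c \<otimes> x)" using a'x[OF xc] c xc by simp
      qed
      then show ?thesis using True c by simp
    next
      case False
      have kill: "c \<otimes> (e0 \<otimes> x) \<in> I" if x: "x \<in> M" for x
        using idl_l[OF i distinct_kill[OF M M0 False e0(1) x] c(1)] .
      have cgx: "cg I (a' \<otimes> x) (a \<otimes> x)" if x: "x \<in> M" for x
        using cg_addI[OF i _ kill[OF x]] a'x mc[OF M x] a by simp
      show ?thesis
      proof (intro conjI impI)
        assume "M \<in> insert M0 F"
        then have "M \<in> F" using False by simp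
        then have "lm a M = f M" using a(2) MB by blast
        moreover have "lm a' M = lm a M" using lm_eq[OF M a'c a(1)] cgx by blast
        ultimately show "lm a' M = f M" by simp
      next
        assume "M \<notin> insert M0 F"
        then have "\<forall>x\<in>M. a \<otimes> x \<in> I" using a(2) MB by simp
        then show "\<forall>x\<in>M. a' \<otimes> x \<in> I" using cgx cg_memI[OF i] by blast
      qed
    qed
  qed
  then show ?case using a'c by blast
qed

lemma supp_sub: "supp f \<subseteq> BB" unfolding supp_def by blast

lemma dsum_Phi:
  assumes f: "f \<in> carrier PP" and fin: "finite (supp f)"
  shows "\<exists>a\<in>carrier R. Phi a = f"
proof -
  obtain a where a: "a \<in> carrier R"
    "\<forall>M\<in>BB. (M \<in> supp f \<longrightarrow> lm a M = f M) \<and> (M \<notin> supp f \<longrightarrow> (\<forall>x\<in>M. a \<otimes> x \<in> I))"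
    using approx[OF f fin supp_sub] by blast
  have "Phi a = f"
  proof (rule extensionalityI)
    show "Phi a \<in> extensional BB" unfolding Phi_def by simp
    show "f \<in> extensional BB" using f unfolding PP_carrier by (auto simp: PiE_def)
    fix M assume M: "M \<in> BB"
    show "Phi a M = f M"
    proof (cases "M \<in> supp f")
      case True then show ?thesis using a M Phi_at by simp
    next
      case False
      then have "f M = \<zero>\<^bsub>comp_field R I M\<^esub>" using M unfolding supp_def by blast
      moreover have "Phi a M = \<zero>\<^bsub>comp_field R I M\<^esub>" using Phi_zero_at[OF a(1) M] a(2) M False by blast
      ultimately show ?thesis by simp
    qed
  qed
  then show ?thesis using a(1) by blast
qed

lemma dsum_sub: "dsum_carrier BB (comp_field R I) \<subseteq> SS"
  unfolding dsum_eq using dsum_Phi by blast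

lemma Phi_nonzero:
  assumes a: "a \<in> carrier R" and nz: "Phi a \<noteq> \<zero>\<^bsub>PP\<^esub>"
  shows "\<exists>M\<in>BB. \<exists>x\<in>M. a \<otimes> x \<notin> I"
proof (rule ccontr)
  assume "\<not> ?thesis"
  then have "a \<in> I" using injectivity[OF vn sa sI a] by auto
  then have "cg I a \<zero>" using cg_memD[OF i] by blast
  then have "Phi a = Phi \<zero>" using Phi_eq_iff a by simp
  then show False using nz Phi_zero by simp
qed

lemma Phi_zero_iff: "a \<in> carrier R \<Longrightarrow> Phi a = \<zero>\<^bsub>PP\<^esub> \<longleftrightarrow> a \<in> I"
  using Phi_eq_iff[of a \<zero>] Phi_zero cg_zero by simp

end

no_notation Sum_Type.Plus (infixr \<open><+>\<close> 65)

context csetup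
begin

abbreviation "DS \<equiv> dsum_carrier BB (comp_field R I)"

lemma in_DS: "a \<in> carrier R \<Longrightarrow> Phi a \<in> DS \<longleftrightarrow> finite (supp (Phi a))"
  unfolding dsum_eq using Phi_carr by simp

lemma supp_mono:
  assumes a: "a \<in> carrier R" and b: "b \<in> carrier R"
    and h: "\<And>M. M \<in> BB \<Longrightarrow> \<forall>x\<in>M. b \<otimes> x \<in> I \<Longrightarrow> \<forall>x\<in>M. a \<otimes> x \<in> I"
  shows "supp (Phi a) \<subseteq> supp (Phi b)"
proof
  fix M assume "M \<in> supp (Phi a)"
  then have M: "M \<in> BB" "\<not> (\<forall>x\<in>M. a \<otimes> x \<in> I)" using supp_Phi[OF a] by auto
  then have "\<not> (\<forall>x\<in>M. b \<otimes> x \<in> I)" using h by blast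
  then show "M \<in> supp (Phi b)" using supp_Phi[OF b] M(1) by auto
qed

lemma zero_TT: "\<zero>\<^bsub>TT\<^esub> = \<zero>\<^bsub>PP\<^esub>" by simp

lemma DS_ri: "right_ideal TT DS"
  unfolding ri_TT_iff
proof (intro conjI ballI impI)
  show "DS \<subseteq> SS" by (rule dsum_sub)
  have "supp (Phi \<zero>) = {}" using supp_Phi[OF zero_closed] mc riD(2)[OF rI] by auto
  then show "\<zero>\<^bsub>PP\<^esub> \<in> DS" using in_DS[OF zero_closed] Phi_zero by simp
  fix x assume x: "x \<in> DS"
  then obtain a where a: "a \<in> carrier R" "x = Phi a" using dsum_sub by blast
  have fa: "finite (supp (Phi a))" using x a in_DS by simp
  {
    fix y assume y: "y \<in> DS"
    then obtain b where b: "b \<in> carrier R" "y = Phi b" using dsum_sub by blast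
    have fb: "finite (supp (Phi b))" using y b in_DS by simp
    have "supp (Phi (a \<oplus> b)) \<subseteq> supp (Phi a) \<union> supp (Phi b)"
    proof
      fix M assume M: "M \<in> supp (Phi (a \<oplus> b))"
      show "M \<in> supp (Phi a) \<union> supp (Phi b)"
      proof (rule ccontr)
        assume "M \<notin> supp (Phi a) \<union> supp (Phi b)"
        moreover have MB: "M \<in> BB" using M supp_sub by blast
        ultimately have "\<forall>x\<in>M. a \<otimes> x \<in> I" "\<forall>x\<in>M. b \<otimes> x \<in> I" using supp_Phi a b by auto
        then have "\<forall>x\<in>M. (a \<oplus> b) \<otimes> x \<in> I" using riD(3)[OF rI] mc MB a b by (simp add: l_distr)
        then show False using M supp_Phi[of "a \<oplus> b"] a b by simp
      qed
    qed
    then have "finite (supp (Phi (a \<oplus> b)))" using fa fb finite_subset by blast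
    then have "Phi (a \<oplus> b) \<in> DS" using in_DS[of "a \<oplus> b"] a b by simp
    then show "x \<oplus>\<^bsub>PP\<^esub> y \<in> DS" using a b Phi_add by simp
  }
  fix r assume "r \<in> SS"
  then obtain b where b: "b \<in> carrier R" "r = Phi b" by blast
  have "supp (Phi (a \<otimes> b)) \<subseteq> supp (Phi a)"
  proof (rule supp_mono[OF m_closed[OF a(1) b(1)] a(1)])
    fix M assume M: "M \<in> BB" "\<forall>x\<in>M. a \<otimes> x \<in> I"
    show "\<forall>x\<in>M. a \<otimes> b \<otimes> x \<in> I" using M ts[OF b(1)] a b mc by (simp add: m_assoc)
  qed
  then have "finite (supp (Phi (a \<otimes> b)))" using fa finite_subset by blast
  then have "Phi (a \<otimes> b) \<in> DS" using in_DS[of "a \<otimes> b"] a b by simp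
  then show "x \<otimes>\<^bsub>PP\<^esub> r \<in> DS" using a b Phi_mult by simp
next
  fix a assume a: "a \<in> carrier R" and x: "Phi a \<in> DS"
  have "supp (Phi (\<ominus> a)) \<subseteq> supp (Phi a)"
  proof (rule supp_mono[OF a_inv_closed[OF a] a])
    fix M assume M: "M \<in> BB" "\<forall>x\<in>M. a \<otimes> x \<in> I"
    show "\<forall>x\<in>M. \<ominus> a \<otimes> x \<in> I" using M a mc riD(4)[OF rI] by (simp add: l_minus)
  qed
  then show "Phi (\<ominus> a) \<in> DS" using x a in_DS finite_subset by auto
qed

lemma mri_TT:
  "minimal_right_ideal TT N \<longleftrightarrow> right_ideal TT N \<and> {\<zero>\<^bsub>PP\<^esub>} \<subset> N \<and>
     (\<forall>J. right_ideal TT J \<and> {\<zero>\<^bsub>PP\<^esub>} \<subseteq> J \<and> J \<subseteq> N \<longrightarrow> J = {\<zero>\<^bsub>PP\<^esub>} \<or> J = N)"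
proof -
  have z: "right_ideal TT {\<zero>\<^bsub>PP\<^esub>}"
    unfolding ri_TT_iff
  proof (intro conjI ballI impI)
    show "{\<zero>\<^bsub>PP\<^esub>} \<subseteq> SS" using Phi_zero by force
    show "\<zero>\<^bsub>PP\<^esub> \<in> {\<zero>\<^bsub>PP\<^esub>}" by simp
    fix x y assume "x \<in> {\<zero>\<^bsub>PP\<^esub>}" "y \<in> {\<zero>\<^bsub>PP\<^esub>}"
    then show "x \<oplus>\<^bsub>PP\<^esub> y \<in> {\<zero>\<^bsub>PP\<^esub>}" using Phi_add[of \<zero> \<zero>] Phi_zero by simp
  next
    fix a assume a: "a \<in> carrier R" "Phi a \<in> {\<zero>\<^bsub>PP\<^esub>}"
    then have "a \<in> I" using Phi_zero_iff by simp
    then have "\<ominus> a \<in> I" using riD(4)[OF rI] by blast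
    then show "Phi (\<ominus> a) \<in> {\<zero>\<^bsub>PP\<^esub>}" using Phi_zero_iff a by simp
  next
    fix x r assume x: "x \<in> {\<zero>\<^bsub>PP\<^esub>}" and "r \<in> SS"
    then obtain b where b: "b \<in> carrier R" "r = Phi b" by blast
    have "Phi (\<zero> \<otimes> b) = x \<otimes>\<^bsub>PP\<^esub> r" using Phi_mult[of \<zero> b] Phi_zero b x by simp
    moreover have "Phi (\<zero> \<otimes> b) = \<zero>\<^bsub>PP\<^esub>" using b Phi_zero by simp
    ultimately show "x \<otimes>\<^bsub>PP\<^esub> r \<in> {\<zero>\<^bsub>PP\<^esub>}" by simp
  qed
  have "minimal_right_ideal TT N \<longleftrightarrow> right_ideal TT {\<zero>\<^bsub>PP\<^esub>} \<and> right_ideal TT N \<and> {\<zero>\<^bsub>PP\<^esub>} \<subset> N \<and>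
     (\<forall>J. right_ideal TT J \<and> {\<zero>\<^bsub>PP\<^esub>} \<subseteq> J \<and> J \<subseteq> N \<longrightarrow> J = {\<zero>\<^bsub>PP\<^esub>} \<or> J = N)"
    unfolding minimal_right_ideal_def minimal_over_def[of TT] zero_TT by (rule refl)
  then show ?thesis using z by (simp only: simp_thms)
qed

lemma ri_TT_Int: "right_ideal TT A \<Longrightarrow> right_ideal TT B \<Longrightarrow> right_ideal TT (A \<inter> B)"
  unfolding ri_TT_iff by blast

lemma min_sub_DS:
  assumes N: "minimal_right_ideal TT N"
  shows "N \<subseteq> DS"
proof -
  have rN: "right_ideal TT N" and zN: "{\<zero>\<^bsub>PP\<^esub>} \<subset> N"
    and mN: "\<forall>J. right_ideal TT J \<and> {\<zero>\<^bsub>PP\<^esub>} \<subseteq> J \<and> J \<subseteq> N \<longrightarrow> J = {\<zero>\<^bsub>PP\<^esub>} \<or> J = N"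
    using N unfolding mri_TT by auto
  obtain h where h: "h \<in> N" "h \<noteq> \<zero>\<^bsub>PP\<^esub>" using zN by blast
  obtain c where c: "c \<in> carrier R" "h = Phi c" using h rN unfolding ri_TT_iff by blast
  obtain M0 x0 where M0: "M0 \<in> BB" "x0 \<in> M0" "c \<otimes> x0 \<notin> I" using Phi_nonzero c h by blast
  have M0m: "minimal_over R I M0" using M0 by simp
  obtain e0 where e0: "e0 \<in> M0" "e0 \<notin> I" "\<forall>m\<in>M0. cg I (e0 \<otimes> m) m"
    using regular_idem[OF vn i M0m] by blast
  have e0c: "e0 \<in> carrier R" using mc[OF M0m e0(1)] .
  have x0c: "x0 \<in> carrier R" using mc[OF M0m M0(2)] .
  have ce: "c \<otimes> e0 \<notin> I"
  proof
    assume "c \<otimes> e0 \<in> I"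
    then have "c \<otimes> e0 \<otimes> x0 \<in> I" using idl_r[OF i _ x0c] by blast
    then have "c \<otimes> (e0 \<otimes> x0) \<in> I" using c e0c x0c by (simp add: m_assoc)
    moreover have "cg I (c \<otimes> (e0 \<otimes> x0)) (c \<otimes> x0)" using cg_lm[OF i c(1)] e0(3) M0(2) by blast
    ultimately show False using M0(3) cg_memI[OF i cg_sym[OF i]] by blast
  qed
  have hN: "Phi (c \<otimes> e0) \<in> N"
    using rN c h e0c Phi_mult unfolding ri_TT_iff by (metis image_eqI)
  have hnz: "Phi (c \<otimes> e0) \<noteq> \<zero>\<^bsub>PP\<^esub>" using Phi_zero_iff ce c e0c by simp
  have "supp (Phi (c \<otimes> e0)) \<subseteq> {M0}"
  proof
    fix M assume M: "M \<in> supp (Phi (c \<otimes> e0))"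
    show "M \<in> {M0}"
    proof (rule ccontr)
      assume "M \<notin> {M0}"
      then have ne: "M \<noteq> M0" by simp
      have Mm: "minimal_over R I M" using M supp_sub by blast
      have "\<forall>x\<in>M. c \<otimes> e0 \<otimes> x \<in> I"
        using distinct_kill[OF Mm M0m ne e0(1)] idl_l[OF i _ c(1)] c e0c mc[OF Mm]
        by (simp add: m_assoc)
      then show False using M supp_Phi c e0c by simp
    qed
  qed
  then have "finite (supp (Phi (c \<otimes> e0)))" using finite_subset by blast
  then have hD: "Phi (c \<otimes> e0) \<in> DS" using in_DS c e0c by simp
  have "right_ideal TT (N \<inter> DS)" using ri_TT_Int[OF rN DS_ri] .
  moreover have "{\<zero>\<^bsub>PP\<^esub>} \<subseteq> N \<inter> DS" using rN DS_ri unfolding ri_TT_iff by blast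
  ultimately have "N \<inter> DS = {\<zero>\<^bsub>PP\<^esub>} \<or> N \<inter> DS = N" using mN by blast
  then have "N \<inter> DS = N" using hN hD hnz by blast
  then show ?thesis by blast
qed

lemma rsoc_sub: "rsoc TT \<subseteq> DS"
  unfolding rsoc_def using DS_ri min_sub_DS by blast

definition Kset :: "'a set \<Rightarrow> ('a set \<Rightarrow> 'a set \<Rightarrow> 'a set) set" where
  "Kset M0 = {x \<in> SS. \<forall>M\<in>BB. M \<noteq> M0 \<longrightarrow> x M = \<zero>\<^bsub>comp_field R I M\<^esub>}"

lemma Kset_Phi: "a \<in> carrier R \<Longrightarrow> Phi a \<in> Kset M0 \<longleftrightarrow> (\<forall>M\<in>BB. M \<noteq> M0 \<longrightarrow> (\<forall>x\<in>M. a \<otimes> x \<in> I))"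
  unfolding Kset_def using Phi_zero_at by auto

lemma Kset_sub: "Kset M0 \<subseteq> SS" unfolding Kset_def by blast

lemma Kset_min:
  assumes M0B: "M0 \<in> BB"
  shows "minimal_right_ideal TT (Kset M0)"
proof -
  have M0: "minimal_over R I M0" using M0B by simp
  obtain e0 where e0: "e0 \<in> M0" "e0 \<notin> I" "\<forall>m\<in>M0. cg I (e0 \<otimes> m) m"
    using regular_idem[OF vn i M0] by blast
  have e0c: "e0 \<in> carrier R" using mc[OF M0 e0(1)] .
  have rK: "right_ideal TT (Kset M0)"
    unfolding ri_TT_iff
  proof (intro conjI ballI impI)
    show "Kset M0 \<subseteq> SS" by (rule Kset_sub)
    show "\<zero>\<^bsub>PP\<^esub> \<in> Kset M0" using Kset_Phi[OF zero_closed] Phi_zero mc riD(2)[OF rI] by auto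
    fix x assume x: "x \<in> Kset M0"
    then obtain a where a: "a \<in> carrier R" "x = Phi a" using Kset_sub by blast
    have xa: "\<forall>M\<in>BB. M \<noteq> M0 \<longrightarrow> (\<forall>z\<in>M. a \<otimes> z \<in> I)" using Kset_Phi a x by simp
    {
      fix y assume y: "y \<in> Kset M0"
      then obtain b where b: "b \<in> carrier R" "y = Phi b" using Kset_sub by blast
      have yb: "\<forall>M\<in>BB. M \<noteq> M0 \<longrightarrow> (\<forall>z\<in>M. b \<otimes> z \<in> I)" using Kset_Phi b y by simp
      have "\<forall>M\<in>BB. M \<noteq> M0 \<longrightarrow> (\<forall>z\<in>M. (a \<oplus> b) \<otimes> z \<in> I)"
        using xa yb riD(3)[OF rI] mc a b by (simp add: l_distr)
      then have "Phi (a \<oplus> b) \<in> Kset M0" using Kset_Phi[of "a \<oplus> b"] a b by simp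
      then show "x \<oplus>\<^bsub>PP\<^esub> y \<in> Kset M0" using a b Phi_add by simp
    }
    fix r assume "r \<in> SS"
    then obtain b where b: "b \<in> carrier R" "r = Phi b" by blast
    have "\<forall>M\<in>BB. M \<noteq> M0 \<longrightarrow> (\<forall>z\<in>M. (a \<otimes> b) \<otimes> z \<in> I)"
      using xa ts[OF b(1)] mc a b by (simp add: m_assoc)
    then have "Phi (a \<otimes> b) \<in> Kset M0" using Kset_Phi[of "a \<otimes> b"] a b by simp
    then show "x \<otimes>\<^bsub>PP\<^esub> r \<in> Kset M0" using a b Phi_mult by simp
  next
    fix a assume a: "a \<in> carrier R" "Phi a \<in> Kset M0"
    then have "\<forall>M\<in>BB. M \<noteq> M0 \<longrightarrow> (\<forall>z\<in>M. a \<otimes> z \<in> I)" using Kset_Phi by simp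
    then have "\<forall>M\<in>BB. M \<noteq> M0 \<longrightarrow> (\<forall>z\<in>M. \<ominus> a \<otimes> z \<in> I)"
      using riD(4)[OF rI] mc a by (simp add: l_minus)
    then show "Phi (\<ominus> a) \<in> Kset M0" using Kset_Phi[of "\<ominus> a"] a by simp
  qed
  have e0K: "Phi e0 \<in> Kset M0"
    using Kset_Phi[OF e0c] distinct_kill[OF _ M0 _ e0(1)] by blast
  have e0nz: "Phi e0 \<noteq> \<zero>\<^bsub>PP\<^esub>" using Phi_zero_iff e0c e0(2) by simp
  have zK: "{\<zero>\<^bsub>PP\<^esub>} \<subset> Kset M0" using rK e0K e0nz unfolding ri_TT_iff by blast
  have mK: "\<forall>J. right_ideal TT J \<and> {\<zero>\<^bsub>PP\<^esub>} \<subseteq> J \<and> J \<subseteq> Kset M0 \<longrightarrow> J = {\<zero>\<^bsub>PP\<^esub>} \<or> J = Kset M0"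
  proof (intro allI impI)
    fix J assume J: "right_ideal TT J \<and> {\<zero>\<^bsub>PP\<^esub>} \<subseteq> J \<and> J \<subseteq> Kset M0"
    have rJ: "right_ideal TT J" using J by blast
    show "J = {\<zero>\<^bsub>PP\<^esub>} \<or> J = Kset M0"
    proof (cases "J = {\<zero>\<^bsub>PP\<^esub>}")
      case True then show ?thesis by simp
    next
      case False
      then obtain h where h: "h \<in> J" "h \<noteq> \<zero>\<^bsub>PP\<^esub>" using J by blast
      obtain c where c: "c \<in> carrier R" "h = Phi c" using h J Kset_sub by blast
      have hK: "\<forall>M\<in>BB. M \<noteq> M0 \<longrightarrow> (\<forall>z\<in>M. c \<otimes> z \<in> I)" using h J Kset_Phi c by blast
      obtain M x0 where Mx: "M \<in> BB" "x0 \<in> M" "c \<otimes> x0 \<notin> I" using Phi_nonzero c h by blast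
      have "M = M0" using hK Mx by blast
      then have x0: "x0 \<in> M0" "c \<otimes> x0 \<notin> I" using Mx by auto
      have x0c: "x0 \<in> carrier R" using mc[OF M0 x0(1)] .
      have ce: "c \<otimes> e0 \<notin> I"
      proof
        assume "c \<otimes> e0 \<in> I"
        then have "c \<otimes> e0 \<otimes> x0 \<in> I" using idl_r[OF i _ x0c] by blast
        then have "c \<otimes> (e0 \<otimes> x0) \<in> I" using c e0c x0c by (simp add: m_assoc)
        moreover have "cg I (c \<otimes> (e0 \<otimes> x0)) (c \<otimes> x0)" using cg_lm[OF i c(1)] e0(3) x0(1) by blast
        ultimately show False using x0(2) cg_memI[OF i cg_sym[OF i]] by blast
      qed
      have ceM: "c \<otimes> e0 \<in> M0" using ts[OF c(1) M0 e0(1)] .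
      have cec: "c \<otimes> e0 \<in> carrier R" using c e0c by simp
      define XX where "XX = I <+> (\<otimes>) (c \<otimes> e0) ` carrier R"
      have rX: "right_ideal R XX" unfolding XX_def by (rule ri_sum[OF rI img_ri[OF ri_carrier cec]])
      have IX: "I \<subseteq> XX" unfolding XX_def by (rule sum_sub1[OF rI img_ri[OF ri_carrier cec]])
      have XM: "XX \<subseteq> M0" unfolding XX_def
        using sum_le[OF min_ri[OF M0] min_sub[OF M0]] riD(5)[OF min_ri[OF M0] ceM] by blast
      have "c \<otimes> e0 \<in> XX" unfolding XX_def using sum_sub2[OF rI img_ri[OF ri_carrier cec]] cec
        by (metis image_eqI r_one one_closed subsetD)
      then have "XX = M0" using min_between[OF M0 rX IX XM] ce by blast
      then have "e0 \<in> XX" using e0(1) by simp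
      then obtain p d where pd: "p \<in> I" "d \<in> carrier R" "e0 = p \<oplus> (c \<otimes> e0) \<otimes> d"
        unfolding XX_def by (auto simp: set_add_iff)
      have pc: "p \<in> carrier R" using ri_carr[OF rI pd(1)] .
      have qc: "(c \<otimes> e0) \<otimes> d \<in> carrier R" using cec pd(2) by simp
      have "e0 \<ominus> p = ((c \<otimes> e0) \<otimes> d \<oplus> p) \<ominus> p" using pd(3) pc qc by (simp add: a_comm)
      also have "\<dots> = (c \<otimes> e0) \<otimes> d" using pc qc by (simp add: minus_eq a_assoc l_neg r_neg)
      finally have ced: "(c \<otimes> e0) \<otimes> d = e0 \<ominus> p" by simp
      have "Kset M0 \<subseteq> J"
      proof
        fix k assume k: "k \<in> Kset M0"
        then obtain b where b: "b \<in> carrier R" "k = Phi b" using Kset_sub by blast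
        have kb: "\<forall>M\<in>BB. M \<noteq> M0 \<longrightarrow> (\<forall>z\<in>M. b \<otimes> z \<in> I)" using Kset_Phi b k by simp
        define u where "u = e0 \<otimes> d \<otimes> b"
        have uc: "u \<in> carrier R" unfolding u_def using e0c pd b by simp
        have "Phi (c \<otimes> u) = Phi b"
          unfolding Phi_def
        proof (rule restrict_ext)
          fix M assume MB: "M \<in> BB"
          then have M: "minimal_over R I M" by simp
          show "lm (c \<otimes> u) M = lm b M"
          proof (subst lm_eq[OF M m_closed[OF c(1) uc] b(1)], intro ballI)
            fix x assume x: "x \<in> M"
            have xc: "x \<in> carrier R" using mc[OF M x] .
            have bx: "b \<otimes> x \<in> carrier R" using b xc by simp
            have eq: "c \<otimes> u \<otimes> x = e0 \<otimes> (b \<otimes> x) \<ominus> p \<otimes> (b \<otimes> x)"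
            proof -
              have "c \<otimes> u \<otimes> x = ((c \<otimes> e0) \<otimes> d) \<otimes> (b \<otimes> x)"
                unfolding u_def using c e0c pd b xc by (simp add: m_assoc)
              also have "\<dots> = (e0 \<ominus> p) \<otimes> (b \<otimes> x)" using ced by simp
              also have "\<dots> = e0 \<otimes> (b \<otimes> x) \<ominus> p \<otimes> (b \<otimes> x)"
                using e0c pc bx by (simp add: minus_eq l_distr l_minus)
              finally show ?thesis .
            qed
            show "cg I (c \<otimes> u \<otimes> x) (b \<otimes> x)"
            proof (cases "M = M0")
              case True
              have bxM: "b \<otimes> x \<in> M0" using ts[OF b(1) M] x True by simp
              have "cg I (e0 \<otimes> (b \<otimes> x) \<ominus> p \<otimes> (b \<otimes> x)) ((b \<otimes> x) \<ominus> \<zero>)"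
                using cg_minus[OF i e0(3)[rule_format, OF bxM] cg_memD[OF i idl_r[OF i pd(1) bx]]] .
              then show ?thesis using eq bx by (simp add: minus_eq)
            next
              case False
              have "b \<otimes> x \<in> I" using kb MB False x by blast
              then have "c \<otimes> u \<otimes> x \<in> I" using eq idl_l[OF i _ e0c] idl_l[OF i _ pc] ri_minus[OF rI] by simp
              then show ?thesis using cg_I[OF i] \<open>b \<otimes> x \<in> I\<close> by blast
            qed
          qed
        qed
        moreover have "Phi (c \<otimes> u) = h \<otimes>\<^bsub>PP\<^esub> Phi u" using Phi_mult c uc by simp
        moreover have "h \<otimes>\<^bsub>PP\<^esub> Phi u \<in> J" using rJ h(1) uc unfolding ri_TT_iff by blast
        ultimately show "k \<in> J" using b by simp
      qed
      then show ?thesis using J by blast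
    qed
  qed
  show ?thesis unfolding mri_TT using rK zK mK by blast
qed

lemma DS_in_rsoc: "DS \<subseteq> rsoc TT"
  unfolding rsoc_def
proof (rule Inter_greatest)
  fix J assume "J \<in> {J. right_ideal TT J \<and> (\<forall>M. minimal_right_ideal TT M \<longrightarrow> M \<subseteq> J)}"
  then have rJ: "right_ideal TT J" and KJ: "\<And>M0. M0 \<in> BB \<Longrightarrow> Kset M0 \<subseteq> J"
    using Kset_min by blast+
  have main: "finite F \<Longrightarrow> \<forall>a\<in>carrier R. supp (Phi a) \<subseteq> F \<longrightarrow> Phi a \<in> J" for F
  proof (induction F rule: finite_induct)
    case empty
    show ?case
    proof (intro ballI impI)
      fix a assume a: "a \<in> carrier R" and "supp (Phi a) \<subseteq> {}"
      then have "\<forall>M\<in>BB. \<forall>x\<in>M. a \<otimes> x \<in> I" using supp_Phi by blast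
      then have "a \<in> I" using injectivity[OF vn sa sI a] by simp
      then have "Phi a = \<zero>\<^bsub>PP\<^esub>" using Phi_zero_iff a by simp
      then show "Phi a \<in> J" using rJ unfolding ri_TT_iff by simp
    qed
  next
    case (insert M0 F)
    show ?case
    proof (intro ballI impI)
      fix a assume a: "a \<in> carrier R" and sa': "supp (Phi a) \<subseteq> insert M0 F"
      show "Phi a \<in> J"
      proof (cases "M0 \<in> BB")
        case False
        then have "supp (Phi a) \<subseteq> F" using sa' supp_sub by blast
        then show ?thesis using insert.IH a by blast
      next
        case True
        then have M0: "minimal_over R I M0" by simp
        obtain e0 where e0: "e0 \<in> M0" "e0 \<notin> I" "\<forall>m\<in>M0. cg I (e0 \<otimes> m) m"
          using regular_idem[OF vn i M0] by blast
        have e0c: "e0 \<in> carrier R" using mc[OF M0 e0(1)] .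
        define a1 where "a1 = a \<otimes> e0"
        define a2 where "a2 = a \<ominus> a \<otimes> e0"
        have a1c: "a1 \<in> carrier R" and a2c: "a2 \<in> carrier R" unfolding a1_def a2_def using a e0c by auto
        have sum: "a1 \<oplus> a2 = a" unfolding a1_def a2_def using a e0c
          by (simp add: minus_eq a_comm a_assoc r_neg r_neg1 a_lcomm)
        have "\<forall>M\<in>BB. M \<noteq> M0 \<longrightarrow> (\<forall>x\<in>M. a1 \<otimes> x \<in> I)"
        proof (intro ballI impI)
          fix M x assume M: "M \<in> BB" "M \<noteq> M0" and x: "x \<in> M"
          have "e0 \<otimes> x \<in> I" using distinct_kill[OF _ M0 M(2) e0(1) x] M(1) by simp
          then have "a \<otimes> (e0 \<otimes> x) \<in> I" using idl_l[OF i _ a] by blast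
          then show "a1 \<otimes> x \<in> I" unfolding a1_def using a e0c mc M x by (simp add: m_assoc)
        qed
        then have "Phi a1 \<in> Kset M0" using Kset_Phi[OF a1c] by simp
        then have J1: "Phi a1 \<in> J" using KJ True by blast
        have "supp (Phi a2) \<subseteq> F"
        proof
          fix M assume M: "M \<in> supp (Phi a2)"
          show "M \<in> F"
          proof (rule ccontr)
            assume nF: "M \<notin> F"
            have MB: "M \<in> BB" using M supp_sub by blast
            then have Mm: "minimal_over R I M" by simp
            have "\<forall>x\<in>M. a2 \<otimes> x \<in> I"
            proof
              fix x assume x: "x \<in> M"
              have xc: "x \<in> carrier R" using mc[OF Mm x] .
              have eq: "a2 \<otimes> x = a \<otimes> x \<ominus> a \<otimes> (e0 \<otimes> x)"
                unfolding a2_def using a e0c xc by (simp add: minus_eq l_distr l_minus m_assoc)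
              show "a2 \<otimes> x \<in> I"
              proof (cases "M = M0")
                case True
                have "cg I (a \<otimes> x \<ominus> a \<otimes> (e0 \<otimes> x)) (a \<otimes> x \<ominus> a \<otimes> x)"
                  using cg_minus[OF i cg_refl[OF i] cg_lm[OF i a e0(3)[rule_format]]] x True a xc by simp
                moreover have "a \<otimes> x \<ominus> a \<otimes> x = \<zero>" using a xc by (simp add: minus_eq r_neg)
                ultimately show ?thesis using eq cg_zero a2c xc by (metis m_closed)
              next
                case False
                then have "M \<notin> supp (Phi a)" using sa' nF by blast
                then have "a \<otimes> x \<in> I" using supp_Phi[OF a] MB x by blast
                moreover have "a \<otimes> (e0 \<otimes> x) \<in> I"
                  using idl_l[OF i distinct_kill[OF Mm M0 False e0(1) x] a] .
                ultimately show ?thesis using eq ri_minus[OF rI] by simp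
              qed
            qed
            then show False using M supp_Phi[OF a2c] by blast
          qed
        qed
        then have J2: "Phi a2 \<in> J" using insert.IH a2c by blast
        have "Phi a = Phi a1 \<oplus>\<^bsub>PP\<^esub> Phi a2" using Phi_add[OF a1c a2c] sum by simp
        then show ?thesis using J1 J2 rJ unfolding ri_TT_iff by simp
      qed
    qed
  qed
  show "DS \<subseteq> J"
  proof
    fix f assume f: "f \<in> DS"
    then obtain a where a: "a \<in> carrier R" "Phi a = f" using dsum_Phi unfolding dsum_eq by blast
    have "finite (supp (Phi a))" using f a unfolding dsum_eq by simp
    then show "f \<in> J" using main a by blast
  qed
qed

lemma rsoc_eq: "rsoc TT = DS"
  using rsoc_sub DS_in_rsoc by blast

end

no_notation Sum_Type.Plus (infixr \<open><+>\<close> 65)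

context ring
begin

lemma amc2: "x \<in> carrier R \<Longrightarrow> y \<in> carrier R \<Longrightarrow> (y \<oplus> x) \<ominus> x = y"
  by (simp add: minus_eq a_assoc r_neg)

lemma amc1: "x \<in> carrier R \<Longrightarrow> y \<in> carrier R \<Longrightarrow> (x \<oplus> y) \<ominus> x = y"
  using amc2 a_comm by metis

lemma finite_length:
  assumes vn: "von_neumann_regular R" and pfa: "primitive_factors_artinian R"
    and i: "ideal I R" and M: "minimal_over R I M"
  shows "\<exists>Ms. (\<forall>N\<in>set Ms. minimal_over R I N) \<and> hom_comp R I M = fsum Ms I"
proof -
  have rI: "right_ideal R I" using ideal_ri[OF i] .
  define H where "H = hom_comp R I M"
  have rH: "right_ideal R H" unfolding H_def by (rule hom_comp_ri[OF M])
  have IH: "I \<subseteq> H" unfolding H_def by (rule hom_comp_ge)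
  have HS: "H \<subseteq> soc_succ R I" unfolding H_def by (rule hom_comp_ss[OF M])
  have rM: "right_ideal R M" using min_ri[OF M] .
  define Q where "Q = {r \<in> carrier R. \<forall>x\<in>M. x \<otimes> r \<in> I}"
  have prim: "primitive_ideal R Q" unfolding primitive_ideal_def Q_def using M by blast
  then have art: "artinian_factor R Q" using pfa unfolding primitive_factors_artinian_def by blast
  have rQ: "right_ideal R Q"
    unfolding ri_iff Q_def
  proof (intro conjI ballI)
    show "{r \<in> carrier R. \<forall>x\<in>M. x \<otimes> r \<in> I} \<subseteq> carrier R" by blast
    show "\<zero> \<in> {r \<in> carrier R. \<forall>x\<in>M. x \<otimes> r \<in> I}" using riD(2)[OF rI] ri_carr[OF rM] by simp
    fix r assume r: "r \<in> {r \<in> carrier R. \<forall>x\<in>M. x \<otimes> r \<in> I}"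
    {
      fix s assume s: "s \<in> {r \<in> carrier R. \<forall>x\<in>M. x \<otimes> r \<in> I}"
      show "r \<oplus> s \<in> {r \<in> carrier R. \<forall>x\<in>M. x \<otimes> r \<in> I}"
        using r s riD(3)[OF rI] ri_carr[OF rM] by (simp add: r_distr)
    }
    show "\<ominus> r \<in> {r \<in> carrier R. \<forall>x\<in>M. x \<otimes> r \<in> I}"
      using r riD(4)[OF rI] ri_carr[OF rM] by (simp add: r_minus)
    fix t assume t: "t \<in> carrier R"
    show "r \<otimes> t \<in> {r \<in> carrier R. \<forall>x\<in>M. x \<otimes> r \<in> I}"
      using r t riD(5)[OF rI] ri_carr[OF rM] by (simp add: m_assoc[symmetric])
  qed
  have Ql: "a \<otimes> q \<in> Q" if a: "a \<in> carrier R" and q: "q \<in> Q" for a q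
  proof -
    have "\<forall>x\<in>M. x \<otimes> (a \<otimes> q) \<in> I"
    proof
      fix x assume x: "x \<in> M"
      have "x \<otimes> a \<in> M" using riD(5)[OF rM x a] .
      then have "(x \<otimes> a) \<otimes> q \<in> I" using q unfolding Q_def by blast
      then show "x \<otimes> (a \<otimes> q) \<in> I" using x a q ri_carr[OF rM] unfolding Q_def by (simp add: m_assoc)
    qed
    then show ?thesis using a q unfolding Q_def by simp
  qed
  define A where "A = {h \<in> carrier R. \<forall>q\<in>Q. h \<otimes> q \<in> I}"
  have rA: "right_ideal R A"
    unfolding ri_iff A_def
  proof (intro conjI ballI)
    show "{h \<in> carrier R. \<forall>q\<in>Q. h \<otimes> q \<in> I} \<subseteq> carrier R" by blast
    show "\<zero> \<in> {h \<in> carrier R. \<forall>q\<in>Q. h \<otimes> q \<in> I}" using riD(2)[OF rI] ri_carr[OF rQ] by simp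
    fix r assume r: "r \<in> {h \<in> carrier R. \<forall>q\<in>Q. h \<otimes> q \<in> I}"
    {
      fix s assume s: "s \<in> {h \<in> carrier R. \<forall>q\<in>Q. h \<otimes> q \<in> I}"
      show "r \<oplus> s \<in> {h \<in> carrier R. \<forall>q\<in>Q. h \<otimes> q \<in> I}"
        using r s riD(3)[OF rI] ri_carr[OF rQ] by (simp add: l_distr)
    }
    show "\<ominus> r \<in> {h \<in> carrier R. \<forall>q\<in>Q. h \<otimes> q \<in> I}"
      using r riD(4)[OF rI] ri_carr[OF rQ] by (simp add: l_minus)
    fix t assume t: "t \<in> carrier R"
    show "r \<otimes> t \<in> {h \<in> carrier R. \<forall>q\<in>Q. h \<otimes> q \<in> I}"
      using r t Ql ri_carr[OF rQ] by (simp add: m_assoc)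
  qed
  have IA: "I \<subseteq> A" unfolding A_def using idl_r[OF i] ri_carr[OF rI] ri_carr[OF rQ] by blast
  have isoA: "M' \<subseteq> A" if M': "minimal_over R I M' \<and> mod_iso R I M I M'" for M'
  proof
    fix y assume y: "y \<in> M'"
    have rM': "right_ideal R M'" using M' min_ri by blast
    obtain f g where fg: "mod_hom R I M I M' f" "mod_hom R I M' I M g" "\<forall>y\<in>M'. f (g y) \<ominus> y \<in> I"
      using M' unfolding mod_iso_def by blast
    have yc: "y \<in> carrier R" using ri_carr[OF rM' y] .
    have gy: "g y \<in> M" using fg(2) y unfolding mod_hom_def by blast
    have fgy: "f (g y) \<in> M'" using fg(1) gy unfolding mod_hom_def by blast
    have fgc: "f (g y) \<in> carrier R" using ri_carr[OF rM' fgy] .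
    have "\<forall>q\<in>Q. y \<otimes> q \<in> I"
    proof
      fix q assume q: "q \<in> Q"
      have qc: "q \<in> carrier R" using ri_carr[OF rQ q] .
      have "g y \<otimes> q \<in> I" using q gy unfolding Q_def by blast
      then have "f (g y \<otimes> q) \<in> I" using fg(1) unfolding mod_hom_def by blast
      moreover have "cg I (f (g y \<otimes> q)) (f (g y) \<otimes> q)"
        using fg(1) gy qc fgc riD(5)[OF rM gy qc] ri_carr[OF rM'] unfolding mod_hom_def cg_def by blast
      ultimately have "f (g y) \<otimes> q \<in> I" using cg_memI[OF i cg_sym[OF i]] by blast
      moreover have "cg I (y \<otimes> q) (f (g y) \<otimes> q)"
        using cg_rm[OF i qc] fg(3) y yc fgc cg_sym[OF i] unfolding cg_def by blast
      ultimately show "y \<otimes> q \<in> I" using cg_memI[OF i] by blast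
    qed
    then show "y \<in> A" unfolding A_def using yc by blast
  qed
  have HA: "H \<subseteq> A" unfolding H_def hom_comp_def using rA IA isoA by blast
  have HQ: "h \<in> I" if h: "h \<in> H" "h \<in> Q" for h
  proof -
    have hc: "h \<in> carrier R" using ri_carr[OF rH h(1)] .
    obtain y where y: "y \<in> carrier R" "h \<otimes> y \<otimes> h = h" using vn hc unfolding von_neumann_regular_def by blast
    have "y \<otimes> h \<in> Q" using Ql[OF y(1) h(2)] .
    then have "h \<otimes> (y \<otimes> h) \<in> I" using HA h(1) unfolding A_def by blast
    then show ?thesis using y hc by (simp add: m_assoc)
  qed
  have bk: "(J <+> Q) \<inter> H = J" if J: "right_ideal R J" "J \<subseteq> H" "I \<subseteq> J" for J
  proof
    show "J \<subseteq> (J <+> Q) \<inter> H" using sum_sub1[OF J(1) rQ] J(2) by blast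
    show "(J <+> Q) \<inter> H \<subseteq> J"
    proof
      fix z assume z: "z \<in> (J <+> Q) \<inter> H"
      then obtain j q where jq: "j \<in> J" "q \<in> Q" "z = j \<oplus> q" by (auto simp: set_add_iff)
      have jc: "j \<in> carrier R" "q \<in> carrier R" using jq ri_carr[OF J(1)] ri_carr[OF rQ] by auto
      have "q = z \<ominus> j" using jq jc amc1 by simp
      moreover have "z \<ominus> j \<in> H" using ri_minus[OF rH] z jq J(2) by blast
      ultimately have "q \<in> I" using HQ jq(2) by simp
      then show "z \<in> J" using jq J(3) riD(3)[OF J(1)] by blast
    qed
  qed
  define C where "C = {J. right_ideal R J \<and> I \<subseteq> J \<and> J \<subseteq> H}"
  define r where "r = {(J, J'). J \<in> C \<and> J' \<in> C \<and> J \<subset> J'}"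
  have wfr: "wf r"
  proof (rule ccontr)
    assume "\<not> wf r"
    then obtain f where f: "\<forall>n. (f (Suc n), f n) \<in> r" using wf_iff_no_infinite_down_chain by blast
    define g where "g n = f n <+> Q" for n
    have "\<forall>n. right_ideal R (g n) \<and> Q \<subseteq> g n \<and> g (Suc n) \<subset> g n"
    proof
      fix n
      have fn: "f n \<in> C" "f (Suc n) \<in> C" "f (Suc n) \<subset> f n" using f unfolding r_def by auto
      have rg: "right_ideal R (g n)" unfolding g_def using ri_sum[OF _ rQ] fn unfolding C_def by blast
      have Qg: "Q \<subseteq> g n" unfolding g_def using sum_sub2[OF _ rQ] fn unfolding C_def by blast
      have sub: "g (Suc n) \<subseteq> g n" unfolding g_def using sum_mono[of "f (Suc n)" "f n" Q Q] fn by blast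
      have "g (Suc n) \<noteq> g n"
      proof
        assume "g (Suc n) = g n"
        then have "(f (Suc n) <+> Q) \<inter> H = (f n <+> Q) \<inter> H" unfolding g_def by simp
        then have "f (Suc n) = f n" using bk fn unfolding C_def by auto
        then show False using fn by blast
      qed
      then show "right_ideal R (g n) \<and> Q \<subseteq> g n \<and> g (Suc n) \<subset> g n" using rg Qg sub by blast
    qed
    then show False using art unfolding artinian_factor_def by blast
  qed
  define CC where "CC = {J \<in> C. \<exists>Ms. (\<forall>N\<in>set Ms. minimal_over R I N) \<and> H = J <+> fsum Ms I}"
  have "H \<in> CC" unfolding CC_def C_def
    using rH IH sum_absorb[OF rH rI IH] by (auto intro!: exI[of _ "[]"])
  then obtain J0 where J0: "J0 \<in> CC" "\<And>J. (J, J0) \<in> r \<Longrightarrow> J \<notin> CC"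
    using wfE_min[OF wfr] by blast
  obtain Ms where Ms: "\<forall>N\<in>set Ms. minimal_over R I N" "H = J0 <+> fsum Ms I"
    using J0(1) unfolding CC_def by blast
  have rJ0: "right_ideal R J0" and IJ0: "I \<subseteq> J0" and J0H: "J0 \<subseteq> H"
    using J0(1) unfolding CC_def C_def by auto
  have rMs: "\<forall>N\<in>set Ms. right_ideal R N" using Ms(1) min_ri by blast
  have rS: "right_ideal R (fsum Ms I)" and IS: "I \<subseteq> fsum Ms I" using fs_ri[OF rI rMs] by auto
  show ?thesis
  proof (cases "J0 = I")
    case True
    then have "H = fsum Ms I" using Ms(2) sum_absorb2[OF rI rS IS] by simp
    then show ?thesis using Ms(1) unfolding H_def by blast
  next
    case False
    obtain M1 where M1: "minimal_over R I M1" "M1 \<subseteq> J0"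
      using SS[OF rI rJ0 IJ0 _ False] J0H HS by blast
    obtain e where e: "e \<in> M1" "e \<notin> I" "e \<otimes> e = e"
      using regular_idem[OF vn i M1(1)] by blast
    have ec: "e \<in> carrier R" using ri_carr[OF min_ri[OF M1(1)] e(1)] .
    define u where "u = \<one> \<ominus> e"
    have uc: "u \<in> carrier R" unfolding u_def using ec by simp
    define J1 where "J1 = I <+> (\<otimes>) u ` J0"
    have ruJ: "right_ideal R ((\<otimes>) u ` J0)" by (rule img_ri[OF rJ0 uc])
    have rJ1: "right_ideal R J1" unfolding J1_def by (rule ri_sum[OF rI ruJ])
    have IJ1: "I \<subseteq> J1" unfolding J1_def by (rule sum_sub1[OF rI ruJ])
    have uj: "u \<otimes> j = j \<ominus> e \<otimes> j" if "j \<in> carrier R" for j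
      unfolding u_def using ec that by (simp add: minus_eq l_distr l_minus)
    have ejJ: "e \<otimes> j \<in> J0" if "j \<in> carrier R" for j using riD(5)[OF rJ0] e(1) M1(2) that by blast
    have ejM: "e \<otimes> j \<in> M1" if "j \<in> carrier R" for j using riD(5)[OF min_ri[OF M1(1)] e(1) that] .
    have uJ0: "(\<otimes>) u ` J0 \<subseteq> J0"
    proof
      fix z assume "z \<in> (\<otimes>) u ` J0"
      then obtain j where j: "j \<in> J0" "z = u \<otimes> j" by blast
      have jc: "j \<in> carrier R" using ri_carr[OF rJ0 j(1)] .
      show "z \<in> J0" using j uj[OF jc] ri_minus[OF rJ0 j(1) ejJ[OF jc]] by simp
    qed
    have J1J0: "J1 \<subseteq> J0" unfolding J1_def using sum_le[OF rJ0 IJ0 uJ0] .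
    have J0MJ1: "J0 \<subseteq> M1 <+> J1"
    proof
      fix j assume j: "j \<in> J0"
      have jc: "j \<in> carrier R" using ri_carr[OF rJ0 j] .
      have "u \<otimes> j \<in> J1" unfolding J1_def using sum_sub2[OF rI ruJ] j by blast
      moreover have "j = e \<otimes> j \<oplus> u \<otimes> j" using uj[OF jc] ec jc
        by (simp add: minus_eq a_comm a_assoc r_neg r_neg1 a_lcomm)
      ultimately show "j \<in> M1 <+> J1" using ejM[OF jc] by (auto simp: set_add_iff)
    qed
    have eJ1: "e \<notin> J1"
    proof
      assume "e \<in> J1"
      then obtain p j where pj: "p \<in> I" "j \<in> J0" "e = p \<oplus> u \<otimes> j" unfolding J1_def by (auto simp: set_add_iff)
      have pc: "p \<in> carrier R" "j \<in> carrier R" using pj ri_carr[OF rI] ri_carr[OF rJ0] by auto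
      have eu: "e \<otimes> u = \<zero>" unfolding u_def using ec e(3) by (simp add: minus_eq r_distr r_minus r_neg)
      have "e = e \<otimes> e" using e(3) by simp
      also have "\<dots> = e \<otimes> p \<oplus> (e \<otimes> u) \<otimes> j" using pj(3) pc ec uc by (simp add: r_distr m_assoc)
      also have "\<dots> = e \<otimes> p" using eu pc ec by simp
      finally have "e = e \<otimes> p" .
      then show False using idl_l[OF i pj(1) ec] e(2) by simp
    qed
    have J1C: "J1 \<in> C" unfolding C_def using rJ1 IJ1 J1J0 J0H by blast
    have "J1 \<subset> J0" using J1J0 eJ1 e(1) M1(2) by blast
    then have r10: "(J1, J0) \<in> r" unfolding r_def using J1C J0(1) unfolding CC_def by blast
    have cJ1: "J1 \<subseteq> carrier R" "M1 \<subseteq> carrier R" "fsum Ms I \<subseteq> carrier R"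
      using riD(1) rJ1 min_ri[OF M1(1)] rS by blast+
    have "H = J1 <+> fsum (M1 # Ms) I"
    proof
      have "H \<subseteq> (M1 <+> J1) <+> fsum Ms I" using Ms(2) sum_mono[OF J0MJ1 order_refl] by simp
      also have "\<dots> = J1 <+> (M1 <+> fsum Ms I)" using sum_comm[OF cJ1(2) cJ1(1)] sum_assoc[OF cJ1] by simp
      finally show "H \<subseteq> J1 <+> fsum (M1 # Ms) I" by simp
      have "fsum Ms I \<subseteq> H" using Ms(2) sum_sub2[OF rJ0 rS] by blast
      moreover have "M1 \<subseteq> H" using M1(2) J0H by blast
      ultimately have "M1 <+> fsum Ms I \<subseteq> H" using sum_le[OF rH] by blast
      then show "J1 <+> fsum (M1 # Ms) I \<subseteq> H" using sum_le[OF rH] J1J0 J0H by simp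
    qed
    then have "J1 \<in> CC" unfolding CC_def using J1C Ms(1) M1(1)
      by (intro CollectI conjI exI[of _ "M1 # Ms"]) auto
    then show ?thesis using J0(2)[OF r10] by blast
  qed
qed

definition lmr :: "'a set \<Rightarrow> 'a \<Rightarrow> 'a set \<Rightarrow> 'a set \<Rightarrow> 'a set" where
  "lmr I a M = (\<lambda>c\<in>qcarrier R I M. I +> (a \<otimes> (SOME x. x \<in> c)))"

lemma lmr_app:
  assumes i: "ideal I R" and rM: "right_ideal R M" and a: "a \<in> carrier R" and x: "x \<in> M"
  shows "lmr I a M (I +> x) = I +> (a \<otimes> x)"
proof -
  interpret I: ideal I R by (rule i)
  have xc: "x \<in> carrier R" using ri_carr[OF rM x] .
  have "x \<in> I +> x" using I.a_rcos_self[OF xc] .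
  then have s: "(SOME y. y \<in> I +> x) \<in> I +> x" by (rule someI)
  have sc: "(SOME y. y \<in> I +> x) \<in> carrier R" using I.a_elemrcos_carrier[OF xc s] .
  have "cg I (SOME y. y \<in> I +> x) x"
    using I.a_rcos_module_minus[OF ring_axioms xc sc] s xc sc by (simp add: cg_def)
  then have "cg I (a \<otimes> (SOME y. y \<in> I +> x)) (a \<otimes> x)" using cg_lm[OF i a] by blast
  then have "I +> (a \<otimes> (SOME y. y \<in> I +> x)) = I +> (a \<otimes> x)"
    using coset_eq[OF i] cg_carr by blast
  moreover have "I +> x \<in> qcarrier R I M" unfolding qcarrier_def using x by blast
  ultimately show ?thesis unfolding lmr_def by simp
qed

lemma lmr_carrier:
  assumes i: "ideal I R" and M: "minimal_over R I M" and a: "a \<in> carrier R"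
    and aM: "\<And>m. m \<in> M \<Longrightarrow> a \<otimes> m \<in> M"
  shows "lmr I a M \<in> carrier (End_ring R I M)"
proof -
  have rM: "right_ideal R M" using min_ri[OF M] .
  have rI: "right_ideal R I" using ideal_ri[OF i] .
  have "mod_hom R I M I M ((\<otimes>) a)"
    unfolding mod_hom_def
  proof (intro conjI ballI)
    fix x assume x: "x \<in> M"
    show "a \<otimes> x \<in> M" using aM[OF x] .
    {
      fix y assume y: "y \<in> M"
      show "a \<otimes> (x \<oplus> y) \<ominus> (a \<otimes> x \<oplus> a \<otimes> y) \<in> I"
        using a ri_carr[OF rM x] ri_carr[OF rM y] riD(2)[OF rI] by (simp add: r_distr minus_eq r_neg)
    }
    fix r assume r: "r \<in> carrier R"
    show "a \<otimes> (x \<otimes> r) \<ominus> a \<otimes> x \<otimes> r \<in> I"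
      using a ri_carr[OF rM x] r riD(2)[OF rI] by (simp add: m_assoc minus_eq r_neg)
  next
    fix x assume "x \<in> I" then show "a \<otimes> x \<in> I" using idl_l[OF i _ a] by blast
  qed
  moreover have "lmr I a M \<in> extensional (qcarrier R I M)" unfolding lmr_def by simp
  ultimately show ?thesis unfolding End_ring_def using lmr_app[OF i rM a] by auto
qed

lemma ii_to_i:
  assumes vn: "von_neumann_regular R" and sa: "semiartinian R" and pfa: "primitive_factors_artinian R"
    and sI: "socle_term R I"
    and hyp: "\<forall>H\<in>hom_comps R I. commutative_ring (comp_field R I H) \<and> comp_mult R I H = 1"
  shows "\<forall>a\<in>carrier R. \<forall>b\<in>carrier R. cg I (a \<otimes> b) (b \<otimes> a)"
proof (intro ballI)
  fix a b assume a: "a \<in> carrier R" and b: "b \<in> carrier R"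
  have i: "ideal I R" using st_ideal[OF ring_axioms sI] .
  have rI: "right_ideal R I" using ideal_ri[OF i] .
  have key: "(a \<otimes> b \<ominus> b \<otimes> a) \<otimes> m \<in> I" if M: "minimal_over R I M" and m: "m \<in> M" for M m
  proof -
    have rM: "right_ideal R M" using min_ri[OF M] .
    define H where "H = hom_comp R I M"
    have HH: "H \<in> hom_comps R I" unfolding H_def hom_comps_def using M by blast
    have cH: "commutative_ring (comp_field R I H)" and m1: "comp_mult R I H = 1" using hyp HH by auto
    define P where "P = (\<lambda>n. \<exists>Ms. length Ms = n \<and> (\<forall>M\<in>set Ms. minimal_over R I M) \<and> H = fsum Ms I)"
    obtain Ms where Ms: "\<forall>N\<in>set Ms. minimal_over R I N" "H = fsum Ms I"
      using finite_length[OF vn pfa i M] unfolding H_def by blast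
    have "P (length Ms)" unfolding P_def using Ms by blast
    then have "P (LEAST n. P n)" by (rule LeastI)
    moreover have "(LEAST n. P n) = 1" using m1 unfolding comp_mult_def P_def by simp
    ultimately have "P 1" by simp
    then obtain M' where M': "minimal_over R I M'" "H = M' <+> I" unfolding P_def
      by (auto simp: length_Suc_conv)
    have HM': "H = M'" using M'(2) sum_absorb[OF min_ri[OF M'(1)] rI min_sub[OF M'(1)]] by simp
    have "M \<subseteq> H" unfolding H_def by (rule hom_comp_self[OF M i])
    then have "M = I \<or> M = M'" using min_between[OF M'(1) rM min_sub[OF M]] HM' by blast
    then have HM: "H = M" using HM' min_ne[OF M] by blast
    have cM: "commutative_ring (End_ring R I M)"
      using cH HM comp_simple_self[OF M] unfolding comp_field_def by simp
    have inv: "c \<otimes> x \<in> M" if c: "c \<in> carrier R" and x: "x \<in> M" for c x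
    proof -
      from left_img[OF i M c] show ?thesis
      proof
        assume "\<forall>m\<in>M. c \<otimes> m \<in> I" then show ?thesis using x min_sub[OF M] by blast
      next
        assume h: "minimal_over R I (I <+> (\<otimes>) c ` M) \<and> mod_iso R I M I (I <+> (\<otimes>) c ` M)"
        then have "I <+> (\<otimes>) c ` M \<subseteq> H" unfolding H_def hom_comp_def by blast
        moreover have "c \<otimes> x \<in> I <+> (\<otimes>) c ` M" using sum_sub2[OF rI img_ri[OF rM c]] x by blast
        ultimately show ?thesis using HM by blast
      qed
    qed
    have la: "lmr I a M \<in> carrier (End_ring R I M)" using lmr_carrier[OF i M a inv[OF a]] .
    have lb: "lmr I b M \<in> carrier (End_ring R I M)" using lmr_carrier[OF i M b inv[OF b]] .
    have eq: "lmr I a M \<otimes>\<^bsub>End_ring R I M\<^esub> lmr I b M = lmr I b M \<otimes>\<^bsub>End_ring R I M\<^esub> lmr I a M"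
      using cM la lb unfolding commutative_ring_def by blast
    have mc: "m \<in> carrier R" using ri_carr[OF rM m] .
    have q: "I +> m \<in> qcarrier R I M" unfolding qcarrier_def using m by blast
    have "(lmr I a M \<otimes>\<^bsub>End_ring R I M\<^esub> lmr I b M) (I +> m) = I +> (a \<otimes> (b \<otimes> m))"
      unfolding End_ring_def using q lmr_app[OF i rM b m] lmr_app[OF i rM a inv[OF b m]] by simp
    moreover have "(lmr I b M \<otimes>\<^bsub>End_ring R I M\<^esub> lmr I a M) (I +> m) = I +> (b \<otimes> (a \<otimes> m))"
      unfolding End_ring_def using q lmr_app[OF i rM a m] lmr_app[OF i rM b inv[OF a m]] by simp
    ultimately have "I +> (a \<otimes> (b \<otimes> m)) = I +> (b \<otimes> (a \<otimes> m))" using eq by simp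
    then have "cg I (a \<otimes> (b \<otimes> m)) (b \<otimes> (a \<otimes> m))" using coset_eq[OF i] a b mc by simp
    moreover have "(a \<otimes> b \<ominus> b \<otimes> a) \<otimes> m = a \<otimes> (b \<otimes> m) \<ominus> b \<otimes> (a \<otimes> m)"
      using a b mc by (simp add: minus_eq l_distr l_minus m_assoc)
    ultimately show ?thesis by (simp add: cg_def)
  qed
  have "a \<otimes> b \<ominus> b \<otimes> a \<in> I"
    using injectivity[OF vn sa sI _ key] a b by simp
  then show "cg I (a \<otimes> b) (b \<otimes> a)" using a b by (simp add: cg_def)
qed

end

no_notation Sum_Type.Plus (infixr \<open><+>\<close> 65)

lemma iii_to_i:
  assumes R: "ring R" and i: "ideal I R"
    and cK: "\<forall>H\<in>B. commutative_ring (K H)"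
    and sub: "subring S (prod_ring B K)"
    and iso: "R Quot I \<simeq> (prod_ring B K)\<lparr>carrier := S\<rparr>"
  shows "commutative_ring (R Quot I)"
proof -
  interpret Q: ring "R Quot I" using ideal.quotient_is_ring[OF i] .
  obtain h where h: "h \<in> ring_hom (R Quot I) ((prod_ring B K)\<lparr>carrier := S\<rparr>)"
    "bij_betw h (carrier (R Quot I)) S"
    using iso unfolding is_ring_iso_def ring_iso_def by auto
  have SP: "S \<subseteq> carrier (prod_ring B K)" using sub subring.axioms(2) submonoid.subset by blast
  show ?thesis unfolding commutative_ring_def
  proof (intro ballI)
    fix x y assume x: "x \<in> carrier (R Quot I)" and y: "y \<in> carrier (R Quot I)"
    have hx: "h x \<in> S" and hy: "h y \<in> S" using h(2) x y unfolding bij_betw_def by auto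
    have hxP: "h x \<in> (\<Pi>\<^sub>E b\<in>B. carrier (K b))" and hyP: "h y \<in> (\<Pi>\<^sub>E b\<in>B. carrier (K b))"
      using hx hy SP unfolding prod_ring_def by auto
    have "h (x \<otimes>\<^bsub>R Quot I\<^esub> y) = h x \<otimes>\<^bsub>prod_ring B K\<^esub> h y"
      using ring_hom_mult[OF h(1) x y] by simp
    also have "\<dots> = (\<lambda>b\<in>B. h x b \<otimes>\<^bsub>K b\<^esub> h y b)" unfolding prod_ring_def by simp
    also have "\<dots> = (\<lambda>b\<in>B. h y b \<otimes>\<^bsub>K b\<^esub> h x b)"
    proof (rule restrict_ext)
      fix b assume b: "b \<in> B"
      show "h x b \<otimes>\<^bsub>K b\<^esub> h y b = h y b \<otimes>\<^bsub>K b\<^esub> h x b"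
        using cK b PiE_mem[OF hxP b] PiE_mem[OF hyP b] unfolding commutative_ring_def by blast
    qed
    also have "\<dots> = h y \<otimes>\<^bsub>prod_ring B K\<^esub> h x" unfolding prod_ring_def by simp
    also have "\<dots> = h (y \<otimes>\<^bsub>R Quot I\<^esub> x)"
      using ring_hom_mult[OF h(1) y x] by simp
    finally have "h (x \<otimes>\<^bsub>R Quot I\<^esub> y) = h (y \<otimes>\<^bsub>R Quot I\<^esub> x)" .
    moreover have "x \<otimes>\<^bsub>R Quot I\<^esub> y \<in> carrier (R Quot I)" "y \<otimes>\<^bsub>R Quot I\<^esub> x \<in> carrier (R Quot I)"
      using x y by simp_all
    ultimately show "x \<otimes>\<^bsub>R Quot I\<^esub> y = y \<otimes>\<^bsub>R Quot I\<^esub> x"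
      using h(2) unfolding bij_betw_def inj_on_def by blast
  qed
qed

theorem lemma3p5:
  fixes R :: "('a, 'b) ring_scheme" and I :: "'a set"
  assumes "ring R"
    and "von_neumann_regular R"
    and "semiartinian R"
    and "primitive_factors_artinian R"
    and "socle_term R I" and "I \<noteq> carrier R"
  shows "(commutative_ring (R Quot I)
            \<longleftrightarrow> (\<forall>H\<in>hom_comps R I. commutative_ring (comp_field R I H) \<and> comp_mult R I H = 1))
       \<and> (commutative_ring (R Quot I)
            \<longleftrightarrow> (\<forall>H\<in>hom_comps R I. commutative_ring (comp_field R I H)) \<and>
                (\<exists>S. subring S (prod_ring (hom_comps R I) (comp_field R I)) \<and>
                     R Quot I \<simeq> (prod_ring (hom_comps R I) (comp_field R I)) \<lparr>carrier := S\<rparr> \<and>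
                     rsoc ((prod_ring (hom_comps R I) (comp_field R I)) \<lparr>carrier := S\<rparr>)
                       = dsum_carrier (hom_comps R I) (comp_field R I)))"
proof -
  interpret ring R by (rule assms(1))
  have vn: "von_neumann_regular R" and sa: "semiartinian R" and pfa: "primitive_factors_artinian R"
    and sI: "socle_term R I" using assms by auto
  have i: "ideal I R" using st_ideal[OF assms(1) sI] .
  define C where "C = (\<forall>a\<in>carrier R. \<forall>b\<in>carrier R. cg I (a \<otimes>\<^bsub>R\<^esub> b) (b \<otimes>\<^bsub>R\<^esub> a))"
  have QC: "commutative_ring (R Quot I) \<longleftrightarrow> C" unfolding C_def by (rule quot_comm_iff[OF i])
  have C_ii: "\<forall>H\<in>hom_comps R I. commutative_ring (comp_field R I H) \<and> comp_mult R I H = 1" if c: C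
  proof
    fix H assume H: "H \<in> hom_comps R I"
    have comm: "\<forall>a\<in>carrier R. \<forall>b\<in>carrier R. cg I (a \<otimes>\<^bsub>R\<^esub> b) (b \<otimes>\<^bsub>R\<^esub> a)" using c unfolding C_def .
    have Hm: "minimal_over R I H" using H hom_comps_comm[OF vn i comm] by simp
    have "commutative_ring (comp_field R I H)"
      unfolding comp_field_def comp_simple_self[OF Hm] using End_comm[OF vn i comm Hm] .
    then show "commutative_ring (comp_field R I H) \<and> comp_mult R I H = 1"
      using comp_mult_self[OF Hm] by simp
  qed
  have part1: "commutative_ring (R Quot I)
            \<longleftrightarrow> (\<forall>H\<in>hom_comps R I. commutative_ring (comp_field R I H) \<and> comp_mult R I H = 1)"
    using QC C_ii ii_to_i[OF vn sa pfa sI] unfolding C_def by blast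
  have C_iii: "(\<forall>H\<in>hom_comps R I. commutative_ring (comp_field R I H)) \<and>
                (\<exists>S. subring S (prod_ring (hom_comps R I) (comp_field R I)) \<and>
                     R Quot I \<simeq> (prod_ring (hom_comps R I) (comp_field R I)) \<lparr>carrier := S\<rparr> \<and>
                     rsoc ((prod_ring (hom_comps R I) (comp_field R I)) \<lparr>carrier := S\<rparr>)
                       = dsum_carrier (hom_comps R I) (comp_field R I))" if c: C
  proof
    show "\<forall>H\<in>hom_comps R I. commutative_ring (comp_field R I H)" using C_ii[OF c] by blast
    have comm: "\<forall>a\<in>carrier R. \<forall>b\<in>carrier R. cg I (a \<otimes>\<^bsub>R\<^esub> b) (b \<otimes>\<^bsub>R\<^esub> a)" using c unfolding C_def .
    interpret CS: csetup R I
      by (rule csetup.intro[OF assms(1)], rule csetup_axioms.intro[OF vn sa sI comm])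
    have hc: "hom_comps R I = {M. minimal_over R I M}" by (rule CS.hc)
    show "\<exists>S. subring S (prod_ring (hom_comps R I) (comp_field R I)) \<and>
                     R Quot I \<simeq> (prod_ring (hom_comps R I) (comp_field R I)) \<lparr>carrier := S\<rparr> \<and>
                     rsoc ((prod_ring (hom_comps R I) (comp_field R I)) \<lparr>carrier := S\<rparr>)
                       = dsum_carrier (hom_comps R I) (comp_field R I)"
      unfolding hc using CS.subring_SS CS.iso CS.rsoc_eq by blast
  qed
  have part2: "commutative_ring (R Quot I)
            \<longleftrightarrow> (\<forall>H\<in>hom_comps R I. commutative_ring (comp_field R I H)) \<and>
                (\<exists>S. subring S (prod_ring (hom_comps R I) (comp_field R I)) \<and>
                     R Quot I \<simeq> (prod_ring (hom_comps R I) (comp_field R I)) \<lparr>carrier := S\<rparr> \<and>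
                     rsoc ((prod_ring (hom_comps R I) (comp_field R I)) \<lparr>carrier := S\<rparr>)
                       = dsum_carrier (hom_comps R I) (comp_field R I))"
    using QC C_iii iii_to_i[OF assms(1) i] by blast
  show ?thesis using part1 part2 by blast
qed

end
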